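(* Consider the decentralized problem and the SPDS algorithm described in the context, with positive integers $T_k,c_k$, positive reals $\beta_k,p_k,q_k^t,\eta_k^t$ and nonnegative reals $\lambda_k,\tau_k,\alpha_k^t$. Suppose: (i) for every $k\ge2$: $\beta_k\tau_k\le\beta_{k-1}(\tau_{k-1}+1)$, $\beta_{k-1}=\beta_k\lambda_k$, $2\tilde L\lambda_k\le p_{k-1}\tau_k$, $\beta_kT_{k-1}\alpha_k^1=\beta_{k-1}T_k$, $\alpha_k^1\|\mathcal A\|^2\le\eta_{k-1}^{T_{k-1}}q_k^1$, $\beta_kT_{k-1}q_k^1\le\beta_{k-1}T_kq_{k-1}^{T_{k-1}}$, $\beta_kT_{k-1}(\eta_k^1+p_kT_k)\le\beta_{k-1}T_k(\mu+\eta_{k-1}^{T_{k-1}}+p_{k-1})$; (ii) for every $k\ge1$, $t\ge2$: $\alpha_k^t=1$, $\|\mathcal A\|^2\le\eta_k^{t-1}q_k^t$, $q_k^t\le q_k^{t-1}$, $\eta_k^t\le\mu+\eta_k^{t-1}+p_k$; (iii) $\tau_1=0$, $p_N(\tau_N+1)\ge2\tilde L$, $\eta_N^{T_N}q_N^{T_N}\ge\|\mathcal A\|^2$. Then $$\mathbb E[f(\overline x_N)-f(x^* )]\le\Big(\sum_{k=1}^N\beta_k\Big)^{-1}\Big[\frac{\beta_1}{2}\Big(\frac{\eta_1^1}{T_1}+p_1\Big)\|x_0-x^*\|_2^2+\sum_{k=1}^N\frac{\beta_k\sigma^2}{p_kc_k}\Big],$$ $$\mathbb E[\|\mathcal A\overline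 x_N\|_2]\le\Big(\sum_{k=1}^N\beta_k\Big)^{-1}\Big[\frac{\beta_1q_1^1}{2T_1}(\|z^*\|_2+1)^2+\frac{\beta_1}{2}\Big(\frac{\eta_1^1}{T_1}+p_1\Big)\|x_0-x^*\|_2^2+\sum_{k=1}^N\frac{\beta_k\sigma^2}{p_kc_k}\Big].$$
   Context: Setting (Euclidean). $G=(\mathcal N,\mathcal E)$ is a connected undirected graph on $\{1,\dots,m\}$; $X^{(i)}\subseteq\mathbb R^d$ closed convex; $\mathcal X=X^{(1)}\times\cdots\times X^{(m)}\subseteq\mathbb R^{md}$; all norms are Euclidean $\|\cdot\|_2$. $f=\tilde f+\mu\nu$ with $\tilde f(x)=\sum_i\tilde f_i(x^{(i)})$, $\nu(x)=\sum_i\nu_i(x^{(i)})$, $\mu\ge0$, each $\tilde f_i$ convex differentiable with $\nabla\tilde f_i$ $\tilde L$-Lipschitz w.r.t. $\|\cdot\|_2$, each $\nu_i$ $1$-strongly convex w.r.t. $\|\cdot\|_2$. $\mathcal A$ is $\mathcal L\otimes I_d$ ($\mathcal L$ the graph Laplacian) or $\mathcal B^\top\otimes I_d$ ($\mathcal B$ an oriented incidence matrix); $\|\mathcal A\|$ its spectral norm. A saddle point $(x^*,z^* )$ of $\min_{x\in\mathcal X}\max_zf(x)+\langle\mathcal Ax,z\rangle$ is assumed to exist. SPDS algorithm: choose $x_0,\underline x_0\in\mathcal X$, $\hat x_0=x_{-1}=x_0$, $z_0=0$. For $k=1,\dots,N$: $\tilde x_k=x_{k-1}+\lambda_k(\hat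 x_{k-1}-x_{k-2})$; $\underline x_k=(\tilde x_k+\tau_k\underline x_{k-1})/(1+\tau_k)$; $y_k=\nabla\tilde f(\underline x_k)$; a random vector $v_k$ is obtained (e.g. mini-batch of $c_k$ stochastic gradients per agent) with $\mathbb E[v_k\mid\text{past}]=y_k$ and $\mathbb E[\|v_k-y_k\|_2^2\mid\text{past}]\le\sigma^2/c_k$, where "past" is all randomness before iteration $k$; $x_k^0=x_{k-1}$, $z_k^0=z_{k-1}$, $x_k^{-1}=x_{k-1}^{T_{k-1}-1}$ ($x_1^{-1}=x_0$); for $t=1,\dots,T_k$: $\tilde u_k^t=x_k^{t-1}+\alpha_k^t(x_k^{t-1}-x_k^{t-2})$, $z_k^t=z_k^{t-1}+\mathcal A\tilde u_k^t/q_k^t$, $x_k^t=\arg\min_{x\in\mathcal X}\mu\nu(x)+\langle v_k+\mathcal A^\top z_k^t,x\rangle+\frac{\eta_k^t}{2}\|x_k^{t-1}-x\|_2^2+\frac{p_k}{2}\|x_{k-1}-x\|_2^2$; $x_k=x_k^{T_k}$, $z_k=z_k^{T_k}$, $\hat x_k=\frac1{T_k}\sum_tx_k^t$. Output $\overline x_N=(\sum_k\beta_k)^{-1}\sum_k\beta_k\hat x_k$. *)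

theory Defs
  imports "HOL-Probability.Probability"
begin

definition strongly_convex_on :: "'v::real_normed_vector set \<Rightarrow> real \<Rightarrow> ('v \<Rightarrow> real) \<Rightarrow> bool" where
  "strongly_convex_on S m g \<longleftrightarrow> convex S \<and>
     (\<forall>x\<in>S. \<forall>y\<in>S. \<forall>\<theta>::real. 0 \<le> \<theta> \<and> \<theta> \<le> 1 \<longrightarrow>
        g (\<theta> *\<^sub>R x + (1 - \<theta>) *\<^sub>R y)
          \<le> \<theta> * g x + (1 - \<theta>) * g y - m / 2 * \<theta> * (1 - \<theta>) * (norm (x - y))\<^sup>2)"

definition connected_graph :: "('n \<times> 'n) set \<Rightarrow> bool" where
  "connected_graph E \<longleftrightarrow> sym E \<and> (\<forall>a. (a, a) \<notin> E) \<and> (\<forall>a b. (a, b) \<in> E\<^sup>*)"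

definition laplacian :: "('n \<times> 'n) set \<Rightarrow> 'n \<Rightarrow> 'n \<Rightarrow> real" where
  "laplacian E a b = (if a = b then real (card {c. (a, c) \<in> E})
                      else if (a, b) \<in> E then -1 else 0)"

text \<open>The matrix K (rows indexed by the dual index type 'm, columns by vertices) is the graph
  Laplacian, the dual coordinates being labelled by vertices through a bijection h.\<close>
definition is_laplacian_matrix :: "('n \<times> 'n) set \<Rightarrow> ('m \<Rightarrow> 'n \<Rightarrow> real) \<Rightarrow> bool" where
  "is_laplacian_matrix E K \<longleftrightarrow>
     (\<exists>h :: 'm \<Rightarrow> 'n. bij h \<and> (\<forall>j i. K j i = laplacian E (h j) i))"

text \<open>The matrix K is the transpose of an oriented incidence matrix B of the graph:
  the rows of K (columns of B) are indexed by the edges, each undirected edge {a,b}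
  appearing exactly once with some orientation (e j) = (a,b); B has entry +1 at a, -1 at b.\<close>
definition is_incidence_transpose :: "('n \<times> 'n) set \<Rightarrow> ('m \<Rightarrow> 'n \<Rightarrow> real) \<Rightarrow> bool" where
  "is_incidence_transpose E K \<longleftrightarrow>
     (\<exists>e :: 'm \<Rightarrow> 'n \<times> 'n. inj e \<and> range e \<subseteq> E
        \<and> (\<forall>a b. (a, b) \<in> E \<longrightarrow> (a, b) \<in> range e \<or> (b, a) \<in> range e)
        \<and> (\<forall>a b. (a, b) \<in> range e \<longrightarrow> (b, a) \<notin> range e)
        \<and> (\<forall>j i. K j i = (if i = fst (e j) then 1 else if i = snd (e j) then -1 else 0)))"

text \<open>Kronecker product (K \<otimes> I_d) acting on stacked vectors.\<close>
definition kron_op :: "('m \<Rightarrow> 'n \<Rightarrow> real) \<Rightarrow> real^'d^'n::finite \<Rightarrow> real^'d^'m" where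
  "kron_op K x = (\<chi> j. \<Sum>i\<in>UNIV. K j i *\<^sub>R (x $ i))"

definition transp_mat :: "('m \<Rightarrow> 'n \<Rightarrow> real) \<Rightarrow> 'n \<Rightarrow> 'm \<Rightarrow> real" where
  "transp_mat K i j = K j i"

definition is_saddle_point ::
  "'x::real_inner set \<Rightarrow> ('x \<Rightarrow> real) \<Rightarrow> ('x \<Rightarrow> 'z::real_inner) \<Rightarrow> 'x \<Rightarrow> 'z \<Rightarrow> bool" where
  "is_saddle_point X f A xs zs \<longleftrightarrow> xs \<in> X \<and>
     (\<forall>z. f xs + inner (A xs) z \<le> f xs + inner (A xs) zs) \<and>
     (\<forall>x\<in>X. f xs + inner (A xs) zs \<le> f x + inner (A x) zs)"

definition spds_xout :: "'v \<Rightarrow> (nat \<Rightarrow> nat) \<Rightarrow> (nat \<Rightarrow> nat \<Rightarrow> 'a \<Rightarrow> 'v) \<Rightarrow> nat \<Rightarrow> 'a \<Rightarrow> 'v" where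
  "spds_xout x0 T xs k \<omega> = (if k = 0 then x0 else xs k (T k) \<omega>)"

definition spds_xhat :: "'v::real_vector \<Rightarrow> (nat \<Rightarrow> nat) \<Rightarrow> (nat \<Rightarrow> nat \<Rightarrow> 'a \<Rightarrow> 'v) \<Rightarrow> nat \<Rightarrow> 'a \<Rightarrow> 'v" where
  "spds_xhat x0 T xs k \<omega> =
     (if k = 0 then x0 else (1 / real (T k)) *\<^sub>R (\<Sum>t\<in>{1..T k}. xs k t \<omega>))"

definition spds_xprev :: "'v \<Rightarrow> (nat \<Rightarrow> nat) \<Rightarrow> (nat \<Rightarrow> nat \<Rightarrow> 'a \<Rightarrow> 'v) \<Rightarrow> nat \<Rightarrow> 'a \<Rightarrow> 'v" where
  "spds_xprev x0 T xs k \<omega> = (if k \<le> 1 then x0 else xs (k - 1) (T (k - 1) - 1) \<omega>)"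

text \<open>x~_k = x_{k-1} + \<lambda>_k (x^_{k-1} - x_{k-2}), with x_{-1} = x^_0 = x_0
  (nat subtraction makes k - 2 = 0 for k = 1).\<close>
definition spds_xtilde :: "'v::real_vector \<Rightarrow> (nat \<Rightarrow> nat) \<Rightarrow> (nat \<Rightarrow> nat \<Rightarrow> 'a \<Rightarrow> 'v) \<Rightarrow> (nat \<Rightarrow> real) \<Rightarrow> nat \<Rightarrow> 'a \<Rightarrow> 'v" where
  "spds_xtilde x0 T xs lam k \<omega> = spds_xout x0 T xs (k - 1) \<omega>
      + lam k *\<^sub>R (spds_xhat x0 T xs (k - 1) \<omega> - spds_xout x0 T xs (k - 2) \<omega>)"

end

theory Submission
  imports Defs
begin

lemma line_deriv:
  fixes f :: "'a::real_inner \<Rightarrow> real"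
  assumes "(f has_derivative (\<lambda>h. inner g h)) (at (a + s *\<^sub>R d))"
  shows "((\<lambda>t. f (a + t *\<^sub>R d)) has_real_derivative inner g d) (at s)"
proof -
  have l: "((\<lambda>t. a + t *\<^sub>R d) has_derivative (\<lambda>t. t *\<^sub>R d)) (at s)"
    by (auto intro!: derivative_eq_intros)
  have "((\<lambda>t. f (a + t *\<^sub>R d)) has_derivative (\<lambda>t. inner g (t *\<^sub>R d))) (at s)"
    using has_derivative_compose[OF l assms(1)] by (simp add: o_def)
  then show ?thesis by (simp add: has_field_derivative_def mult.commute[of _ "inner g d"])
qed

lemma descent_lemma:
  fixes f :: "'a::real_inner \<Rightarrow> real" and G :: "'a \<Rightarrow> 'a"
  assumes der: "\<And>u. (f has_derivative (\<lambda>h. inner (G u) h)) (at u)"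
    and lip: "\<And>u w. norm (G u - G w) \<le> L * norm (u - w)"
  shows "f b \<le> f a + inner (G a) (b - a) + L / 2 * (norm (b - a))\<^sup>2"
proof -
  define d where "d = b - a"
  define h where "h = (\<lambda>t. f (a + t *\<^sub>R d) - t * inner (G a) d - L / 2 * t\<^sup>2 * (norm d)\<^sup>2)"
  have "h 1 \<le> h 0"
  proof (rule DERIV_nonpos_imp_nonincreasing[of 0 1 h])
    fix t :: real assume t: "0 \<le> t" "t \<le> 1"
    have d1: "((\<lambda>t. f (a + t *\<^sub>R d)) has_real_derivative inner (G (a + t *\<^sub>R d)) d) (at t)"
      by (rule line_deriv[OF der])
    have "(h has_real_derivative (inner (G (a + t *\<^sub>R d)) d - inner (G a) d - L / 2 * (2 * t) * (norm d)\<^sup>2)) (at t)"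
      unfolding h_def
      by (rule derivative_eq_intros d1 refl | simp)+
    moreover have "inner (G (a + t *\<^sub>R d)) d - inner (G a) d - L / 2 * (2 * t) * (norm d)\<^sup>2 \<le> 0"
    proof -
      have "inner (G (a + t *\<^sub>R d)) d - inner (G a) d = inner (G (a + t *\<^sub>R d) - G a) d"
        by (simp add: inner_diff_left)
      also have "\<dots> \<le> norm (G (a + t *\<^sub>R d) - G a) * norm d" by (rule norm_cauchy_schwarz)
      also have "\<dots> \<le> (L * norm (t *\<^sub>R d)) * norm d"
        using lip[of "a + t *\<^sub>R d" a] by (intro mult_right_mono) auto
      also have "\<dots> = L * t * (norm d)\<^sup>2" using t by (simp add: power2_eq_square)
      finally show ?thesis by simp
    qed
    ultimately show "\<exists>y. (h has_real_derivative y) (at t) \<and> y \<le> 0" by blast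
  qed simp
  then show ?thesis unfolding h_def d_def by simp
qed

lemma above_tangent:
  fixes f :: "'a::real_inner \<Rightarrow> real"
  assumes cvx: "convex_on UNIV f"
    and der: "\<And>u. (f has_derivative (\<lambda>h. inner (G u) h)) (at u)"
  shows "f w + inner (G w) (u - w) \<le> f u"
proof -
  define h where "h = (\<lambda>t. f (w + t *\<^sub>R (u - w)))"
  have ch: "convex_on UNIV h"
  proof (rule convex_onI)
    fix t x y :: real assume t: "0 < t" "t < 1"
    have e: "w + ((1 - t) *\<^sub>R x + t *\<^sub>R y) *\<^sub>R (u - w)
        = (1 - t) *\<^sub>R (w + x *\<^sub>R (u - w)) + t *\<^sub>R (w + y *\<^sub>R (u - w))"
      by (simp add: algebra_simps)
    show "h ((1 - t) *\<^sub>R x + t *\<^sub>R y) \<le> (1 - t) * h x + t * h y"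
      unfolding h_def e using convex_onD[OF cvx, of t] t by simp
  qed simp
  have d: "(h has_real_derivative inner (G w) (u - w)) (at 0)"
    unfolding h_def using line_deriv[of f "G w" w 0 "u - w"] der[of w] by simp
  have "h 1 - h 0 \<ge> inner (G w) (u - w) * (1 - 0)"
    by (rule convex_on_imp_above_tangent[OF ch]) (use d in auto)
  then show ?thesis unfolding h_def by simp
qed

lemma cocoercive:
  fixes f :: "'a::real_inner \<Rightarrow> real"
  assumes cvx: "convex_on UNIV f"
    and der: "\<And>u. (f has_derivative (\<lambda>h. inner (G u) h)) (at u)"
    and lip: "\<And>u w. norm (G u - G w) \<le> L * norm (u - w)"
    and L: "0 \<le> L"
  shows "(norm (G u - G w))\<^sup>2 \<le> 2 * L * (f u - f w - inner (G w) (u - w))"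
proof (cases "L = 0")
  case True
  then have "G u = G w" using lip[of u w] by simp
  then show ?thesis using True by simp
next
  case False
  then have Lp: "L > 0" using L by simp
  define \<phi> where "\<phi> = (\<lambda>x. f x - inner (G w) x)"
  define H where "H = (\<lambda>x. G x - G w)"
  have der2: "\<And>x. (\<phi> has_derivative (\<lambda>h. inner (H x) h)) (at x)"
    unfolding \<phi>_def H_def
    by (rule derivative_eq_intros der refl | simp add: inner_diff_left)+
  have lip2: "\<And>a b. norm (H a - H b) \<le> L * norm (a - b)"
    unfolding H_def using lip by simp
  have min: "\<phi> w \<le> \<phi> x" for x
    using above_tangent[OF cvx der, of w x] unfolding \<phi>_def by (simp add: inner_diff_right)
  define b where "b = u - (1 / L) *\<^sub>R H u"
  have "\<phi> b \<le> \<phi> u + inner (H u) (b - u) + L / 2 * (norm (b - u))\<^sup>2"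
    by (rule descent_lemma[OF der2 lip2])
  also have "\<dots> = \<phi> u - (norm (H u))\<^sup>2 / (2 * L)"
    using Lp by (simp add: b_def power2_norm_eq_inner power2_eq_square field_simps flip: power2_norm_eq_inner)
  finally have "(norm (H u))\<^sup>2 / (2 * L) \<le> \<phi> u - \<phi> w" using min[of b] by simp
  then have "(norm (H u))\<^sup>2 \<le> 2 * L * (\<phi> u - \<phi> w)"
    using Lp by (simp add: field_simps)
  then show ?thesis unfolding \<phi>_def H_def by (simp add: inner_diff_right algebra_simps)
qed


lemma sc_argmin:
  fixes \<Phi> :: "'a::real_normed_vector \<Rightarrow> real"
  assumes sc: "\<And>x y \<theta>. x \<in> S \<Longrightarrow> y \<in> S \<Longrightarrow> 0 \<le> \<theta> \<Longrightarrow> \<theta> \<le> 1 \<Longrightarrow>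
      \<Phi> (\<theta> *\<^sub>R x + (1 - \<theta>) *\<^sub>R y) \<le> \<theta> * \<Phi> x + (1 - \<theta>) * \<Phi> y - m / 2 * \<theta> * (1 - \<theta>) * (norm (x - y))\<^sup>2"
    and m: "m \<ge> 0" and S: "convex S"
    and am: "is_arg_min \<Phi> (\<lambda>x. x \<in> S) xm" and x: "x \<in> S"
  shows "\<Phi> xm + m / 2 * (norm (x - xm))\<^sup>2 \<le> \<Phi> x"
proof (rule ccontr)
  define d where "d = (norm (x - xm))\<^sup>2"
  define \<epsilon> where "\<epsilon> = \<Phi> xm + m / 2 * d - \<Phi> x"
  assume "\<not> ?thesis"
  then have ep: "\<epsilon> > 0" unfolding \<epsilon>_def d_def by simp
  have xm: "xm \<in> S" using am by (simp add: is_arg_min_def)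
  have key: "\<epsilon> \<le> m / 2 * \<theta> * d" if th: "0 < \<theta>" "\<theta> \<le> 1" for \<theta>
  proof -
    have "\<theta> *\<^sub>R x + (1 - \<theta>) *\<^sub>R xm \<in> S"
      using S x xm th by (simp add: convex_def)
    then have "\<Phi> xm \<le> \<Phi> (\<theta> *\<^sub>R x + (1 - \<theta>) *\<^sub>R xm)"
      using am by (auto simp: is_arg_min_def not_less)
    also have "\<dots> \<le> \<theta> * \<Phi> x + (1 - \<theta>) * \<Phi> xm - m / 2 * \<theta> * (1 - \<theta>) * d"
      using sc[OF x xm, of \<theta>] th unfolding d_def by simp
    finally have "\<theta> * \<Phi> xm \<le> \<theta> * (\<Phi> x - m / 2 * (1 - \<theta>) * d)"
      by (simp add: algebra_simps)
    then have "\<Phi> xm \<le> \<Phi> x - m / 2 * (1 - \<theta>) * d"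
      using th by (simp add: mult_le_cancel_left_pos)
    then show ?thesis unfolding \<epsilon>_def by (simp add: field_simps)
  qed
  define \<theta> where "\<theta> = min 1 (\<epsilon> / (m * d + 1))"
  have d0: "d \<ge> 0" unfolding d_def by simp
  have md: "m * d \<ge> 0" using m d0 by simp
  have th: "0 < \<theta>" "\<theta> \<le> 1" unfolding \<theta>_def using ep md by auto
  have "\<theta> \<le> \<epsilon> / (m * d + 1)" unfolding \<theta>_def by simp
  then have A: "m * d * \<theta> \<le> m * d * (\<epsilon> / (m * d + 1))" using md by (rule mult_left_mono)
  have B: "m * d * (\<epsilon> / (m * d + 1)) < \<epsilon> * 2"
    using md ep by (simp add: field_simps) (smt (verit) mult_nonneg_nonneg)
  have C: "m / 2 * \<theta> * d = (m * d * \<theta>) / 2" by simp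
  show False using key[OF th] A B C by linarith
qed

lemma quad_id:
  fixes a x y :: "'a::real_inner"
  shows "(norm (a - (\<theta> *\<^sub>R x + (1 - \<theta>) *\<^sub>R y)))\<^sup>2
    = \<theta> * (norm (a - x))\<^sup>2 + (1 - \<theta>) * (norm (a - y))\<^sup>2 - \<theta> * (1 - \<theta>) * (norm (x - y))\<^sup>2"
proof -
  have e: "a - (\<theta> *\<^sub>R x + (1 - \<theta>) *\<^sub>R y) = \<theta> *\<^sub>R (a - x) + (1 - \<theta>) *\<^sub>R (a - y)"
    by (simp add: algebra_simps)
  have e2: "x - y = (a - y) - (a - x)" by simp
  show ?thesis unfolding e e2 power2_norm_eq_inner
    by (simp add: inner_add_left inner_add_right inner_diff_left
        inner_diff_right inner_commute algebra_simps power2_eq_square)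
qed

definition proxobj :: "('a::real_inner \<Rightarrow> real) \<Rightarrow> real \<Rightarrow> 'a \<Rightarrow> real \<Rightarrow> 'a \<Rightarrow> real \<Rightarrow> 'a \<Rightarrow> 'a \<Rightarrow> real"
  where "proxobj Nf \<mu> g \<eta> a p b x = \<mu> * Nf x + inner g x + \<eta> / 2 * (norm (a - x))\<^sup>2 + p / 2 * (norm (b - x))\<^sup>2"

lemma proxobj_sc:
  fixes Nf :: "'a::real_inner \<Rightarrow> real"
  assumes nsc: "\<And>x y \<theta>. 0 \<le> \<theta> \<Longrightarrow> \<theta> \<le> 1 \<Longrightarrow>
      Nf (\<theta> *\<^sub>R x + (1 - \<theta>) *\<^sub>R y) \<le> \<theta> * Nf x + (1 - \<theta>) * Nf y - 1 / 2 * \<theta> * (1 - \<theta>) * (norm (x - y))\<^sup>2"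
    and \<mu>: "\<mu> \<ge> 0" and th: "0 \<le> \<theta>" "\<theta> \<le> 1"
  shows "proxobj Nf \<mu> g \<eta> a p b (\<theta> *\<^sub>R x + (1 - \<theta>) *\<^sub>R y)
    \<le> \<theta> * proxobj Nf \<mu> g \<eta> a p b x + (1 - \<theta>) * proxobj Nf \<mu> g \<eta> a p b y
       - (\<mu> + \<eta> + p) / 2 * \<theta> * (1 - \<theta>) * (norm (x - y))\<^sup>2"
proof -
  define z where "z = \<theta> *\<^sub>R x + (1 - \<theta>) *\<^sub>R y"
  have n: "\<mu> * Nf z \<le> \<mu> * (\<theta> * Nf x + (1 - \<theta>) * Nf y - 1 / 2 * \<theta> * (1 - \<theta>) * (norm (x - y))\<^sup>2)"
    unfolding z_def by (rule mult_left_mono[OF nsc[OF th] \<mu>])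
  have l: "inner g z = \<theta> * inner g x + (1 - \<theta>) * inner g y"
    unfolding z_def by (simp add: inner_add_right)
  have qa: "(norm (a - z))\<^sup>2 = \<theta> * (norm (a - x))\<^sup>2 + (1 - \<theta>) * (norm (a - y))\<^sup>2 - \<theta> * (1 - \<theta>) * (norm (x - y))\<^sup>2"
    unfolding z_def by (rule quad_id)
  have qb: "(norm (b - z))\<^sup>2 = \<theta> * (norm (b - x))\<^sup>2 + (1 - \<theta>) * (norm (b - y))\<^sup>2 - \<theta> * (1 - \<theta>) * (norm (x - y))\<^sup>2"
    unfolding z_def by (rule quad_id)
  have eq: "\<theta> * proxobj Nf \<mu> g \<eta> a p b x + (1 - \<theta>) * proxobj Nf \<mu> g \<eta> a p b y
       - (\<mu> + \<eta> + p) / 2 * \<theta> * (1 - \<theta>) * (norm (x - y))\<^sup>2 - proxobj Nf \<mu> g \<eta> a p b z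
     = \<mu> * (\<theta> * Nf x + (1 - \<theta>) * Nf y - 1 / 2 * \<theta> * (1 - \<theta>) * (norm (x - y))\<^sup>2) - \<mu> * Nf z"
    unfolding proxobj_def l qa qb by (simp add: field_simps)
  show ?thesis using eq n unfolding z_def[symmetric] by linarith
qed

lemma proxobj_three_point:
  fixes Nf :: "'a::real_inner \<Rightarrow> real"
  assumes nsc: "\<And>x y \<theta>. 0 \<le> \<theta> \<Longrightarrow> \<theta> \<le> 1 \<Longrightarrow>
      Nf (\<theta> *\<^sub>R x + (1 - \<theta>) *\<^sub>R y) \<le> \<theta> * Nf x + (1 - \<theta>) * Nf y - 1 / 2 * \<theta> * (1 - \<theta>) * (norm (x - y))\<^sup>2"
    and \<mu>: "\<mu> \<ge> 0" and \<eta>: "\<eta> \<ge> 0" and p: "p \<ge> 0" and S: "convex S"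
    and am: "is_arg_min (proxobj Nf \<mu> g \<eta> a p b) (\<lambda>x. x \<in> S) xm" and x: "x \<in> S"
  shows "proxobj Nf \<mu> g \<eta> a p b xm + (\<mu> + \<eta> + p) / 2 * (norm (x - xm))\<^sup>2 \<le> proxobj Nf \<mu> g \<eta> a p b x"
  by (rule sc_argmin[OF proxobj_sc[OF nsc \<mu>] _ S am x]) (use \<mu> \<eta> p in auto)

lemma proxobj_diff:
  "proxobj Nf \<mu> g \<eta> a p b x - proxobj Nf \<mu> g' \<eta> a' p b' x
   = inner ((g - \<eta> *\<^sub>R a - p *\<^sub>R b) - (g' - \<eta> *\<^sub>R a' - p *\<^sub>R b')) x
     + \<eta> / 2 * ((norm a)\<^sup>2 - (norm a')\<^sup>2) + p / 2 * ((norm b)\<^sup>2 - (norm b')\<^sup>2)"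
  unfolding proxobj_def
  by (simp add: power2_norm_eq_inner inner_diff_left inner_diff_right inner_commute algebra_simps)

lemma proxobj_lip:
  fixes Nf :: "'a::real_inner \<Rightarrow> real"
  assumes nsc: "\<And>x y \<theta>. 0 \<le> \<theta> \<Longrightarrow> \<theta> \<le> 1 \<Longrightarrow>
      Nf (\<theta> *\<^sub>R x + (1 - \<theta>) *\<^sub>R y) \<le> \<theta> * Nf x + (1 - \<theta>) * Nf y - 1 / 2 * \<theta> * (1 - \<theta>) * (norm (x - y))\<^sup>2"
    and \<mu>: "\<mu> \<ge> 0" and \<eta>: "\<eta> \<ge> 0" and p: "p \<ge> 0" and S: "convex S"
    and am: "is_arg_min (proxobj Nf \<mu> g \<eta> a p b) (\<lambda>x. x \<in> S) xm"
    and am': "is_arg_min (proxobj Nf \<mu> g' \<eta> a' p b') (\<lambda>x. x \<in> S) xm'"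
  shows "(\<mu> + \<eta> + p) * norm (xm - xm') \<le> norm ((g - \<eta> *\<^sub>R a - p *\<^sub>R b) - (g' - \<eta> *\<^sub>R a' - p *\<^sub>R b'))"
proof -
  have xm: "xm \<in> S" using am by (simp add: is_arg_min_def)
  have xm': "xm' \<in> S" using am' by (simp add: is_arg_min_def)
  define e where "e = (g - \<eta> *\<^sub>R a - p *\<^sub>R b) - (g' - \<eta> *\<^sub>R a' - p *\<^sub>R b')"
  have 1: "proxobj Nf \<mu> g \<eta> a p b xm + (\<mu> + \<eta> + p) / 2 * (norm (xm' - xm))\<^sup>2 \<le> proxobj Nf \<mu> g \<eta> a p b xm'"
    by (rule proxobj_three_point[OF nsc \<mu> \<eta> p S am xm'])
  have 2: "proxobj Nf \<mu> g' \<eta> a' p b' xm' + (\<mu> + \<eta> + p) / 2 * (norm (xm - xm'))\<^sup>2 \<le> proxobj Nf \<mu> g' \<eta> a' p b' xm"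
    by (rule proxobj_three_point[OF nsc \<mu> \<eta> p S am' xm])
  have n: "norm (xm' - xm) = norm (xm - xm')" by (simp add: norm_minus_commute)
  define C where "C = \<eta> / 2 * ((norm a)\<^sup>2 - (norm a')\<^sup>2) + p / 2 * ((norm b)\<^sup>2 - (norm b')\<^sup>2)"
  have d1: "proxobj Nf \<mu> g \<eta> a p b xm - proxobj Nf \<mu> g' \<eta> a' p b' xm = inner e xm + C"
    unfolding e_def C_def by (subst proxobj_diff) (simp add: algebra_simps)
  have d2: "proxobj Nf \<mu> g \<eta> a p b xm' - proxobj Nf \<mu> g' \<eta> a' p b' xm' = inner e xm' + C"
    unfolding e_def C_def by (subst proxobj_diff) (simp add: algebra_simps)
  have "(\<mu> + \<eta> + p) * (norm (xm - xm'))\<^sup>2 \<le> inner e xm' - inner e xm"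
  proof -
    obtain M D where MD: "M = \<mu> + \<eta> + p" "D = (norm (xm - xm'))\<^sup>2" by blast
    show ?thesis using 1 2 d1 d2 unfolding n MD[symmetric] by linarith
  qed
  also have "\<dots> = inner e (xm' - xm)" by (simp add: inner_diff_right)
  also have "\<dots> \<le> norm e * norm (xm - xm')" using norm_cauchy_schwarz[of e "xm' - xm"] n by simp
  finally have h: "(\<mu> + \<eta> + p) * (norm (xm - xm'))\<^sup>2 \<le> norm e * norm (xm - xm')" .
  show ?thesis
  proof (cases "norm (xm - xm') = 0")
    case True then show ?thesis unfolding e_def by simp
  next
    case False
    then have "norm (xm - xm') > 0" by simp
    then show ?thesis using h unfolding e_def[symmetric] by (simp add: power2_eq_square)
  qed
qed


lemma young: "(q::real) > 0 \<Longrightarrow> a * b \<le> a\<^sup>2 / (2 * q) + q / 2 * b\<^sup>2"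
proof -
  assume q: "q > 0"
  have "0 \<le> (a - q * b)\<^sup>2" by simp
  then have "2 * q * (a * b) \<le> a\<^sup>2 + q\<^sup>2 * b\<^sup>2" by (simp add: power2_eq_square algebra_simps)
  then show ?thesis using q by (simp add: field_simps power2_eq_square)
qed

lemma young_inner:
  fixes A :: "'v::real_inner \<Rightarrow> 'w::real_inner"
  assumes nA: "\<And>u. norm (A u) \<le> nA * norm u" and q: "q > 0" and al: "\<alpha> \<ge> 0"
  shows "\<alpha> * inner (A d) e \<le> q / 2 * (norm e)\<^sup>2 + \<alpha>\<^sup>2 * nA\<^sup>2 / (2 * q) * (norm d)\<^sup>2"
proof -
  have "\<alpha> * inner (A d) e \<le> \<alpha> * (norm (A d) * norm e)"
    by (intro mult_left_mono norm_cauchy_schwarz al)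
  also have "\<dots> \<le> \<alpha> * ((nA * norm d) * norm e)"
    using al nA[of d] by (simp add: mult_left_mono mult_right_mono)
  also have "\<dots> = (\<alpha> * nA * norm d) * norm e" by simp
  also have "\<dots> \<le> (\<alpha> * nA * norm d)\<^sup>2 / (2 * q) + q / 2 * (norm e)\<^sup>2" by (rule young[OF q])
  also have "\<dots> = q / 2 * (norm e)\<^sup>2 + \<alpha>\<^sup>2 * nA\<^sup>2 / (2 * q) * (norm d)\<^sup>2"
    by (simp add: power_mult_distrib)
  finally show ?thesis .
qed

locale inner_det =
  fixes A :: "'v::real_inner \<Rightarrow> 'w::real_inner" and At :: "'w \<Rightarrow> 'v" and nA :: real
    and Nf :: "'v \<Rightarrow> real" and \<mu> :: real and S :: "'v set"
    and N :: nat and T :: "nat \<Rightarrow> nat" and \<beta> p :: "nat \<Rightarrow> real" and q \<eta> \<alpha> :: "nat \<Rightarrow> nat \<Rightarrow> real"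
    and x0 :: 'v and X :: "nat \<Rightarrow> nat \<Rightarrow> 'v" and Z :: "nat \<Rightarrow> nat \<Rightarrow> 'w" and V :: "nat \<Rightarrow> 'v"
  assumes N_pos: "N \<ge> 1" and A_lin: "linear A"
    and A_bnd: "\<And>u. norm (A u) \<le> nA * norm u"
    and A_adj: "\<And>u z. inner (A u) z = inner u (At z)"
    and nsc: "\<And>x y \<theta>. 0 \<le> \<theta> \<Longrightarrow> \<theta> \<le> 1 \<Longrightarrow>
      Nf (\<theta> *\<^sub>R x + (1 - \<theta>) *\<^sub>R y) \<le> \<theta> * Nf x + (1 - \<theta>) * Nf y - 1 / 2 * \<theta> * (1 - \<theta>) * (norm (x - y))\<^sup>2"
    and mu: "\<mu> \<ge> 0" and S: "convex S"
    and T_pos: "\<forall>k\<in>{1..N}. T k \<ge> 1"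
    and \<beta>_pos: "\<forall>k\<in>{1..N}. \<beta> k > 0" and p_pos: "\<forall>k\<in>{1..N}. p k > 0"
    and q_pos: "\<forall>k\<in>{1..N}. \<forall>t\<in>{1..T k}. q k t > 0"
    and \<eta>_pos: "\<forall>k\<in>{1..N}. \<forall>t\<in>{1..T k}. \<eta> k t > 0"
    and \<alpha>_nonneg: "\<forall>k\<in>{1..N}. \<forall>t\<in>{1..T k}. \<alpha> k t \<ge> 0"
    and ci: "\<forall>k\<in>{2..N}.
        \<beta> k * real (T (k - 1)) * \<alpha> k 1 = \<beta> (k - 1) * real (T k)
      \<and> \<alpha> k 1 * nA\<^sup>2 \<le> \<eta> (k - 1) (T (k - 1)) * q k 1
      \<and> \<beta> k * real (T (k - 1)) * q k 1 \<le> \<beta> (k - 1) * real (T k) * q (k - 1) (T (k - 1))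
      \<and> \<beta> k * real (T (k - 1)) * (\<eta> k 1 + p k * real (T k))
          \<le> \<beta> (k - 1) * real (T k) * (\<mu> + \<eta> (k - 1) (T (k - 1)) + p (k - 1))"
    and cii: "\<forall>k\<in>{1..N}. \<forall>t\<in>{2..T k}.
        \<alpha> k t = 1 \<and> nA\<^sup>2 \<le> \<eta> k (t - 1) * q k t \<and> q k t \<le> q k (t - 1)
      \<and> \<eta> k t \<le> \<mu> + \<eta> k (t - 1) + p k"
    and ciii: "\<eta> N (T N) * q N (T N) \<ge> nA\<^sup>2"
    and X_init: "\<forall>k\<in>{1..N}. X k 0 = (if k = 1 then x0 else X (k - 1) (T (k - 1)))"
    and Z_init: "\<forall>k\<in>{1..N}. Z k 0 = (if k = 1 then 0 else Z (k - 1) (T (k - 1)))"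
    and Z_step: "\<forall>k\<in>{1..N}. \<forall>t\<in>{1..T k}.
        Z k t = Z k (t - 1) + (1 / q k t) *\<^sub>R A (X k (t - 1) + \<alpha> k t *\<^sub>R
           (X k (t - 1) - (if t = 1 then (if k \<le> 1 then x0 else X (k - 1) (T (k - 1) - 1)) else X k (t - 2))))"
    and X_step: "\<forall>k\<in>{1..N}. \<forall>t\<in>{1..T k}.
        is_arg_min (proxobj Nf \<mu> (V k + At (Z k t)) (\<eta> k t) (X k (t - 1)) (p k) (X k 0)) (\<lambda>x. x \<in> S) (X k t)"
begin

definition "w k = \<beta> k / real (T k)"
definition "Xm k t = (if t = 1 then (if k \<le> 1 then x0 else X (k - 1) (T (k - 1) - 1)) else X k (t - 2))"

definition "G x z k t = \<mu> * Nf (X k t) - \<mu> * Nf x + inner (V k) (X k t - x)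
   + p k / 2 * (norm (X k t - X k 0))\<^sup>2 + inner (A (X k t)) z - inner (A x) (Z k t)"

definition "Phi x z k t = w k * (\<eta> k t / 2 * (norm (x - X k (t - 1)))\<^sup>2
   + (real (T k) - real t + 1) * p k / 2 * (norm (x - X k 0))\<^sup>2
   + q k t / 2 * (norm (z - Z k (t - 1)))\<^sup>2
   + (\<alpha> k t)\<^sup>2 * nA\<^sup>2 / (2 * q k t) * (norm (X k (t - 1) - Xm k t))\<^sup>2
   - \<alpha> k t * inner (A (X k (t - 1) - Xm k t)) (z - Z k (t - 1)))"

definition "Psi x z k t = w k * ((\<mu> + p k + \<eta> k t) / 2 * (norm (x - X k t))\<^sup>2
   + (real (T k) - real t) * p k / 2 * (norm (x - X k 0))\<^sup>2
   + q k t / 2 * (norm (z - Z k t))\<^sup>2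
   + \<eta> k t / 2 * (norm (X k t - X k (t - 1)))\<^sup>2
   - inner (A (X k t - X k (t - 1))) (z - Z k t))"

lemma step:
  assumes k: "k \<in> {1..N}" and t: "t \<in> {1..T k}" and x: "x \<in> S"
  shows "w k * G x z k t \<le> Phi x z k t - Psi x z k t"
proof -
  have Tk: "T k \<ge> 1" using T_pos k by auto
  have wpos: "w k > 0" unfolding w_def using \<beta>_pos k Tk by auto
  have qp: "q k t > 0" using q_pos k t by auto
  have ep: "\<eta> k t > 0" using \<eta>_pos k t by auto
  have pp: "p k > 0" using p_pos k by auto
  have al: "\<alpha> k t \<ge> 0" using \<alpha>_nonneg k t by auto
  define g where "g = V k + At (Z k t)"
  define a where "a = X k (t - 1)"
  define b where "b = X k 0"
  define xt where "xt = X k t"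
  define zt where "zt = Z k t"
  define zp where "zp = Z k (t - 1)"
  define dp where "dp = X k (t - 1) - Xm k t"
  have tp: "proxobj Nf \<mu> g (\<eta> k t) a (p k) b xt + (\<mu> + \<eta> k t + p k) / 2 * (norm (x - xt))\<^sup>2
      \<le> proxobj Nf \<mu> g (\<eta> k t) a (p k) b x"
    unfolding g_def a_def b_def xt_def
    by (rule proxobj_three_point[OF nsc mu _ _ S _ x]) (use ep pp X_step k t in auto)
  have adj1: "inner (At zt) (xt - x) = inner (A xt) zt - inner (A x) zt"
  proof -
    have "inner (At zt) (xt - x) = inner (A (xt - x)) zt" by (metis A_adj inner_commute)
    then show ?thesis by (simp add: linear_diff[OF A_lin] inner_diff_left)
  qed
  have H1: "G x z k t \<le> \<eta> k t / 2 * (norm (a - x))\<^sup>2 + p k / 2 * (norm (b - x))\<^sup>2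
      - \<eta> k t / 2 * (norm (a - xt))\<^sup>2 - (\<mu> + \<eta> k t + p k) / 2 * (norm (x - xt))\<^sup>2
      + inner (A xt) (z - zt)"
    using tp adj1 unfolding G_def proxobj_def g_def xt_def[symmetric] zt_def[symmetric] b_def[symmetric]
    by (simp add: inner_add_left inner_diff_right norm_minus_commute algebra_simps)
  have ust: "zt = zp + (1 / q k t) *\<^sub>R A (a + \<alpha> k t *\<^sub>R dp)"
    using Z_step k t unfolding zt_def zp_def a_def dp_def Xm_def by auto
  have Au: "A (a + \<alpha> k t *\<^sub>R dp) = q k t *\<^sub>R (zt - zp)"
    using ust qp by simp
  have lin: "A xt = A (a + \<alpha> k t *\<^sub>R dp) + A (xt - a) - \<alpha> k t *\<^sub>R A dp"
    using A_lin by (simp add: linear_add[symmetric] linear_diff[symmetric] linear_scale[symmetric] algebra_simps)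
  have dual: "inner (q k t *\<^sub>R (zt - zp)) (z - zt) = q k t / 2 * ((norm (z - zp))\<^sup>2 - (norm (z - zt))\<^sup>2 - (norm (zt - zp))\<^sup>2)"
  proof -
    have e: "z - zp = (z - zt) + (zt - zp)" by simp
    show ?thesis unfolding e power2_norm_eq_inner
      by (simp add: inner_add_left inner_add_right inner_diff_left inner_diff_right inner_commute algebra_simps)
  qed
  have split: "inner (A dp) (z - zt) = inner (A dp) (z - zp) - inner (A dp) (zt - zp)"
    by (simp add: inner_diff_right)
  have yg: "\<alpha> k t * inner (A dp) (zt - zp) \<le> q k t / 2 * (norm (zt - zp))\<^sup>2 + (\<alpha> k t)\<^sup>2 * nA\<^sup>2 / (2 * q k t) * (norm dp)\<^sup>2"
    by (rule young_inner[OF A_bnd qp al])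
  have H2: "inner (A xt) (z - zt) = q k t / 2 * ((norm (z - zp))\<^sup>2 - (norm (z - zt))\<^sup>2 - (norm (zt - zp))\<^sup>2)
      + inner (A (xt - a)) (z - zt) - \<alpha> k t * inner (A dp) (z - zp) + \<alpha> k t * inner (A dp) (zt - zp)"
    unfolding lin Au dual[symmetric] by (simp add: inner_add_left inner_diff_left split algebra_simps)
  have G2: "G x z k t \<le> \<eta> k t / 2 * (norm (x - a))\<^sup>2 + p k / 2 * (norm (x - b))\<^sup>2
      + q k t / 2 * (norm (z - zp))\<^sup>2 + (\<alpha> k t)\<^sup>2 * nA\<^sup>2 / (2 * q k t) * (norm dp)\<^sup>2
      - \<alpha> k t * inner (A dp) (z - zp)
      - ((\<mu> + p k + \<eta> k t) / 2 * (norm (x - xt))\<^sup>2 + q k t / 2 * (norm (z - zt))\<^sup>2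
         + \<eta> k t / 2 * (norm (xt - a))\<^sup>2 - inner (A (xt - a)) (z - zt))"
    using H1 H2 yg by (simp add: norm_minus_commute algebra_simps)
  have "w k * G x z k t \<le> w k * (\<eta> k t / 2 * (norm (x - a))\<^sup>2 + p k / 2 * (norm (x - b))\<^sup>2
      + q k t / 2 * (norm (z - zp))\<^sup>2 + (\<alpha> k t)\<^sup>2 * nA\<^sup>2 / (2 * q k t) * (norm dp)\<^sup>2
      - \<alpha> k t * inner (A dp) (z - zp)
      - ((\<mu> + p k + \<eta> k t) / 2 * (norm (x - xt))\<^sup>2 + q k t / 2 * (norm (z - zt))\<^sup>2
         + \<eta> k t / 2 * (norm (xt - a))\<^sup>2 - inner (A (xt - a)) (z - zt)))"
    using G2 wpos by (simp add: mult_left_mono)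
  also have "\<dots> = Phi x z k t - Psi x z k t"
    unfolding Phi_def Psi_def a_def b_def xt_def zt_def zp_def dp_def
    by (simp add: field_simps)
  finally show ?thesis .
qed


lemma within:
  assumes k: "k \<in> {1..N}" and t: "1 \<le> t" "t < T k"
  shows "Phi x z k (Suc t) \<le> Psi x z k t"
proof -
  have Tk: "T k \<ge> 1" using T_pos k by auto
  have wpos: "w k > 0" unfolding w_def using \<beta>_pos k Tk by auto
  have c: "\<alpha> k (Suc t) = 1" "nA\<^sup>2 \<le> \<eta> k t * q k (Suc t)" "q k (Suc t) \<le> q k t"
      "\<eta> k (Suc t) \<le> \<mu> + \<eta> k t + p k"
  proof -
    have ck: "\<forall>t\<in>{2..T k}. \<alpha> k t = 1 \<and> nA\<^sup>2 \<le> \<eta> k (t - 1) * q k t \<and> q k t \<le> q k (t - 1)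
      \<and> \<eta> k t \<le> \<mu> + \<eta> k (t - 1) + p k" using cii k by blast
    have "Suc t \<in> {2..T k}" using t by auto
    from bspec[OF ck this] show "\<alpha> k (Suc t) = 1" "nA\<^sup>2 \<le> \<eta> k t * q k (Suc t)" "q k (Suc t) \<le> q k t"
      "\<eta> k (Suc t) \<le> \<mu> + \<eta> k t + p k" by auto
  qed
  have qp: "q k (Suc t) > 0" using q_pos k t by auto
  have xm: "Xm k (Suc t) = X k (t - 1)" unfolding Xm_def using t by (simp add: numeral_2_eq_2)
  define a where "a = (norm (x - X k t))\<^sup>2"
  define b where "b = (norm (z - Z k t))\<^sup>2"
  define d where "d = (norm (X k t - X k (t - 1)))\<^sup>2"
  have a: "a \<ge> 0" "b \<ge> 0" "d \<ge> 0" unfolding a_def b_def d_def by auto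
  have 1: "\<eta> k (Suc t) / 2 * a \<le> (\<mu> + p k + \<eta> k t) / 2 * a"
    using c(4) a by (intro mult_right_mono) auto
  have 2: "q k (Suc t) / 2 * b \<le> q k t / 2 * b"
    using c(3) a by (intro mult_right_mono) auto
  have "nA\<^sup>2 / q k (Suc t) \<le> \<eta> k t" using c(2) qp by (simp add: divide_le_eq)
  then have 3: "nA\<^sup>2 / (2 * q k (Suc t)) * d \<le> \<eta> k t / 2 * d"
    using a by (intro mult_right_mono) auto
  have "Phi x z k (Suc t) = w k * (\<eta> k (Suc t) / 2 * a + (real (T k) - real t) * p k / 2 * (norm (x - X k 0))\<^sup>2
      + q k (Suc t) / 2 * b + nA\<^sup>2 / (2 * q k (Suc t)) * d - inner (A (X k t - X k (t - 1))) (z - Z k t))"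
    unfolding Phi_def xm c(1) a_def b_def d_def by simp
  also have "\<dots> \<le> w k * ((\<mu> + p k + \<eta> k t) / 2 * a + (real (T k) - real t) * p k / 2 * (norm (x - X k 0))\<^sup>2
      + q k t / 2 * b + \<eta> k t / 2 * d - inner (A (X k t - X k (t - 1))) (z - Z k t))"
    by (rule mult_left_mono; use 1 2 3 wpos in linarith)
  also have "\<dots> = Psi x z k t" unfolding Psi_def a_def b_def d_def by simp
  finally show ?thesis .
qed

lemma across:
  assumes k: "k \<in> {2..N}"
  shows "Phi x z k 1 \<le> Psi x z (k - 1) (T (k - 1))"
proof -
  define j where "j = k - 1"
  have kj: "k = Suc j" "j \<ge> 1" using k unfolding j_def by auto
  have k1: "k \<in> {1..N}" "j \<in> {1..N}" using k kj by auto
  have Tk: "T k \<ge> 1" "T j \<ge> 1" using T_pos k1 by auto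
  have wk: "w k > 0" "w j > 0" unfolding w_def using \<beta>_pos k1 Tk by auto
  have bp: "\<beta> k > 0" "\<beta> j > 0" using \<beta>_pos k1 by auto
  have c: "\<beta> k * real (T j) * \<alpha> k 1 = \<beta> j * real (T k)"
      "\<alpha> k 1 * nA\<^sup>2 \<le> \<eta> j (T j) * q k 1"
      "\<beta> k * real (T j) * q k 1 \<le> \<beta> j * real (T k) * q j (T j)"
      "\<beta> k * real (T j) * (\<eta> k 1 + p k * real (T k)) \<le> \<beta> j * real (T k) * (\<mu> + \<eta> j (T j) + p j)"
    using ci k unfolding j_def by auto
  have qp: "q k 1 > 0" using q_pos k1 Tk by auto
  have al: "\<alpha> k 1 \<ge> 0" using \<alpha>_nonneg k1 Tk by auto
  have x0: "X k 0 = X j (T j)" using X_init k1 kj by auto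
  have z0: "Z k 0 = Z j (T j)" using Z_init k1 kj by auto
  have xm: "Xm k 1 = X j (T j - 1)" unfolding Xm_def using kj by simp
  have wa: "w k * \<alpha> k 1 = w j"
    using c(1) Tk unfolding w_def by (simp add: field_simps)
  have w1: "w k * (\<eta> k 1 + real (T k) * p k) \<le> w j * (\<mu> + p j + \<eta> j (T j))"
    using c(4) Tk unfolding w_def by (simp add: field_simps)
  have w2: "w k * q k 1 \<le> w j * q j (T j)"
    using c(3) Tk unfolding w_def by (simp add: field_simps)
  have w3: "w k * ((\<alpha> k 1)\<^sup>2 * nA\<^sup>2 / (2 * q k 1)) \<le> w j * (\<eta> j (T j) / 2)"
  proof -
    have "w k * ((\<alpha> k 1)\<^sup>2 * nA\<^sup>2 / (2 * q k 1)) = w j * (\<alpha> k 1 * nA\<^sup>2 / q k 1) / 2"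
      using wa by (simp add: power2_eq_square field_simps)
    also have "\<dots> \<le> w j * \<eta> j (T j) / 2"
      using c(2) qp wk by (simp add: divide_le_eq mult_left_mono)
    finally show ?thesis by simp
  qed
  define a where "a = (norm (x - X j (T j)))\<^sup>2"
  define b where "b = (norm (z - Z j (T j)))\<^sup>2"
  define d where "d = (norm (X j (T j) - X j (T j - 1)))\<^sup>2"
  define I where "I = inner (A (X j (T j) - X j (T j - 1))) (z - Z j (T j))"
  have a: "a \<ge> 0" "b \<ge> 0" "d \<ge> 0" unfolding a_def b_def d_def by auto
  have "Phi x z k 1 = w k * (\<eta> k 1 + real (T k) * p k) / 2 * a + w k * q k 1 / 2 * b
      + w k * ((\<alpha> k 1)\<^sup>2 * nA\<^sup>2 / (2 * q k 1)) * d - (w k * \<alpha> k 1) * I"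
    unfolding Phi_def xm a_def b_def d_def I_def by (simp add: x0 z0 field_simps)
  also have "\<dots> \<le> w j * (\<mu> + p j + \<eta> j (T j)) / 2 * a + w j * q j (T j) / 2 * b
      + w j * (\<eta> j (T j) / 2) * d - w j * I"
  proof -
    have m1: "w k * (\<eta> k 1 + real (T k) * p k) / 2 * a \<le> w j * (\<mu> + p j + \<eta> j (T j)) / 2 * a"
      using w1 a by (intro mult_right_mono divide_right_mono) auto
    have m2: "w k * q k 1 / 2 * b \<le> w j * q j (T j) / 2 * b"
      using w2 a by (intro mult_right_mono divide_right_mono) auto
    have m3: "w k * ((\<alpha> k 1)\<^sup>2 * nA\<^sup>2 / (2 * q k 1)) * d \<le> w j * (\<eta> j (T j) / 2) * d"
      using w3 a by (intro mult_right_mono) auto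
    show ?thesis unfolding wa using m1 m2 m3 by linarith
  qed
  also have "\<dots> = Psi x z j (T j)"
    unfolding Psi_def a_def b_def d_def I_def by (simp add: field_simps)
  finally show ?thesis unfolding j_def .
qed

lemma init:
  shows "Phi x z 1 1 = \<beta> 1 / 2 * (\<eta> 1 1 / real (T 1) + p 1) * (norm (x - x0))\<^sup>2
     + \<beta> 1 * q 1 1 / (2 * real (T 1)) * (norm z)\<^sup>2"
proof -
  have N1: "1 \<in> {1..N}" using N_pos by auto
  have T1: "T 1 \<ge> 1" using T_pos N1 by auto
  have x0: "X 1 0 = x0" using X_init N1 by auto
  have z0: "Z 1 0 = 0" using Z_init N1 by auto
  have xm: "Xm 1 1 = x0" unfolding Xm_def by simp
  have x0': "X (Suc 0) 0 = x0" using x0 by simp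
  have z0': "Z (Suc 0) 0 = 0" using z0 by simp
  have xm': "Xm (Suc 0) (Suc 0) = x0" using xm by simp
  show ?thesis unfolding Phi_def w_def using T1
    by (simp add: x0 z0 xm x0' z0' xm' linear_0[OF A_lin] field_simps)
qed

lemma final: "Psi x z N (T N) \<ge> 0"
proof -
  have N1: "N \<in> {1..N}" using N_pos by auto
  have TN: "T N \<ge> 1" using T_pos N1 by auto
  have wpos: "w N > 0" unfolding w_def using \<beta>_pos N1 TN by auto
  have qp: "q N (T N) > 0" using q_pos N1 TN by auto
  have ep: "\<eta> N (T N) > 0" using \<eta>_pos N1 TN by auto
  have pp: "p N > 0" using p_pos N1 by auto
  define dd where "dd = X N (T N) - X N (T N - 1)"
  define e where "e = z - Z N (T N)"
  have y: "1 * inner (A dd) e \<le> q N (T N) / 2 * (norm e)\<^sup>2 + 1\<^sup>2 * nA\<^sup>2 / (2 * q N (T N)) * (norm dd)\<^sup>2"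
    by (rule young_inner[OF A_bnd qp]) simp
  have "nA\<^sup>2 / q N (T N) \<le> \<eta> N (T N)" using ciii qp by (simp add: divide_le_eq)
  then have h1: "nA\<^sup>2 / (2 * q N (T N)) * (norm dd)\<^sup>2 \<le> \<eta> N (T N) / 2 * (norm dd)\<^sup>2"
    by (intro mult_right_mono) auto
  have h2: "0 \<le> (\<mu> + p N + \<eta> N (T N)) / 2 * (norm (x - X N (T N)))\<^sup>2"
    using mu pp ep by simp
  have y': "inner (A dd) e \<le> q N (T N) / 2 * (norm e)\<^sup>2 + nA\<^sup>2 / (2 * q N (T N)) * (norm dd)\<^sup>2"
    using y by simp
  have "0 \<le> (\<mu> + p N + \<eta> N (T N)) / 2 * (norm (x - X N (T N)))\<^sup>2
      + (real (T N) - real (T N)) * p N / 2 * (norm (x - X N 0))\<^sup>2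
      + q N (T N) / 2 * (norm e)\<^sup>2 + \<eta> N (T N) / 2 * (norm dd)\<^sup>2 - inner (A dd) e"
    using y' h1 h2 by simp
  then show ?thesis unfolding Psi_def dd_def[symmetric] e_def[symmetric] using wpos by simp
qed

lemma inner_sum:
  assumes k: "k \<in> {1..N}" and x: "x \<in> S"
  shows "1 \<le> s \<Longrightarrow> s \<le> T k \<Longrightarrow> w k * (\<Sum>t\<in>{1..s}. G x z k t) \<le> Phi x z k 1 - Psi x z k s"
proof (induction s)
  case 0 then show ?case by simp
next
  case (Suc s)
  show ?case
  proof (cases "s = 0")
    case True
    then show ?thesis using step[OF k _ x, of 1 z] Suc.prems by simp
  next
    case False
    then have s1: "1 \<le> s" "s < T k" using Suc.prems by auto
    have ih: "w k * (\<Sum>t\<in>{1..s}. G x z k t) \<le> Phi x z k 1 - Psi x z k s"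
      using Suc.IH s1 by simp
    have st: "w k * G x z k (Suc s) \<le> Phi x z k (Suc s) - Psi x z k (Suc s)"
      by (rule step[OF k _ x]) (use Suc.prems in auto)
    have wi: "Phi x z k (Suc s) \<le> Psi x z k s" by (rule within[OF k s1])
    have "w k * (\<Sum>t\<in>{1..Suc s}. G x z k t) = w k * (\<Sum>t\<in>{1..s}. G x z k t) + w k * G x z k (Suc s)"
      by (simp add: distrib_left)
    then show ?thesis using ih st wi by linarith
  qed
qed

lemma outer_sum:
  assumes x: "x \<in> S"
  shows "1 \<le> K \<Longrightarrow> K \<le> N \<Longrightarrow> (\<Sum>k\<in>{1..K}. w k * (\<Sum>t\<in>{1..T k}. G x z k t)) \<le> Phi x z 1 1 - Psi x z K (T K)"
proof (induction K)
  case 0 then show ?case by simp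
next
  case (Suc K)
  have kk: "Suc K \<in> {1..N}" using Suc.prems by auto
  have TK: "T (Suc K) \<ge> 1" using T_pos kk by auto
  have isum: "w (Suc K) * (\<Sum>t\<in>{1..T (Suc K)}. G x z (Suc K) t) \<le> Phi x z (Suc K) 1 - Psi x z (Suc K) (T (Suc K))"
    using inner_sum[OF kk x, of "T (Suc K)" z] TK by simp
  show ?case
  proof (cases "K = 0")
    case True
    then show ?thesis using isum by simp
  next
    case False
    then have ih: "(\<Sum>k\<in>{1..K}. w k * (\<Sum>t\<in>{1..T k}. G x z k t)) \<le> Phi x z 1 1 - Psi x z K (T K)"
      using Suc by simp
    have ac: "Phi x z (Suc K) 1 \<le> Psi x z K (T K)" using across[of "Suc K"] Suc.prems False by simp
    show ?thesis using ih isum ac by simp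
  qed
qed

lemma inner_main:
  assumes x: "x \<in> S"
  shows "(\<Sum>k\<in>{1..N}. w k * (\<Sum>t\<in>{1..T k}. G x z k t))
    \<le> \<beta> 1 / 2 * (\<eta> 1 1 / real (T 1) + p 1) * (norm (x - x0))\<^sup>2
     + \<beta> 1 * q 1 1 / (2 * real (T 1)) * (norm z)\<^sup>2"
  using outer_sum[OF x N_pos order.refl, of z] final[of x z] init[of x z] by linarith

end


lemma scal1:
  fixes a S r D L lam \<tau> p :: real
  assumes "a \<le> S * r" "S \<ge> 0" "r \<ge> 0" "D \<ge> 0" "r\<^sup>2 \<le> 2 * L * D" "L \<ge> 0"
    "lam \<ge> 0" "\<tau> \<ge> 0" "p > 0" "2 * L * lam \<le> p * \<tau>"
  shows "lam * a - \<tau> * D \<le> lam * p / 4 * S\<^sup>2"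
proof -
  have y: "r * S \<le> r\<^sup>2 / p + p / 4 * S\<^sup>2"
  proof -
    have "0 \<le> (r - p / 2 * S)\<^sup>2" by simp
    then have "p * (r * S) \<le> r\<^sup>2 + p\<^sup>2 / 4 * S\<^sup>2" by (simp add: power2_eq_square algebra_simps)
    then show ?thesis using assms(9) by (simp add: field_simps power2_eq_square)
  qed
  have la: "lam * a \<le> lam * (S * r)" using assms(1,7) by (simp add: mult_left_mono)
  have "lam * (S * r) \<le> \<tau> * D + lam * p / 4 * S\<^sup>2"
  proof (cases "L = 0")
    case True
    then have "r = 0" using assms(5) by simp
    then show ?thesis using assms by simp
  next
    case False
    then have L: "L > 0" using assms(6) by simp
    have "lam * r\<^sup>2 / p \<le> \<tau> * D"
    proof -
      have "lam * r\<^sup>2 \<le> lam * (2 * L * D)"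
        using assms(5,7) by (rule mult_left_mono)
      then have "2 * L * (lam * r\<^sup>2) \<le> 2 * L * (lam * (2 * L * D))"
        by (rule mult_left_mono) (use L in simp)
      also have "\<dots> = 2 * L * lam * (2 * L * D)" by simp
      also have "\<dots> \<le> p * \<tau> * (2 * L * D)"
        using assms(10) assms(4,6) by (intro mult_right_mono) auto
      finally have "2 * L * (lam * r\<^sup>2) \<le> 2 * L * (p * (\<tau> * D))" by (simp add: algebra_simps)
      then have "lam * r\<^sup>2 \<le> p * (\<tau> * D)" using L by simp
      then show ?thesis using assms(9) by (simp add: field_simps)
    qed
    moreover have "lam * (S * r) \<le> lam * (r\<^sup>2 / p + p / 4 * S\<^sup>2)"
      using y assms(7) by (simp add: mult_left_mono mult.commute)
    ultimately show ?thesis by (simp add: algebra_simps)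
  qed
  then show ?thesis using la by linarith
qed

lemma scal2:
  fixes a S r B L \<tau> p :: real
  assumes "a \<le> S * r" "S \<ge> 0" "r \<ge> 0" "B \<ge> 0" "r\<^sup>2 \<le> 2 * L * B" "L \<ge> 0"
    "\<tau> \<ge> 0" "p > 0" "p * (\<tau> + 1) \<ge> 2 * L"
  shows "a - (1 + \<tau>) * B \<le> p / 4 * S\<^sup>2"
proof -
  have y: "r * S \<le> r\<^sup>2 / p + p / 4 * S\<^sup>2"
  proof -
    have "0 \<le> (r - p / 2 * S)\<^sup>2" by simp
    then have "p * (r * S) \<le> r\<^sup>2 + p\<^sup>2 / 4 * S\<^sup>2" by (simp add: power2_eq_square algebra_simps)
    then show ?thesis using assms(8) by (simp add: field_simps power2_eq_square)
  qed
  have "r\<^sup>2 / p \<le> (1 + \<tau>) * B"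
  proof (cases "L = 0")
    case True
    then have "r = 0" using assms(5) by simp
    then show ?thesis using assms by simp
  next
    case False
    then have L: "L > 0" using assms(6) by simp
    have "r\<^sup>2 \<le> 2 * L * B" by (rule assms(5))
    also have "\<dots> \<le> p * (\<tau> + 1) * B" using assms(9) assms(4) by (intro mult_right_mono) auto
    finally show ?thesis using assms(8) by (simp add: field_simps)
  qed
  then show ?thesis using y assms(1) by (simp add: mult.commute) 
qed

lemma bregman_id:
  fixes xl xlp xh xb g y :: "'v::real_inner"
  assumes "(1 + \<tau>) *\<^sub>R xl = xt + \<tau> *\<^sub>R xlp"
  shows "Fb - Fl - inner y (xh - xl) + inner g (xh - xb)
   = \<tau> * (Fp - Fb - inner g (xlp - xb)) - (1 + \<tau>) * (Fl - Fb - inner g (xl - xb))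
     - \<tau> * (Fp - Fl - inner y (xlp - xl)) + inner (xh - xt) (g - y)"
proof -
  have xt: "xt = (1 + \<tau>) *\<^sub>R xl - \<tau> *\<^sub>R xlp" using assms by (simp add: algebra_simps)
  show ?thesis unfolding xt
    by (simp add: inner_diff_left inner_diff_right inner_add_left inner_add_right inner_commute algebra_simps)
qed


locale outer_det =
  fixes F :: "'v::real_inner \<Rightarrow> real" and Gr :: "'v \<Rightarrow> 'v" and L :: real
    and N :: nat and \<beta> p lam \<tau> :: "nat \<Rightarrow> real"
    and x0 :: 'v and xo xh xl :: "nat \<Rightarrow> 'v"
  assumes F_cvx: "convex_on UNIV F"
    and F_der: "\<And>u. (F has_derivative (\<lambda>h. inner (Gr u) h)) (at u)"
    and F_lip: "\<And>u w. norm (Gr u - Gr w) \<le> L * norm (u - w)"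
    and L: "L \<ge> 0" and N_pos: "N \<ge> 1"
    and \<beta>_pos: "\<forall>k\<in>{1..N}. \<beta> k > 0" and p_pos: "\<forall>k\<in>{1..N}. p k > 0"
    and lam_nonneg: "\<forall>k\<in>{1..N}. lam k \<ge> 0" and \<tau>_nonneg: "\<forall>k\<in>{1..N}. \<tau> k \<ge> 0"
    and c1: "\<forall>k\<in>{2..N}. \<beta> k * \<tau> k \<le> \<beta> (k - 1) * (\<tau> (k - 1) + 1)
      \<and> \<beta> (k - 1) = \<beta> k * lam k \<and> 2 * L * lam k \<le> p (k - 1) * \<tau> k"
    and \<tau>1: "\<tau> 1 = 0" and c3: "p N * (\<tau> N + 1) \<ge> 2 * L"
    and xo0: "xo 0 = x0" and xh0: "xh 0 = x0"
    and xl_step: "\<forall>k\<in>{1..N}. xl k = (1 / (1 + \<tau> k)) *\<^sub>R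
        (xo (k - 1) + lam k *\<^sub>R (xh (k - 1) - xo (k - 2)) + \<tau> k *\<^sub>R xl (k - 1))"
begin

definition "xt k = xo (k - 1) + lam k *\<^sub>R (xh (k - 1) - xo (k - 2))"
definition "sv k = xh k - xo (k - 1)"
definition "Bg g xb j = F (xl j) - F xb - inner g (xl j - xb)"
definition "Dd k = F (xl (k - 1)) - F (xl k) - inner (Gr (xl k)) (xl (k - 1) - xl k)"
definition "Ee g xb k = F xb - F (xl k) - inner (Gr (xl k)) (xh k - xl k) + inner g (xh k - xb)"
definition "Rr g xb k = \<beta> k * (1 + \<tau> k) * Bg g xb k - \<beta> k * inner (sv k) (g - Gr (xl k))"

lemma xl_rel:
  assumes k: "k \<in> {1..N}"
  shows "(1 + \<tau> k) *\<^sub>R xl k = xt k + \<tau> k *\<^sub>R xl (k - 1)"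
proof -
  have t: "1 + \<tau> k > 0" using \<tau>_nonneg k by (smt (verit))
  have "xl k = (1 / (1 + \<tau> k)) *\<^sub>R (xt k + \<tau> k *\<^sub>R xl (k - 1))"
    using xl_step k unfolding xt_def by auto
  then show ?thesis using t by simp
qed

lemma E_id: "k \<in> {1..N} \<Longrightarrow> Ee g xb k = \<tau> k * Bg g xb (k - 1) - (1 + \<tau> k) * Bg g xb k
     - \<tau> k * Dd k + inner (xh k - xt k) (g - Gr (xl k))"
  unfolding Ee_def Bg_def Dd_def by (rule bregman_id[OF xl_rel])

lemma Bg_nonneg: "g = Gr xb \<Longrightarrow> Bg g xb j \<ge> 0"
  using above_tangent[OF F_cvx F_der, of xb "xl j"] unfolding Bg_def by simp

lemma Bg_coco: "g = Gr xb \<Longrightarrow> (norm (Gr (xl j) - g))\<^sup>2 \<le> 2 * L * Bg g xb j"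
  using cocoercive[OF F_cvx F_der F_lip L, of "xl j" xb] unfolding Bg_def by simp

lemma Dd_coco: "(norm (Gr (xl (k - 1)) - Gr (xl k)))\<^sup>2 \<le> 2 * L * Dd k"
  using cocoercive[OF F_cvx F_der F_lip L, of "xl (k - 1)" "xl k"] unfolding Dd_def by simp

lemma Dd_nonneg: "Dd k \<ge> 0"
  using above_tangent[OF F_cvx F_der, of "xl k" "xl (k - 1)"] unfolding Dd_def by simp

lemma claim:
  assumes g: "g = Gr xb"
  shows "1 \<le> K \<Longrightarrow> K \<le> N \<Longrightarrow> (\<Sum>k\<in>{1..K}. \<beta> k * Ee g xb k)
     \<le> (\<Sum>k\<in>{1..<K}. \<beta> k * (p k / 4 * (norm (sv k))\<^sup>2)) - Rr g xb K"
proof (induction K)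
  case 0 then show ?case by simp
next
  case (Suc K)
  show ?case
  proof (cases "K = 0")
    case True
    have N1: "1 \<in> {1..N}" using N_pos by auto
    have xt1: "xt 1 = x0" unfolding xt_def using xo0 xh0 by simp
    have e: "Ee g xb 1 = - Bg g xb 1 + inner (sv 1) (g - Gr (xl 1))"
      using E_id[OF N1, of g xb] \<tau>1 xt1 xo0 unfolding sv_def by simp
    have "\<beta> 1 * Ee g xb 1 = - Rr g xb 1" unfolding Rr_def e \<tau>1 by (simp add: algebra_simps)
    then show ?thesis using True by simp
  next
    case False
    define j where "j = K"
    have K: "Suc K \<in> {2..N}" "Suc K \<in> {1..N}" "K \<in> {1..N}" using Suc.prems False by auto
    have ih: "(\<Sum>k\<in>{1..K}. \<beta> k * Ee g xb k) \<le> (\<Sum>k\<in>{1..<K}. \<beta> k * (p k / 4 * (norm (sv k))\<^sup>2)) - Rr g xb K"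
      using Suc.IH Suc.prems False by simp
    have c: "\<beta> (Suc K) * \<tau> (Suc K) \<le> \<beta> K * (\<tau> K + 1)" "\<beta> K = \<beta> (Suc K) * lam (Suc K)"
        "2 * L * lam (Suc K) \<le> p K * \<tau> (Suc K)"
      using bspec[OF c1 K(1)] by auto
    have pos: "\<beta> (Suc K) > 0" "\<beta> K > 0" "p K > 0" "lam (Suc K) \<ge> 0" "\<tau> (Suc K) \<ge> 0" "\<tau> K \<ge> 0"
      using \<beta>_pos p_pos lam_nonneg \<tau>_nonneg K by auto
    have xts: "xh (Suc K) - xt (Suc K) = sv (Suc K) - lam (Suc K) *\<^sub>R sv K"
      unfolding xt_def sv_def by (simp add: algebra_simps numeral_2_eq_2)
    have E: "Ee g xb (Suc K) = \<tau> (Suc K) * Bg g xb K - (1 + \<tau> (Suc K)) * Bg g xb (Suc K)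
     - \<tau> (Suc K) * Dd (Suc K) + inner (sv (Suc K)) (g - Gr (xl (Suc K)))
     - lam (Suc K) * inner (sv K) (g - Gr (xl (Suc K)))"
      using E_id[OF K(2), of g xb] unfolding xts by (simp add: inner_diff_left)
    define a where "a = inner (sv K) (Gr (xl (Suc K)) - Gr (xl K))"
    have a_eq: "inner (sv K) (g - Gr (xl K)) - inner (sv K) (g - Gr (xl (Suc K))) = a"
      unfolding a_def by (simp add: inner_diff_right)
    have "a \<le> norm (sv K) * norm (Gr (xl (Suc K)) - Gr (xl K))"
      unfolding a_def by (rule norm_cauchy_schwarz)
    moreover have "(norm (Gr (xl (Suc K)) - Gr (xl K)))\<^sup>2 \<le> 2 * L * Dd (Suc K)"
      using Dd_coco[of "Suc K"] by (simp add: norm_minus_commute)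
    ultimately have s1: "lam (Suc K) * a - \<tau> (Suc K) * Dd (Suc K) \<le> lam (Suc K) * p K / 4 * (norm (sv K))\<^sup>2"
      using Dd_nonneg L pos c(3) by (intro scal1) auto
    have bb: "(\<beta> (Suc K) * \<tau> (Suc K) - \<beta> K * (1 + \<tau> K)) * Bg g xb K \<le> 0"
      using c(1) Bg_nonneg[OF g, of K] by (intro mult_nonpos_nonneg) (auto simp: algebra_simps)
    have step: "Rr g xb (Suc K) + \<beta> (Suc K) * Ee g xb (Suc K) - Rr g xb K
       = (\<beta> (Suc K) * \<tau> (Suc K) - \<beta> K * (1 + \<tau> K)) * Bg g xb K
         + \<beta> (Suc K) * (lam (Suc K) * a - \<tau> (Suc K) * Dd (Suc K))"
      unfolding E Rr_def using a_eq c(2) by (simp add: algebra_simps)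
    have s2: "\<beta> (Suc K) * (lam (Suc K) * a - \<tau> (Suc K) * Dd (Suc K)) \<le> \<beta> K * (p K / 4 * (norm (sv K))\<^sup>2)"
      using mult_left_mono[OF s1, of "\<beta> (Suc K)"] pos c(2) by (simp add: algebra_simps)
    have sumE: "(\<Sum>k\<in>{1..Suc K}. \<beta> k * Ee g xb k) = (\<Sum>k\<in>{1..K}. \<beta> k * Ee g xb k) + \<beta> (Suc K) * Ee g xb (Suc K)"
      by simp
    have sumP: "(\<Sum>k\<in>{1..<Suc K}. \<beta> k * (p k / 4 * (norm (sv k))\<^sup>2))
       = (\<Sum>k\<in>{1..<K}. \<beta> k * (p k / 4 * (norm (sv k))\<^sup>2)) + \<beta> K * (p K / 4 * (norm (sv K))\<^sup>2)"
      using K by (simp add: atLeastLessThanSuc)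
    show ?thesis using ih step bb s2 sumE sumP by linarith
  qed
qed

lemma E_sum:
  assumes g: "g = Gr xb"
  shows "(\<Sum>k\<in>{1..N}. \<beta> k * Ee g xb k) \<le> (\<Sum>k\<in>{1..N}. \<beta> k * (p k / 4 * (norm (sv k))\<^sup>2))"
proof -
  have N1: "N \<in> {1..N}" using N_pos by auto
  have pos: "\<beta> N > 0" "p N > 0" "\<tau> N \<ge> 0" using \<beta>_pos p_pos \<tau>_nonneg N1 by auto
  have cl: "(\<Sum>k\<in>{1..N}. \<beta> k * Ee g xb k) \<le> (\<Sum>k\<in>{1..<N}. \<beta> k * (p k / 4 * (norm (sv k))\<^sup>2)) - Rr g xb N"
    by (rule claim[OF g N_pos order.refl])
  define a where "a = inner (sv N) (g - Gr (xl N))"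
  have "a \<le> norm (sv N) * norm (g - Gr (xl N))" unfolding a_def by (rule norm_cauchy_schwarz)
  moreover have "(norm (g - Gr (xl N)))\<^sup>2 \<le> 2 * L * Bg g xb N"
    using Bg_coco[OF g, of N] by (simp add: norm_minus_commute)
  ultimately have "a - (1 + \<tau> N) * Bg g xb N \<le> p N / 4 * (norm (sv N))\<^sup>2"
    using Bg_nonneg[OF g] L pos c3 by (intro scal2) auto
  then have R: "- Rr g xb N \<le> \<beta> N * (p N / 4 * (norm (sv N))\<^sup>2)"
  proof -
    have "- Rr g xb N = \<beta> N * (a - (1 + \<tau> N) * Bg g xb N)"
      unfolding Rr_def a_def by (simp add: algebra_simps)
    also have "\<dots> \<le> \<beta> N * (p N / 4 * (norm (sv N))\<^sup>2)"
      using \<open>a - (1 + \<tau> N) * Bg g xb N \<le> p N / 4 * (norm (sv N))\<^sup>2\<close> pos by (intro mult_left_mono) auto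
    finally show ?thesis .
  qed
  have "(\<Sum>k\<in>{1..N}. \<beta> k * (p k / 4 * (norm (sv k))\<^sup>2))
     = (\<Sum>k\<in>{1..<N}. \<beta> k * (p k / 4 * (norm (sv k))\<^sup>2)) + \<beta> N * (p N / 4 * (norm (sv N))\<^sup>2)"
    using N_pos by (cases N) (auto simp: atLeastLessThanSuc_atLeastAtMost)
  then show ?thesis using cl R by linarith
qed


lemma outer_main:
  assumes xb: "xb = (1 / (\<Sum>k\<in>{1..N}. \<beta> k)) *\<^sub>R (\<Sum>k\<in>{1..N}. \<beta> k *\<^sub>R xh k)"
  shows "(\<Sum>k\<in>{1..N}. \<beta> k) * (F xb - F x)
    \<le> (\<Sum>k\<in>{1..N}. \<beta> k * (inner (Gr (xl k)) (xh k - x) + p k / 4 * (norm (xh k - xo (k - 1)))\<^sup>2))"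
proof -
  define g where "g = Gr xb"
  have Sp: "(\<Sum>k\<in>{1..N}. \<beta> k) > 0" using \<beta>_pos N_pos by (intro sum_pos) auto
  have each: "F xb - F x \<le> Ee g xb k + inner (Gr (xl k)) (xh k - x) - inner g (xh k - xb)" for k
  proof -
    have "F (xl k) + inner (Gr (xl k)) (x - xl k) \<le> F x" by (rule above_tangent[OF F_cvx F_der])
    then show ?thesis unfolding Ee_def by (simp add: inner_diff_right algebra_simps)
  qed
  have zero: "(\<Sum>k\<in>{1..N}. \<beta> k * inner g (xh k - xb)) = 0"
  proof -
    have "(\<Sum>k\<in>{1..N}. \<beta> k * inner g (xh k - xb)) = inner g (\<Sum>k\<in>{1..N}. \<beta> k *\<^sub>R (xh k - xb))"
      by (simp add: inner_sum_right)
    also have "(\<Sum>k\<in>{1..N}. \<beta> k *\<^sub>R (xh k - xb)) = (\<Sum>k\<in>{1..N}. \<beta> k *\<^sub>R xh k) - (\<Sum>k\<in>{1..N}. \<beta> k) *\<^sub>R xb"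
      by (simp add: scaleR_diff_right sum_subtractf scaleR_sum_left)
    also have "\<dots> = 0" using Sp unfolding xb by simp
    finally show ?thesis by simp
  qed
  have "(\<Sum>k\<in>{1..N}. \<beta> k) * (F xb - F x) = (\<Sum>k\<in>{1..N}. \<beta> k * (F xb - F x))"
    by (simp add: sum_distrib_right)
  also have "\<dots> \<le> (\<Sum>k\<in>{1..N}. \<beta> k * (Ee g xb k + inner (Gr (xl k)) (xh k - x) - inner g (xh k - xb)))"
    using \<beta>_pos each by (intro sum_mono mult_left_mono) (auto simp: less_imp_le)
  also have "\<dots> = (\<Sum>k\<in>{1..N}. \<beta> k * Ee g xb k) + (\<Sum>k\<in>{1..N}. \<beta> k * inner (Gr (xl k)) (xh k - x))
      - (\<Sum>k\<in>{1..N}. \<beta> k * inner g (xh k - xb))"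
    by (simp add: algebra_simps sum.distrib sum_subtractf)
  also have "\<dots> \<le> (\<Sum>k\<in>{1..N}. \<beta> k * (p k / 4 * (norm (sv k))\<^sup>2)) + (\<Sum>k\<in>{1..N}. \<beta> k * inner (Gr (xl k)) (xh k - x))"
    using E_sum[OF g_def] zero by simp
  also have "\<dots> = (\<Sum>k\<in>{1..N}. \<beta> k * (inner (Gr (xl k)) (xh k - x) + p k / 4 * (norm (xh k - xo (k - 1)))\<^sup>2))"
    unfolding sv_def by (simp add: distrib_left sum.distrib add.commute)
  finally show ?thesis .
qed

end


lemma norm_vec_sq: "(norm (x :: 'a::real_normed_vector ^ 'n::finite))\<^sup>2 = (\<Sum>i\<in>UNIV. (norm (x$i))\<^sup>2)"
  unfolding norm_vec_def L2_set_def by (simp add: sum_nonneg)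

lemma Nf_sc:
  fixes \<nu> :: "'n::finite \<Rightarrow> real^'d::finite \<Rightarrow> real"
  assumes "\<forall>i. strongly_convex_on UNIV 1 (\<nu> i)" and th: "0 \<le> \<theta>" "\<theta> \<le> 1"
  shows "(\<lambda>x::real^'d^'n. \<Sum>i\<in>UNIV. \<nu> i (x $ i)) (\<theta> *\<^sub>R x + (1 - \<theta>) *\<^sub>R y)
    \<le> \<theta> * (\<lambda>x::real^'d^'n. \<Sum>i\<in>UNIV. \<nu> i (x $ i)) x + (1 - \<theta>) * (\<lambda>x::real^'d^'n. \<Sum>i\<in>UNIV. \<nu> i (x $ i)) y
       - 1 / 2 * \<theta> * (1 - \<theta>) * (norm (x - y))\<^sup>2"
proof -
  have e: "\<nu> i ((\<theta> *\<^sub>R x + (1 - \<theta>) *\<^sub>R y) $ i) \<le> \<theta> * \<nu> i (x $ i) + (1 - \<theta>) * \<nu> i (y $ i)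
      - 1 / 2 * \<theta> * (1 - \<theta>) * (norm (x $ i - y $ i))\<^sup>2" for i
    using assms unfolding strongly_convex_on_def by auto
  have "(\<Sum>i\<in>UNIV. \<nu> i ((\<theta> *\<^sub>R x + (1 - \<theta>) *\<^sub>R y) $ i))
     \<le> (\<Sum>i\<in>UNIV. \<theta> * \<nu> i (x $ i) + (1 - \<theta>) * \<nu> i (y $ i) - 1 / 2 * \<theta> * (1 - \<theta>) * (norm (x $ i - y $ i))\<^sup>2)"
    by (rule sum_mono[OF e])
  also have "\<dots> = \<theta> * (\<Sum>i\<in>UNIV. \<nu> i (x $ i)) + (1 - \<theta>) * (\<Sum>i\<in>UNIV. \<nu> i (y $ i))
     - 1 / 2 * \<theta> * (1 - \<theta>) * (\<Sum>i\<in>UNIV. (norm ((x - y) $ i))\<^sup>2)"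
    by (simp add: sum.distrib sum_subtractf sum_distrib_left)
  also have "(\<Sum>i\<in>UNIV. (norm ((x - y) $ i))\<^sup>2) = (norm (x - y))\<^sup>2" by (simp add: norm_vec_sq)
  finally show ?thesis by simp
qed

lemma convex_from_sc:
  fixes g :: "'a::real_normed_vector \<Rightarrow> real"
  assumes "\<And>x y \<theta>. 0 \<le> \<theta> \<Longrightarrow> \<theta> \<le> 1 \<Longrightarrow>
      g (\<theta> *\<^sub>R x + (1 - \<theta>) *\<^sub>R y) \<le> \<theta> * g x + (1 - \<theta>) * g y - m / 2 * \<theta> * (1 - \<theta>) * (norm (x - y))\<^sup>2"
    and "m \<ge> 0"
  shows "convex_on UNIV g"
proof (rule convex_onI)
  fix t x y :: 'a and u :: real
  fix t :: real assume t: "0 < t" "t < 1"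
  have "g (t *\<^sub>R y + (1 - t) *\<^sub>R x) \<le> t * g y + (1 - t) * g x - m / 2 * t * (1 - t) * (norm (y - x))\<^sup>2"
    using assms(1)[of t y x] t by simp
  moreover have "0 \<le> m / 2 * t * (1 - t) * (norm (y - x))\<^sup>2" using t assms(2) by simp
  ultimately show "g ((1 - t) *\<^sub>R x + t *\<^sub>R y) \<le> (1 - t) * g x + t * g y"
    by (simp add: add.commute)
qed simp

lemma ft_sum_convex:
  fixes ft :: "'n::finite \<Rightarrow> real^'d::finite \<Rightarrow> real"
  assumes "\<forall>i. convex_on UNIV (ft i)"
  shows "convex_on UNIV (\<lambda>x::real^'d^'n. \<Sum>i\<in>UNIV. ft i (x $ i))"
proof (rule convex_onI)
  fix t :: real and x y :: "real^'d^'n" assume t: "0 < t" "t < 1"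
  have "ft i (((1 - t) *\<^sub>R x + t *\<^sub>R y) $ i) \<le> (1 - t) * ft i (x $ i) + t * ft i (y $ i)" for i
    using convex_onD[OF assms[rule_format, of i], of t "x $ i" "y $ i"] t by simp
  then have "(\<Sum>i\<in>UNIV. ft i (((1 - t) *\<^sub>R x + t *\<^sub>R y) $ i)) \<le> (\<Sum>i\<in>UNIV. (1 - t) * ft i (x $ i) + t * ft i (y $ i))"
    by (rule sum_mono)
  then show "(\<Sum>i\<in>UNIV. ft i (((1 - t) *\<^sub>R x + t *\<^sub>R y) $ i))
      \<le> (1 - t) * (\<Sum>i\<in>UNIV. ft i (x $ i)) + t * (\<Sum>i\<in>UNIV. ft i (y $ i))"
    by (simp add: sum.distrib sum_distrib_left)
qed simp

lemma ft_sum_deriv: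
  fixes ft :: "'n::finite \<Rightarrow> real^'d::finite \<Rightarrow> real"
  assumes "\<forall>i u. (ft i has_derivative (\<lambda>h. inner (gradf i u) h)) (at u)"
  shows "((\<lambda>x::real^'d^'n. \<Sum>i\<in>UNIV. ft i (x $ i)) has_derivative
     (\<lambda>h. inner (\<chi> i. gradf i (u $ i)) h)) (at u)"
proof -
  have d: "((\<lambda>x::real^'d^'n. ft i (x $ i)) has_derivative (\<lambda>h. inner (gradf i (u $ i)) (h $ i))) (at u)" for i
  proof -
    have l: "((\<lambda>x::real^'d^'n. x $ i) has_derivative (\<lambda>h. h $ i)) (at u)"
      by (rule bounded_linear_imp_has_derivative[OF bounded_linear_vec_nth])
    show ?thesis using has_derivative_compose[OF l assms[rule_format, of i "u $ i"]] by (simp add: o_def)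
  qed
  have "((\<lambda>x::real^'d^'n. \<Sum>i\<in>UNIV. ft i (x $ i)) has_derivative (\<lambda>h. \<Sum>i\<in>UNIV. inner (gradf i (u $ i)) (h $ i))) (at u)"
    by (rule has_derivative_sum) (use d in auto)
  moreover have "(\<lambda>h::real^'d^'n. \<Sum>i\<in>UNIV. inner (gradf i (u $ i)) (h $ i)) = (\<lambda>h. inner (\<chi> i. gradf i (u $ i)) h)"
    by (simp add: inner_vec_def)
  ultimately show ?thesis by simp
qed

lemma Lt_nonneg:
  fixes gradf :: "'n \<Rightarrow> real^'d::finite \<Rightarrow> real^'d"
  assumes "\<forall>i u w. norm (gradf i u - gradf i w) \<le> Lt * norm (u - w)"
  shows "Lt \<ge> 0"
proof -
  obtain j :: 'd where True by simp
  define u :: "real^'d" where "u = axis j 1"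
  have "norm u > 0" unfolding u_def by (simp add: axis_def vec_eq_iff)
  moreover have "0 \<le> Lt * norm (u - 0)" using assms norm_ge_zero order_trans by metis
  ultimately show ?thesis by (simp add: zero_le_mult_iff)
qed

lemma ft_sum_lip:
  fixes gradf :: "'n::finite \<Rightarrow> real^'d::finite \<Rightarrow> real^'d"
  assumes "\<forall>i u w. norm (gradf i u - gradf i w) \<le> Lt * norm (u - w)"
  shows "norm ((\<chi> i. gradf i ((u::real^'d^'n) $ i)) - (\<chi> i. gradf i (w $ i))) \<le> Lt * norm (u - w)"
proof -
  have L: "Lt \<ge> 0" by (rule Lt_nonneg[OF assms])
  have "(norm ((\<chi> i. gradf i (u $ i)) - (\<chi> i. gradf i (w $ i))))\<^sup>2 = (\<Sum>i\<in>UNIV. (norm (gradf i (u $ i) - gradf i (w $ i)))\<^sup>2)"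
    by (simp add: norm_vec_sq)
  also have "\<dots> \<le> (\<Sum>i\<in>UNIV. (Lt * norm (u $ i - w $ i))\<^sup>2)"
    using assms by (intro sum_mono power_mono) auto
  also have "\<dots> = Lt\<^sup>2 * (norm (u - w))\<^sup>2"
    by (simp add: norm_vec_sq power_mult_distrib sum_distrib_left)
  also have "\<dots> = (Lt * norm (u - w))\<^sup>2" by (simp add: power_mult_distrib)
  finally show ?thesis using L by (simp add: power2_le_iff_abs_le)
qed

lemma kron_linear: "linear (kron_op K)"
  unfolding kron_op_def
  by (rule linearI) (simp_all add: vec_eq_iff sum.distrib scaleR_add_right scaleR_sum_right ac_simps)

lemma kron_bounded: "bounded_linear (kron_op K :: real^'d::finite^'n::finite \<Rightarrow> real^'d^'m::finite)"
  using kron_linear linear_conv_bounded_linear by blast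

lemma kron_adj:
  fixes K :: "'m::finite \<Rightarrow> 'n::finite \<Rightarrow> real"
  shows "inner (kron_op K (x :: real^'d::finite^'n)) z = inner x (kron_op (transp_mat K) z)"
proof -
  have "inner (kron_op K x) z = (\<Sum>j\<in>UNIV. \<Sum>i\<in>UNIV. K j i * inner (x $ i) (z $ j))"
    unfolding kron_op_def inner_vec_def[of "vec_lambda _"] by (simp add: inner_sum_left)
  also have "\<dots> = (\<Sum>i\<in>UNIV. \<Sum>j\<in>UNIV. K j i * inner (x $ i) (z $ j))" by (rule sum.swap)
  also have "\<dots> = inner x (kron_op (transp_mat K) z)"
    unfolding kron_op_def transp_mat_def inner_vec_def[of x] by (simp add: inner_sum_right)
  finally show ?thesis .
qed

lemma normsq_convex: "convex_on UNIV (\<lambda>x::'a::real_inner. (norm (x - c))\<^sup>2)"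
proof (rule convex_onI)
  fix t :: real and x y :: 'a assume t: "0 < t" "t < 1"
  have "(norm (c - ((1 - t) *\<^sub>R x + (1 - (1 - t)) *\<^sub>R y)))\<^sup>2 = (1 - t) * (norm (c - x))\<^sup>2 + (1 - (1 - t)) * (norm (c - y))\<^sup>2
     - (1 - t) * (1 - (1 - t)) * (norm (x - y))\<^sup>2" by (rule quad_id)
  moreover have "0 \<le> (1 - t) * (1 - (1 - t)) * (norm (x - y))\<^sup>2" using t by simp
  ultimately show "(norm ((1 - t) *\<^sub>R x + t *\<^sub>R y - c))\<^sup>2 \<le> (1 - t) * (norm (x - c))\<^sup>2 + t * (norm (y - c))\<^sup>2"
    by (simp add: norm_minus_commute)
qed simp

lemma jensen_avg:
  fixes g :: "'a::real_vector \<Rightarrow> real"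
  assumes "convex_on UNIV g" "T \<ge> 1"
  shows "g ((1 / real T) *\<^sub>R (\<Sum>t\<in>{1..T}. X t)) \<le> (1 / real T) * (\<Sum>t\<in>{1..T}. g (X t))"
proof -
  have "g (\<Sum>t\<in>{1..T}. (1 / real T) *\<^sub>R X t) \<le> (\<Sum>t\<in>{1..T}. (1 / real T) * g (X t))"
    by (rule convex_on_sum[OF _ _ assms(1)]) (use assms(2) in auto)
  then show ?thesis by (simp add: scaleR_sum_right sum_distrib_left)
qed

lemma jensen_w:
  fixes g :: "'a::real_vector \<Rightarrow> real" and N :: nat
  assumes "convex_on UNIV g" "N \<ge> 1" "\<forall>k\<in>{1..N}. \<beta> k > 0"
  shows "(\<Sum>k\<in>{1..N}. \<beta> k) * g ((1 / (\<Sum>k\<in>{1..N}. \<beta> k)) *\<^sub>R (\<Sum>k\<in>{1..N}. \<beta> k *\<^sub>R X k))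
    \<le> (\<Sum>k\<in>{1..N}. \<beta> k * g (X k))"
proof -
  define S where "S = (\<Sum>k\<in>{1..N}. \<beta> k)"
  have Sp: "S > 0" unfolding S_def using assms by (intro sum_pos) auto
  have "g (\<Sum>k\<in>{1..N}. (\<beta> k / S) *\<^sub>R X k) \<le> (\<Sum>k\<in>{1..N}. (\<beta> k / S) * g (X k))"
    by (rule convex_on_sum[OF _ _ assms(1)])
       (use assms Sp in \<open>auto simp: S_def sum_divide_distrib[symmetric] less_imp_le\<close>)
  then have "g ((1 / S) *\<^sub>R (\<Sum>k\<in>{1..N}. \<beta> k *\<^sub>R X k)) \<le> (1 / S) * (\<Sum>k\<in>{1..N}. \<beta> k * g (X k))"
    by (simp add: scaleR_sum_right sum_distrib_left)
  then show ?thesis unfolding S_def[symmetric] using Sp by (simp add: field_simps)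
qed


lemma sq2: "((a::real) + b)\<^sup>2 \<le> 2 * a\<^sup>2 + 2 * b\<^sup>2"
proof -
  have "(a + b)\<^sup>2 + (a - b)\<^sup>2 = 2 * a\<^sup>2 + 2 * b\<^sup>2" by (simp add: power2_eq_square algebra_simps)
  moreover have "(a - b)\<^sup>2 \<ge> 0" by simp
  ultimately show ?thesis by linarith
qed

lemma sq3: "((a::real) + b + c)\<^sup>2 \<le> 3 * a\<^sup>2 + 3 * b\<^sup>2 + 3 * c\<^sup>2"
proof -
  have "(a + b + c)\<^sup>2 + (a - b)\<^sup>2 + (b - c)\<^sup>2 + (a - c)\<^sup>2 = 3 * a\<^sup>2 + 3 * b\<^sup>2 + 3 * c\<^sup>2"
    by (simp add: power2_eq_square algebra_simps)
  moreover have "(a - b)\<^sup>2 \<ge> 0" "(b - c)\<^sup>2 \<ge> 0" "(a - c)\<^sup>2 \<ge> 0" by simp_all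
  ultimately show ?thesis by linarith
qed

definition L2v :: "'a measure \<Rightarrow> 'a measure \<Rightarrow> ('a \<Rightarrow> 'b::euclidean_space) \<Rightarrow> bool" where
  "L2v M F w \<longleftrightarrow> w \<in> borel_measurable F \<and> integrable M (\<lambda>\<omega>. (norm (w \<omega>))\<^sup>2)"

lemma L2v_measM: "subalgebra M F \<Longrightarrow> L2v M F w \<Longrightarrow> w \<in> borel_measurable M"
  unfolding L2v_def using measurable_from_subalg by blast

lemma L2v_const: "prob_space M \<Longrightarrow> subalgebra M F \<Longrightarrow> L2v M F (\<lambda>_. c)"
  unfolding L2v_def using prob_space.finite_measure finite_measure.integrable_const by auto

lemma L2v_cong:
  assumes "subalgebra M F" "\<And>\<omega>. \<omega> \<in> space M \<Longrightarrow> w \<omega> = w' \<omega>" "L2v M F w"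
  shows "L2v M F w'"
proof -
  have mF: "w' \<in> borel_measurable F"
    using assms measurable_cong[of F w w'] unfolding L2v_def subalgebra_def by auto
  then have mM: "w' \<in> borel_measurable M" using assms(1) measurable_from_subalg by blast
  have i: "integrable M (\<lambda>\<omega>. (norm (w \<omega>))\<^sup>2)" using assms(3) unfolding L2v_def by simp
  have "integrable M (\<lambda>\<omega>. (norm (w' \<omega>))\<^sup>2)"
    by (rule integrable_cong_AE_imp[OF i]) (use mM assms(2) in \<open>auto intro!: AE_I2\<close>)
  then show ?thesis using mF unfolding L2v_def by simp
qed

lemma L2v_mono:
  assumes "subalgebra F' F" "L2v M F w"
  shows "L2v M F' w"
  using assms measurable_from_subalg unfolding L2v_def by blast

lemma L2v_add:
  assumes "subalgebra M F" "L2v M F a" "L2v M F b"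
  shows "L2v M F (\<lambda>\<omega>. a \<omega> + b \<omega>)"
proof -
  have ma: "a \<in> borel_measurable M" "b \<in> borel_measurable M" using assms L2v_measM by blast+
  have m: "(\<lambda>\<omega>. a \<omega> + b \<omega>) \<in> borel_measurable F" using assms unfolding L2v_def by (intro borel_measurable_add) auto
  have i: "integrable M (\<lambda>\<omega>. 2 * (norm (a \<omega>))\<^sup>2 + 2 * (norm (b \<omega>))\<^sup>2)"
    using assms unfolding L2v_def by auto
  have "integrable M (\<lambda>\<omega>. (norm (a \<omega> + b \<omega>))\<^sup>2)"
  proof (rule Bochner_Integration.integrable_bound[OF i])
    show "(\<lambda>\<omega>. (norm (a \<omega> + b \<omega>))\<^sup>2) \<in> borel_measurable M" using ma by measurable
    show "AE x in M. norm ((norm (a x + b x))\<^sup>2) \<le> norm (2 * (norm (a x))\<^sup>2 + 2 * (norm (b x))\<^sup>2)"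
    proof (rule AE_I2)
      fix x
      have "norm (a x + b x) \<le> norm (a x) + norm (b x)" by (rule norm_triangle_ineq)
      then have "(norm (a x + b x))\<^sup>2 \<le> (norm (a x) + norm (b x))\<^sup>2" by (simp add: power_mono)
      also have "\<dots> \<le> 2 * (norm (a x))\<^sup>2 + 2 * (norm (b x))\<^sup>2"
        by (rule sq2)
      finally show "norm ((norm (a x + b x))\<^sup>2) \<le> norm (2 * (norm (a x))\<^sup>2 + 2 * (norm (b x))\<^sup>2)" by simp
    qed
  qed
  then show ?thesis using m unfolding L2v_def by simp
qed

lemma L2v_comp:
  fixes h :: "'b::euclidean_space \<Rightarrow> 'c::euclidean_space"
  assumes "subalgebra M F" "L2v M F a" "continuous_on UNIV h" "\<And>u. norm (h u) \<le> C0 + C1 * norm u"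
    "C1 \<ge> 0" "prob_space M"
  shows "L2v M F (\<lambda>\<omega>. h (a \<omega>))"
proof -
  have ma: "a \<in> borel_measurable M" using assms L2v_measM by blast
  have hb: "h \<in> borel_measurable borel" using assms(3) by (rule borel_measurable_continuous_onI)
  have m: "(\<lambda>\<omega>. h (a \<omega>)) \<in> borel_measurable F"
    by (rule measurable_compose[OF _ hb]) (use assms(2) in \<open>simp add: L2v_def\<close>)
  have mM: "(\<lambda>\<omega>. h (a \<omega>)) \<in> borel_measurable M" using ma hb by (simp add: measurable_compose)
  interpret prob_space M by (rule assms(6))
  have i: "integrable M (\<lambda>\<omega>. 2 * C0\<^sup>2 + 2 * C1\<^sup>2 * (norm (a \<omega>))\<^sup>2)"
    using assms(2) unfolding L2v_def by auto
  have "integrable M (\<lambda>\<omega>. (norm (h (a \<omega>)))\<^sup>2)"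
  proof (rule Bochner_Integration.integrable_bound[OF i])
    show "(\<lambda>\<omega>. (norm (h (a \<omega>)))\<^sup>2) \<in> borel_measurable M" using mM by measurable
    show "AE x in M. norm ((norm (h (a x)))\<^sup>2) \<le> norm (2 * C0\<^sup>2 + 2 * C1\<^sup>2 * (norm (a x))\<^sup>2)"
    proof (rule AE_I2)
      fix x
      have "norm (h (a x)) \<le> C0 + C1 * norm (a x)" by (rule assms(4))
      then have "(norm (h (a x)))\<^sup>2 \<le> (C0 + C1 * norm (a x))\<^sup>2"
        by (rule power_mono) simp
      also have "\<dots> \<le> 2 * C0\<^sup>2 + 2 * C1\<^sup>2 * (norm (a x))\<^sup>2"
        using sq2[of C0 "C1 * norm (a x)"] by (simp add: power_mult_distrib)
      finally show "norm ((norm (h (a x)))\<^sup>2) \<le> norm (2 * C0\<^sup>2 + 2 * C1\<^sup>2 * (norm (a x))\<^sup>2)" by simp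
    qed
  qed
  then show ?thesis using m unfolding L2v_def by simp
qed

lemma L2v_scale:
  assumes "subalgebra M F" "L2v M F a" "prob_space M"
  shows "L2v M F (\<lambda>\<omega>. c *\<^sub>R a \<omega>)"
  by (rule L2v_comp[OF assms(1,2) _ _ _ assms(3), of _ 0 "\<bar>c\<bar>"]) (auto intro: continuous_intros)

lemma L2v_diff:
  assumes "subalgebra M F" "L2v M F a" "L2v M F b" "prob_space M"
  shows "L2v M F (\<lambda>\<omega>. a \<omega> - b \<omega>)"
  using L2v_add[OF assms(1,2) L2v_scale[OF assms(1,3,4), of "-1"]] by simp

lemma L2v_sum:
  assumes "subalgebra M F" "prob_space M" "finite I" "\<And>i. i \<in> I \<Longrightarrow> L2v M F (w i)"
  shows "L2v M F (\<lambda>\<omega>. \<Sum>i\<in>I. w i \<omega>)"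
  using assms(3,4)
proof (induction I rule: finite_induct)
  case empty then show ?case using L2v_const[OF assms(2,1)] by simp
next
  case (insert i I)
  then show ?case by simp (rule L2v_add[OF assms(1)], auto)
qed

lemma lip_meas:
  fixes x :: "'a \<Rightarrow> 'b::euclidean_space" and e :: "'a \<Rightarrow> 'c::euclidean_space"
  assumes e: "e \<in> borel_measurable F" and m: "m > 0"
    and lip: "\<And>\<omega> \<omega>'. \<omega> \<in> space F \<Longrightarrow> \<omega>' \<in> space F \<Longrightarrow> m * norm (x \<omega> - x \<omega>') \<le> norm (e \<omega> - e \<omega>')"
  shows "x \<in> borel_measurable F"
proof -
  define E where "E = e ` space F"
  define P where "P = (\<lambda>u. SOME xx. \<exists>\<omega>\<in>space F. e \<omega> = u \<and> xx = x \<omega>)"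
  have Pe: "P (e \<omega>) = x \<omega>" if w: "\<omega> \<in> space F" for \<omega>
  proof -
    have "\<exists>xx. \<exists>\<omega>'\<in>space F. e \<omega>' = e \<omega> \<and> xx = x \<omega>'" using w by blast
    then have "\<exists>\<omega>'\<in>space F. e \<omega>' = e \<omega> \<and> P (e \<omega>) = x \<omega>'"
      unfolding P_def by (rule someI_ex)
    then obtain \<omega>' where w': "\<omega>' \<in> space F" "e \<omega>' = e \<omega>" "P (e \<omega>) = x \<omega>'" by blast
    have "m * norm (x \<omega>' - x \<omega>) \<le> 0" using lip[OF w'(1) w] w'(2) by simp
    then have "x \<omega>' = x \<omega>" using m by (simp add: mult_le_0_iff)
    then show ?thesis using w'(3) by simp
  qed
  have "(1 / m)-lipschitz_on E P"
  proof (rule lipschitz_onI)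
    fix u u' assume "u \<in> E" "u' \<in> E"
    then obtain \<omega> \<omega>' where w: "\<omega> \<in> space F" "\<omega>' \<in> space F" "u = e \<omega>" "u' = e \<omega>'" unfolding E_def by blast
    have "m * dist (P u) (P u') \<le> dist u u'" using lip[OF w(1,2)] unfolding w(3,4) Pe[OF w(1)] Pe[OF w(2)] dist_norm .
    then show "dist (P u) (P u') \<le> 1 / m * dist u u'" using m by (simp add: field_simps)
  qed (use m in simp)
  then have cP: "continuous_on E P" by (rule lipschitz_on_continuous_on)
  show ?thesis
  proof (rule borel_measurableI)
    fix S :: "'b set" assume S: "open S"
    obtain A where A: "open A" "A \<inter> E = P -` S \<inter> E" using cP S unfolding continuous_on_open_invariant by blast
    have "x -` S \<inter> space F = e -` A \<inter> space F"
    proof (intro set_eqI iffI)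
      fix \<omega> assume "\<omega> \<in> x -` S \<inter> space F"
      then have "e \<omega> \<in> P -` S \<inter> E" using Pe unfolding E_def by auto
      then show "\<omega> \<in> e -` A \<inter> space F" using A(2) \<open>\<omega> \<in> x -` S \<inter> space F\<close> by auto
    next
      fix \<omega> assume "\<omega> \<in> e -` A \<inter> space F"
      then have "e \<omega> \<in> A \<inter> E" unfolding E_def by auto
      then have "P (e \<omega>) \<in> S" using A(2) by auto
      then show "\<omega> \<in> x -` S \<inter> space F" using Pe \<open>\<omega> \<in> e -` A \<inter> space F\<close> by auto
    qed
    also have "\<dots> \<in> sets F" using e A(1) by (simp add: measurable_sets borel_open)
    finally show "x -` S \<inter> space F \<in> sets F" .
  qed
qed

lemma L2v_lip:
  fixes x :: "'a \<Rightarrow> 'b::euclidean_space" and e :: "'a \<Rightarrow> 'c::euclidean_space"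
  assumes sub: "subalgebra M F" and P: "prob_space M" and e: "L2v M F e" and m: "m > 0"
    and lip: "\<And>\<omega> \<omega>'. \<omega> \<in> space M \<Longrightarrow> \<omega>' \<in> space M \<Longrightarrow> m * norm (x \<omega> - x \<omega>') \<le> norm (e \<omega> - e \<omega>')"
  shows "L2v M F x"
proof -
  interpret prob_space M by (rule P)
  have sp: "space F = space M" using sub unfolding subalgebra_def by simp
  have mx: "x \<in> borel_measurable F"
    by (rule lip_meas[of e F m]) (use e m lip sp in \<open>auto simp: L2v_def\<close>)
  have mxM: "x \<in> borel_measurable M" using mx sub measurable_from_subalg by blast
  obtain \<omega>0 where w0: "\<omega>0 \<in> space M" using not_empty by blast
  define C where "C = 3 * (norm (x \<omega>0))\<^sup>2 + 3 * (norm (e \<omega>0))\<^sup>2 / m\<^sup>2"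
  have i: "integrable M (\<lambda>\<omega>. C + 3 / m\<^sup>2 * (norm (e \<omega>))\<^sup>2)"
    using e unfolding L2v_def by auto
  have "integrable M (\<lambda>\<omega>. (norm (x \<omega>))\<^sup>2)"
  proof (rule Bochner_Integration.integrable_bound[OF i])
    show "(\<lambda>\<omega>. (norm (x \<omega>))\<^sup>2) \<in> borel_measurable M" using mxM by measurable
    show "AE \<omega> in M. norm ((norm (x \<omega>))\<^sup>2) \<le> norm (C + 3 / m\<^sup>2 * (norm (e \<omega>))\<^sup>2)"
    proof (rule AE_I2)
      fix \<omega> assume w: "\<omega> \<in> space M"
      have "m * norm (x \<omega> - x \<omega>0) \<le> norm (e \<omega> - e \<omega>0)" by (rule lip[OF w w0])
      also have "\<dots> \<le> norm (e \<omega>) + norm (e \<omega>0)" by (rule norm_triangle_ineq4)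
      finally have "norm (x \<omega> - x \<omega>0) \<le> (norm (e \<omega>) + norm (e \<omega>0)) / m" using m by (simp add: field_simps)
      moreover have "norm (x \<omega>) \<le> norm (x \<omega>0) + norm (x \<omega> - x \<omega>0)"
        by (metis add.commute diff_add_cancel norm_triangle_ineq)
      ultimately have b: "norm (x \<omega>) \<le> norm (x \<omega>0) + norm (e \<omega>) / m + norm (e \<omega>0) / m"
        by (simp add: add_divide_distrib)
      define a1 where "a1 = norm (x \<omega>0)"
      define a2 where "a2 = norm (e \<omega>) / m"
      define a3 where "a3 = norm (e \<omega>0) / m"
      have "(norm (x \<omega>))\<^sup>2 \<le> (a1 + a2 + a3)\<^sup>2"
        using b unfolding a1_def a2_def a3_def by (intro power_mono) auto
      also have "\<dots> \<le> 3 * a1\<^sup>2 + 3 * a2\<^sup>2 + 3 * a3\<^sup>2"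
        by (rule sq3)
      also have "\<dots> = C + 3 / m\<^sup>2 * (norm (e \<omega>))\<^sup>2"
        unfolding C_def a1_def a2_def a3_def by (simp add: power_divide)
      finally show "norm ((norm (x \<omega>))\<^sup>2) \<le> norm (C + 3 / m\<^sup>2 * (norm (e \<omega>))\<^sup>2)" by simp
    qed
  qed
  then show ?thesis using mx unfolding L2v_def by simp
qed


lemma spds_pointwise:
  fixes X :: "'n::finite \<Rightarrow> (real^'d::finite) set"
    and ft \<nu> :: "'n \<Rightarrow> real^'d \<Rightarrow> real"
    and gradf :: "'n \<Rightarrow> real^'d \<Rightarrow> real^'d"
    and Lt \<mu> :: real
    and xstar :: "real^'d^'n"
    and A :: "real^'d^'n \<Rightarrow> real^'d^'m::finite" and At :: "real^'d^'m \<Rightarrow> real^'d^'n"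
    and N :: nat and T :: "nat \<Rightarrow> nat"
    and \<beta> p lam \<tau> :: "nat \<Rightarrow> real" and q \<eta> \<alpha> :: "nat \<Rightarrow> nat \<Rightarrow> real"
    and x0 :: "real^'d^'n"
    and xs :: "nat \<Rightarrow> nat \<Rightarrow> 'a \<Rightarrow> real^'d^'n"
    and zs :: "nat \<Rightarrow> nat \<Rightarrow> 'a \<Rightarrow> real^'d^'m"
    and xl v :: "nat \<Rightarrow> 'a \<Rightarrow> real^'d^'n" and \<omega> :: 'a and z :: "real^'d^'m"
  defines "Xset \<equiv> {x :: real^'d^'n. \<forall>i. x $ i \<in> X i}"
    and "f \<equiv> (\<lambda>x :: real^'d^'n. (\<Sum>i\<in>UNIV. ft i (x $ i)) + \<mu> * (\<Sum>i\<in>UNIV. \<nu> i (x $ i)))"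
    and "y \<equiv> (\<lambda>k \<omega>. \<chi> i. gradf i (xl k \<omega> $ i))"
    and "xbar \<equiv> (\<lambda>\<omega>. (1 / (\<Sum>k\<in>{1..N}. \<beta> k)) *\<^sub>R
                     (\<Sum>k\<in>{1..N}. \<beta> k *\<^sub>R spds_xhat x0 T xs k \<omega>))"
  assumes A_lin: "linear A" and A_bnd: "\<And>u. norm (A u) \<le> onorm A * norm u"
    and A_adj: "\<And>u z. inner (A u) z = inner u (At z)"
    and X_convex: "\<forall>i. convex (X i)"
    and ft_convex: "\<forall>i. convex_on UNIV (ft i)"
    and ft_grad: "\<forall>i u. (ft i has_derivative (\<lambda>h. inner (gradf i u) h)) (at u)"
    and ft_lip: "\<forall>i u w. norm (gradf i u - gradf i w) \<le> Lt * norm (u - w)"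
    and nu_sc: "\<forall>i. strongly_convex_on UNIV 1 (\<nu> i)"
    and mu_nonneg: "\<mu> \<ge> 0"
    and xstar_in: "xstar \<in> Xset" and Axstar: "A xstar = 0"
    and N_pos: "N \<ge> 1"
    and T_pos: "\<forall>k\<in>{1..N}. T k \<ge> 1"
    and \<beta>_pos: "\<forall>k\<in>{1..N}. \<beta> k > 0" and p_pos: "\<forall>k\<in>{1..N}. p k > 0"
    and q_pos: "\<forall>k\<in>{1..N}. \<forall>t\<in>{1..T k}. q k t > 0"
    and \<eta>_pos: "\<forall>k\<in>{1..N}. \<forall>t\<in>{1..T k}. \<eta> k t > 0"
    and lam_nonneg: "\<forall>k\<in>{1..N}. lam k \<ge> 0" and \<tau>_nonneg: "\<forall>k\<in>{1..N}. \<tau> k \<ge> 0"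
    and \<alpha>_nonneg: "\<forall>k\<in>{1..N}. \<forall>t\<in>{1..T k}. \<alpha> k t \<ge> 0"
    and cond_i: "\<forall>k\<in>{2..N}.
        \<beta> k * \<tau> k \<le> \<beta> (k - 1) * (\<tau> (k - 1) + 1)
      \<and> \<beta> (k - 1) = \<beta> k * lam k
      \<and> 2 * Lt * lam k \<le> p (k - 1) * \<tau> k
      \<and> \<beta> k * real (T (k - 1)) * \<alpha> k 1 = \<beta> (k - 1) * real (T k)
      \<and> \<alpha> k 1 * (onorm A)\<^sup>2 \<le> \<eta> (k - 1) (T (k - 1)) * q k 1
      \<and> \<beta> k * real (T (k - 1)) * q k 1 \<le> \<beta> (k - 1) * real (T k) * q (k - 1) (T (k - 1))
      \<and> \<beta> k * real (T (k - 1)) * (\<eta> k 1 + p k * real (T k))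
          \<le> \<beta> (k - 1) * real (T k) * (\<mu> + \<eta> (k - 1) (T (k - 1)) + p (k - 1))"
    and cond_ii: "\<forall>k\<in>{1..N}. \<forall>t\<in>{2..T k}.
        \<alpha> k t = 1 \<and> (onorm A)\<^sup>2 \<le> \<eta> k (t - 1) * q k t \<and> q k t \<le> q k (t - 1)
      \<and> \<eta> k t \<le> \<mu> + \<eta> k (t - 1) + p k"
    and cond_iii: "\<tau> 1 = 0" "p N * (\<tau> N + 1) \<ge> 2 * Lt"
      "\<eta> N (T N) * q N (T N) \<ge> (onorm A)\<^sup>2"
    and xl_step: "\<forall>k\<in>{1..N}. xl k \<omega> =
        (1 / (1 + \<tau> k)) *\<^sub>R (spds_xtilde x0 T xs lam k \<omega> + \<tau> k *\<^sub>R xl (k - 1) \<omega>)"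
    and xs_init: "\<forall>k\<in>{1..N}. xs k 0 \<omega> = spds_xout x0 T xs (k - 1) \<omega>"
    and zs_init: "\<forall>k\<in>{1..N}. zs k 0 \<omega> = (if k = 1 then 0 else zs (k - 1) (T (k - 1)) \<omega>)"
    and zs_step: "\<forall>k\<in>{1..N}. \<forall>t\<in>{1..T k}.
        zs k t \<omega> = zs k (t - 1) \<omega> + (1 / q k t) *\<^sub>R A (xs k (t - 1) \<omega> + \<alpha> k t *\<^sub>R
           (xs k (t - 1) \<omega> - (if t = 1 then spds_xprev x0 T xs k \<omega> else xs k (t - 2) \<omega>)))"
    and xs_step: "\<forall>k\<in>{1..N}. \<forall>t\<in>{1..T k}.
        is_arg_min (\<lambda>x. \<mu> * (\<Sum>i\<in>UNIV. \<nu> i (x $ i)) + inner (v k \<omega> + At (zs k t \<omega>)) x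
                       + \<eta> k t / 2 * (norm (xs k (t - 1) \<omega> - x))\<^sup>2
                       + p k / 2 * (norm (spds_xout x0 T xs (k - 1) \<omega> - x))\<^sup>2)
                   (\<lambda>x. x \<in> Xset) (xs k t \<omega>)"
  shows "(\<Sum>k\<in>{1..N}. \<beta> k) * (f (xbar \<omega>) - f xstar + inner (A (xbar \<omega>)) z)
     \<le> \<beta> 1 / 2 * (\<eta> 1 1 / real (T 1) + p 1) * (norm (x0 - xstar))\<^sup>2
        + \<beta> 1 * q 1 1 / (2 * real (T 1)) * (norm z)\<^sup>2
        + (\<Sum>k\<in>{1..N}. \<beta> k * ((norm (v k \<omega> - y k \<omega>))\<^sup>2 / p k
             + inner (v k \<omega> - y k \<omega>) (xstar - spds_xout x0 T xs (k - 1) \<omega>)))"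
proof -
  define Nf where "Nf = (\<lambda>x::real^'d^'n. \<Sum>i\<in>UNIV. \<nu> i (x $ i))"
  define Ff where "Ff = (\<lambda>x::real^'d^'n. \<Sum>i\<in>UNIV. ft i (x $ i))"
  define Gr where "Gr = (\<lambda>x::real^'d^'n. \<chi> i. gradf i (x $ i))"
  have nsc: "\<And>x y \<theta>. 0 \<le> \<theta> \<Longrightarrow> \<theta> \<le> 1 \<Longrightarrow>
      Nf (\<theta> *\<^sub>R x + (1 - \<theta>) *\<^sub>R y) \<le> \<theta> * Nf x + (1 - \<theta>) * Nf y - 1 / 2 * \<theta> * (1 - \<theta>) * (norm (x - y))\<^sup>2"
    unfolding Nf_def using Nf_sc[OF nu_sc] by blast
  have Sconv: "convex Xset"
    unfolding Xset_def convex_def using X_convex by (auto simp: convex_def)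
  have Xb: "\<forall>k\<in>{1..N}. xs k 0 \<omega> = (if k = 1 then x0 else xs (k - 1) (T (k - 1)) \<omega>)"
    using xs_init by (auto simp: spds_xout_def)
  have Zs: "\<forall>k\<in>{1..N}. \<forall>t\<in>{1..T k}.
        zs k t \<omega> = zs k (t - 1) \<omega> + (1 / q k t) *\<^sub>R A (xs k (t - 1) \<omega> + \<alpha> k t *\<^sub>R
           (xs k (t - 1) \<omega> - (if t = 1 then (if k \<le> 1 then x0 else xs (k - 1) (T (k - 1) - 1) \<omega>) else xs k (t - 2) \<omega>)))"
    using zs_step by (simp add: spds_xprev_def)
  have Xs: "\<forall>k\<in>{1..N}. \<forall>t\<in>{1..T k}.
        is_arg_min (proxobj Nf \<mu> (v k \<omega> + At (zs k t \<omega>)) (\<eta> k t) (xs k (t - 1) \<omega>) (p k) (xs k 0 \<omega>)) (\<lambda>x. x \<in> Xset) (xs k t \<omega>)"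
  proof (intro ballI)
    fix k t assume k: "k \<in> {1..N}" and t: "t \<in> {1..T k}"
    have "proxobj Nf \<mu> (v k \<omega> + At (zs k t \<omega>)) (\<eta> k t) (xs k (t - 1) \<omega>) (p k) (xs k 0 \<omega>)
       = (\<lambda>x. \<mu> * (\<Sum>i\<in>UNIV. \<nu> i (x $ i)) + inner (v k \<omega> + At (zs k t \<omega>)) x
                     + \<eta> k t / 2 * (norm (xs k (t - 1) \<omega> - x))\<^sup>2
                     + p k / 2 * (norm (spds_xout x0 T xs (k - 1) \<omega> - x))\<^sup>2)"
      using xs_init k unfolding proxobj_def Nf_def by auto
    then show "is_arg_min (proxobj Nf \<mu> (v k \<omega> + At (zs k t \<omega>)) (\<eta> k t) (xs k (t - 1) \<omega>) (p k) (xs k 0 \<omega>)) (\<lambda>x. x \<in> Xset) (xs k t \<omega>)"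
      using xs_step k t by simp
  qed
  have ci: "\<forall>k\<in>{2..N}.
        \<beta> k * real (T (k - 1)) * \<alpha> k 1 = \<beta> (k - 1) * real (T k)
      \<and> \<alpha> k 1 * (onorm A)\<^sup>2 \<le> \<eta> (k - 1) (T (k - 1)) * q k 1
      \<and> \<beta> k * real (T (k - 1)) * q k 1 \<le> \<beta> (k - 1) * real (T k) * q (k - 1) (T (k - 1))
      \<and> \<beta> k * real (T (k - 1)) * (\<eta> k 1 + p k * real (T k))
          \<le> \<beta> (k - 1) * real (T k) * (\<mu> + \<eta> (k - 1) (T (k - 1)) + p (k - 1))"
    using cond_i by blast
  interpret I: inner_det A At "onorm A" Nf \<mu> Xset N T \<beta> p q \<eta> \<alpha> x0
      "\<lambda>k t. xs k t \<omega>" "\<lambda>k t. zs k t \<omega>" "\<lambda>k. v k \<omega>"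
    by (rule inner_det.intro[OF N_pos A_lin A_bnd A_adj nsc mu_nonneg Sconv T_pos \<beta>_pos p_pos q_pos \<eta>_pos
         \<alpha>_nonneg ci cond_ii cond_iii(3) Xb zs_init Zs Xs])
  have L0: "Lt \<ge> 0" by (rule Lt_nonneg[OF ft_lip])
  have c1: "\<forall>k\<in>{2..N}. \<beta> k * \<tau> k \<le> \<beta> (k - 1) * (\<tau> (k - 1) + 1)
      \<and> \<beta> (k - 1) = \<beta> k * lam k \<and> 2 * Lt * lam k \<le> p (k - 1) * \<tau> k"
    using cond_i by blast
  have xls: "\<forall>k\<in>{1..N}. xl k \<omega> = (1 / (1 + \<tau> k)) *\<^sub>R
        (spds_xout x0 T xs (k - 1) \<omega> + lam k *\<^sub>R (spds_xhat x0 T xs (k - 1) \<omega> - spds_xout x0 T xs (k - 2) \<omega>)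
         + \<tau> k *\<^sub>R xl (k - 1) \<omega>)"
    using xl_step unfolding spds_xtilde_def by simp
  have Fcvx: "convex_on UNIV Ff" unfolding Ff_def by (rule ft_sum_convex[OF ft_convex])
  have Fder: "\<And>u. (Ff has_derivative (\<lambda>h. inner (Gr u) h)) (at u)"
    unfolding Ff_def Gr_def by (rule ft_sum_deriv[OF ft_grad])
  have Flip: "\<And>u w. norm (Gr u - Gr w) \<le> Lt * norm (u - w)"
    unfolding Gr_def by (rule ft_sum_lip[OF ft_lip])
  interpret O: outer_det Ff Gr Lt N \<beta> p lam \<tau> x0 "\<lambda>k. spds_xout x0 T xs k \<omega>"
      "\<lambda>k. spds_xhat x0 T xs k \<omega>" "\<lambda>k. xl k \<omega>"
    by (rule outer_det.intro[OF Fcvx Fder Flip L0 N_pos \<beta>_pos p_pos lam_nonneg \<tau>_nonneg c1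
          cond_iii(1,2) _ _ xls]) (simp_all add: spds_xout_def spds_xhat_def)
  define Sb where "Sb = (\<Sum>k\<in>{1..N}. \<beta> k)"
  have Sb: "Sb > 0" unfolding Sb_def using \<beta>_pos N_pos by (intro sum_pos) auto
  define xh where "xh = (\<lambda>k. spds_xhat x0 T xs k \<omega>)"
  define xo where "xo = (\<lambda>k. spds_xout x0 T xs k \<omega>)"
  define dl where "dl = (\<lambda>k. v k \<omega> - y k \<omega>)"
  have xbar_eq: "xbar \<omega> = (1 / Sb) *\<^sub>R (\<Sum>k\<in>{1..N}. \<beta> k *\<^sub>R xh k)"
    unfolding xbar_def Sb_def xh_def by simp
  have yGr: "y k \<omega> = Gr (xl k \<omega>)" for k unfolding y_def Gr_def by simp
  have OM: "Sb * (Ff (xbar \<omega>) - Ff xstar)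
    \<le> (\<Sum>k\<in>{1..N}. \<beta> k * (inner (Gr (xl k \<omega>)) (xh k - xstar) + p k / 4 * (norm (xh k - xo (k - 1)))\<^sup>2))"
    unfolding Sb_def xh_def xo_def by (rule O.outer_main) (simp add: xbar_def)
  have IM: "(\<Sum>k\<in>{1..N}. I.w k * (\<Sum>t\<in>{1..T k}. I.G xstar z k t))
    \<le> \<beta> 1 / 2 * (\<eta> 1 1 / real (T 1) + p 1) * (norm (xstar - x0))\<^sup>2
     + \<beta> 1 * q 1 1 / (2 * real (T 1)) * (norm z)\<^sup>2"
    by (rule I.inner_main[OF xstar_in])
  have Nfcvx: "convex_on UNIV Nf" by (rule convex_from_sc[OF nsc]) auto
  have perk: "\<beta> k * (inner (Gr (xl k \<omega>)) (xh k - xstar) + p k / 4 * (norm (xh k - xo (k - 1)))\<^sup>2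
        + \<mu> * Nf (xh k) - \<mu> * Nf xstar + inner (A (xh k)) z)
      \<le> I.w k * (\<Sum>t\<in>{1..T k}. I.G xstar z k t)
        + \<beta> k * ((norm (dl k))\<^sup>2 / p k + inner (dl k) (xstar - xo (k - 1)))" if k: "k \<in> {1..N}" for k
  proof -
    have Tk: "T k \<ge> 1" using T_pos k by auto
    have bk: "\<beta> k > 0" "p k > 0" using \<beta>_pos p_pos k by auto
    define X0 where "X0 = xs k 0 \<omega>"
    have X0: "X0 = xo (k - 1)" unfolding X0_def xo_def using xs_init k by auto
    define g where "g = (\<lambda>u. \<mu> * Nf u + p k / 2 * (norm (u - X0))\<^sup>2)"
    define l where "l = (\<lambda>u. inner (v k \<omega>) u + inner (A u) z)"
    define c where "c = \<mu> * Nf xstar + inner (v k \<omega>) xstar"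
    have lin: "linear l" unfolding l_def
      using A_lin by (intro linearI) (simp_all add: inner_add_right inner_add_left linear_add linear_scale)
    have gc: "convex_on UNIV g" unfolding g_def
      using Nfcvx mu_nonneg bk normsq_convex by (intro convex_on_add convex_on_cmul) auto
    have Geq: "I.G xstar z k t = g (xs k t \<omega>) + l (xs k t \<omega>) - c" for t
      unfolding I.G_def g_def l_def c_def X0_def using Axstar
      by (simp add: inner_diff_right norm_minus_commute)
    have xhk: "xh k = (1 / real (T k)) *\<^sub>R (\<Sum>t\<in>{1..T k}. xs k t \<omega>)"
      unfolding xh_def spds_xhat_def using k by simp
    have sumG: "(\<Sum>t\<in>{1..T k}. I.G xstar z k t) = (\<Sum>t\<in>{1..T k}. g (xs k t \<omega>)) + (\<Sum>t\<in>{1..T k}. l (xs k t \<omega>)) - real (T k) * c"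
      unfolding Geq by (simp add: sum.distrib sum_subtractf)
    have jg: "g (xh k) \<le> (1 / real (T k)) * (\<Sum>t\<in>{1..T k}. g (xs k t \<omega>))"
      unfolding xhk by (rule jensen_avg[OF gc Tk])
    have ll: "l (xh k) = (1 / real (T k)) * (\<Sum>t\<in>{1..T k}. l (xs k t \<omega>))"
      unfolding xhk using lin by (simp add: linear_scale linear_sum sum_divide_distrib)
    have wk: "I.w k * (\<Sum>t\<in>{1..T k}. I.G xstar z k t) = \<beta> k * ((1 / real (T k)) * (\<Sum>t\<in>{1..T k}. I.G xstar z k t))"
      unfolding I.w_def by simp
    have avg: "(1 / real (T k)) * (\<Sum>t\<in>{1..T k}. I.G xstar z k t) \<ge> g (xh k) + l (xh k) - c"
      unfolding sumG using jg ll Tk by (simp add: right_diff_distrib distrib_left)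
    define s where "s = xh k - xo (k - 1)"
    have yg: "- inner (dl k) s \<le> (norm (dl k))\<^sup>2 / p k + p k / 4 * (norm s)\<^sup>2"
    proof -
      have "- inner (dl k) s = inner (- dl k) s" by simp
      also have "\<dots> \<le> norm (- dl k) * norm s" by (rule norm_cauchy_schwarz)
      also have "\<dots> = norm (dl k) * norm s" by simp
      also have "\<dots> \<le> (norm (dl k))\<^sup>2 / (2 * (p k / 2)) + (p k / 2) / 2 * (norm s)\<^sup>2"
        by (rule young) (use bk in simp)
      finally show ?thesis by simp
    qed
    have veq: "v k \<omega> = Gr (xl k \<omega>) + dl k" unfolding dl_def yGr by simp
    have key: "inner (Gr (xl k \<omega>)) (xh k - xstar) + p k / 4 * (norm s)\<^sup>2
        + \<mu> * Nf (xh k) - \<mu> * Nf xstar + inner (A (xh k)) z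
      \<le> g (xh k) + l (xh k) - c + ((norm (dl k))\<^sup>2 / p k + inner (dl k) (xstar - xo (k - 1)))"
    proof -
      have e: "g (xh k) + l (xh k) - c = \<mu> * Nf (xh k) + p k / 2 * (norm s)\<^sup>2 + inner (Gr (xl k \<omega>)) (xh k - xstar)
          + inner (dl k) s + inner (dl k) (xo (k - 1) - xstar) + inner (A (xh k)) z - \<mu> * Nf xstar"
        unfolding g_def l_def c_def s_def X0 veq by (simp add: inner_add_left inner_diff_right algebra_simps)
      have e2: "inner (dl k) (xstar - xo (k - 1)) = - inner (dl k) (xo (k - 1) - xstar)"
        by (simp add: inner_diff_right)
      show ?thesis unfolding e e2 using yg by (simp add: field_simps)
    qed
    have "\<beta> k * (inner (Gr (xl k \<omega>)) (xh k - xstar) + p k / 4 * (norm s)\<^sup>2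
        + \<mu> * Nf (xh k) - \<mu> * Nf xstar + inner (A (xh k)) z)
      \<le> \<beta> k * (g (xh k) + l (xh k) - c + ((norm (dl k))\<^sup>2 / p k + inner (dl k) (xstar - xo (k - 1))))"
      using key bk by (intro mult_left_mono) auto
    also have "\<dots> \<le> \<beta> k * ((1 / real (T k)) * (\<Sum>t\<in>{1..T k}. I.G xstar z k t))
        + \<beta> k * ((norm (dl k))\<^sup>2 / p k + inner (dl k) (xstar - xo (k - 1)))"
    proof -
      have "\<beta> k * (g (xh k) + l (xh k) - c) \<le> \<beta> k * ((1 / real (T k)) * (\<Sum>t\<in>{1..T k}. I.G xstar z k t))"
        using avg bk by (intro mult_left_mono) auto
      then show ?thesis by (simp add: distrib_left)
    qed
    finally show ?thesis unfolding s_def wk .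
  qed
  have jN: "Sb * Nf (xbar \<omega>) \<le> (\<Sum>k\<in>{1..N}. \<beta> k * Nf (xh k))"
    unfolding xbar_eq Sb_def by (rule jensen_w[OF Nfcvx N_pos \<beta>_pos])
  have lA: "Sb * inner (A (xbar \<omega>)) z = (\<Sum>k\<in>{1..N}. \<beta> k * inner (A (xh k)) z)"
    unfolding xbar_eq using Sb A_lin by (simp add: linear_scale linear_sum inner_sum_left)
  have fx: "f u = Ff u + \<mu> * Nf u" for u unfolding f_def Ff_def Nf_def by simp
  have "Sb * (f (xbar \<omega>) - f xstar + inner (A (xbar \<omega>)) z)
      = Sb * (Ff (xbar \<omega>) - Ff xstar) + \<mu> * (Sb * Nf (xbar \<omega>)) - Sb * (\<mu> * Nf xstar) + Sb * inner (A (xbar \<omega>)) z"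
    unfolding fx by (simp add: algebra_simps)
  also have "\<dots> \<le> (\<Sum>k\<in>{1..N}. \<beta> k * (inner (Gr (xl k \<omega>)) (xh k - xstar) + p k / 4 * (norm (xh k - xo (k - 1)))\<^sup>2))
      + \<mu> * (\<Sum>k\<in>{1..N}. \<beta> k * Nf (xh k)) - (\<Sum>k\<in>{1..N}. \<beta> k * (\<mu> * Nf xstar))
      + (\<Sum>k\<in>{1..N}. \<beta> k * inner (A (xh k)) z)"
    using OM jN mu_nonneg lA unfolding Sb_def by (simp add: sum_distrib_right mult_left_mono add_mono)
  also have "\<dots> = (\<Sum>k\<in>{1..N}. \<beta> k * (inner (Gr (xl k \<omega>)) (xh k - xstar) + p k / 4 * (norm (xh k - xo (k - 1)))\<^sup>2
        + \<mu> * Nf (xh k) - \<mu> * Nf xstar + inner (A (xh k)) z))"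
    by (simp add: sum.distrib sum_subtractf sum_distrib_left algebra_simps)
  also have "\<dots> \<le> (\<Sum>k\<in>{1..N}. I.w k * (\<Sum>t\<in>{1..T k}. I.G xstar z k t)
        + \<beta> k * ((norm (dl k))\<^sup>2 / p k + inner (dl k) (xstar - xo (k - 1))))"
    by (rule sum_mono) (rule perk)
  also have "\<dots> = (\<Sum>k\<in>{1..N}. I.w k * (\<Sum>t\<in>{1..T k}. I.G xstar z k t))
        + (\<Sum>k\<in>{1..N}. \<beta> k * ((norm (dl k))\<^sup>2 / p k + inner (dl k) (xstar - xo (k - 1))))"
    by (rule sum.distrib)
  finally show ?thesis using IM unfolding Sb_def dl_def xo_def by (simp add: norm_minus_commute)
qed


lemma filt_subalg:
  assumes "\<forall>k. subalgebra M (F k)" "\<forall>k. sets (F k) \<subseteq> sets (F (Suc k))" "j \<le> k"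
  shows "subalgebra (F k) (F j)"
proof -
  have "sets (F j) \<subseteq> sets (F k)"
    by (rule lift_Suc_mono_le[of "\<lambda>k. sets (F k)"]) (use assms in auto)
  moreover have "space (F j) = space (F k)" using assms(1) unfolding subalgebra_def by auto
  ultimately show ?thesis unfolding subalgebra_def by auto
qed

lemma L2v_cong':
  assumes "subalgebra M F" "L2v M F w" "\<And>\<omega>. \<omega> \<in> space M \<Longrightarrow> w \<omega> = w' \<omega>"
  shows "L2v M F w'"
  using L2v_cong[OF assms(1,3,2)] .

lemma L2_all:
  fixes X :: "'n::finite \<Rightarrow> (real^'d::finite) set"
    and \<nu> :: "'n \<Rightarrow> real^'d \<Rightarrow> real"
    and Gr :: "real^'d^'n \<Rightarrow> real^'d^'n"
    and Lt \<mu> :: real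
    and A :: "real^'d^'n \<Rightarrow> real^'d^'m::finite" and At :: "real^'d^'m \<Rightarrow> real^'d^'n"
    and M :: "'a measure" and F :: "nat \<Rightarrow> 'a measure"
    and N :: nat and T :: "nat \<Rightarrow> nat"
    and p lam \<tau> :: "nat \<Rightarrow> real" and q \<eta> \<alpha> :: "nat \<Rightarrow> nat \<Rightarrow> real"
    and x0 xl0 :: "real^'d^'n"
    and xs :: "nat \<Rightarrow> nat \<Rightarrow> 'a \<Rightarrow> real^'d^'n"
    and zs :: "nat \<Rightarrow> nat \<Rightarrow> 'a \<Rightarrow> real^'d^'m"
    and xl v :: "nat \<Rightarrow> 'a \<Rightarrow> real^'d^'n"
  defines "Xset \<equiv> {x :: real^'d^'n. \<forall>i. x $ i \<in> X i}"
  assumes A_bl: "bounded_linear A" and At_bl: "bounded_linear At"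
    and Gr_lip: "\<And>u w. norm (Gr u - Gr w) \<le> Lt * norm (u - w)" and Lt: "Lt \<ge> 0"
    and X_convex: "\<forall>i. convex (X i)"
    and nu_sc: "\<forall>i. strongly_convex_on UNIV 1 (\<nu> i)"
    and mu_nonneg: "\<mu> \<ge> 0"
    and T_pos: "\<forall>k\<in>{1..N}. T k \<ge> 1"
    and p_pos: "\<forall>k\<in>{1..N}. p k > 0"
    and \<eta>_pos: "\<forall>k\<in>{1..N}. \<forall>t\<in>{1..T k}. \<eta> k t > 0"
    and prob: "prob_space M"
    and filt_sub: "\<forall>k. subalgebra M (F k)"
    and filt_mono: "\<forall>k. sets (F k) \<subseteq> sets (F (Suc k))"
    and v_meas: "\<forall>k\<in>{1..N}. v k \<in> borel_measurable (F k)"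
    and v_var_int: "\<forall>k\<in>{1..N}. integrable M (\<lambda>\<omega>. (norm (v k \<omega> - Gr (xl k \<omega>)))\<^sup>2)"
    and xl_0: "\<forall>\<omega>. xl 0 \<omega> = xl0"
    and xl_step: "\<forall>k\<in>{1..N}. \<forall>\<omega>\<in>space M. xl k \<omega> =
        (1 / (1 + \<tau> k)) *\<^sub>R (spds_xtilde x0 T xs lam k \<omega> + \<tau> k *\<^sub>R xl (k - 1) \<omega>)"
    and xs_init: "\<forall>k\<in>{1..N}. \<forall>\<omega>\<in>space M. xs k 0 \<omega> = spds_xout x0 T xs (k - 1) \<omega>"
    and zs_init: "\<forall>k\<in>{1..N}. \<forall>\<omega>\<in>space M.
        zs k 0 \<omega> = (if k = 1 then 0 else zs (k - 1) (T (k - 1)) \<omega>)"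
    and zs_step: "\<forall>k\<in>{1..N}. \<forall>t\<in>{1..T k}. \<forall>\<omega>\<in>space M.
        zs k t \<omega> = zs k (t - 1) \<omega> + (1 / q k t) *\<^sub>R A (xs k (t - 1) \<omega> + \<alpha> k t *\<^sub>R
           (xs k (t - 1) \<omega> - (if t = 1 then spds_xprev x0 T xs k \<omega> else xs k (t - 2) \<omega>)))"
    and xs_step: "\<forall>k\<in>{1..N}. \<forall>t\<in>{1..T k}. \<forall>\<omega>\<in>space M.
        is_arg_min (\<lambda>x. \<mu> * (\<Sum>i\<in>UNIV. \<nu> i (x $ i)) + inner (v k \<omega> + At (zs k t \<omega>)) x
                       + \<eta> k t / 2 * (norm (xs k (t - 1) \<omega> - x))\<^sup>2
                       + p k / 2 * (norm (spds_xout x0 T xs (k - 1) \<omega> - x))\<^sup>2)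
                   (\<lambda>x. x \<in> Xset) (xs k t \<omega>)"
  shows "\<forall>k\<le>N. (\<forall>j\<le>k. L2v M (F k) (spds_xout x0 T xs j) \<and> L2v M (F k) (spds_xhat x0 T xs j)
      \<and> L2v M (F k) (xl j) \<and> L2v M (F k) (spds_xprev x0 T xs (Suc j))
      \<and> L2v M (F k) (\<lambda>\<omega>. if j = 0 then 0 else zs j (T j) \<omega>)
      \<and> (1 \<le> j \<longrightarrow> L2v M (F k) (v j)))
      \<and> (Suc k \<le> N \<longrightarrow> L2v M (F k) (xl (Suc k)))"
proof -
  define Nf where "Nf = (\<lambda>x::real^'d^'n. \<Sum>i\<in>UNIV. \<nu> i (x $ i))"
  have nsc: "\<And>x y \<theta>. 0 \<le> \<theta> \<Longrightarrow> \<theta> \<le> 1 \<Longrightarrow>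
      Nf (\<theta> *\<^sub>R x + (1 - \<theta>) *\<^sub>R y) \<le> \<theta> * Nf x + (1 - \<theta>) * Nf y - 1 / 2 * \<theta> * (1 - \<theta>) * (norm (x - y))\<^sup>2"
    unfolding Nf_def using Nf_sc[OF nu_sc] by blast
  have Sconv: "convex Xset"
    unfolding Xset_def convex_def using X_convex by (auto simp: convex_def)
  have sub: "subalgebra M (F k)" for k using filt_sub by auto
  have subF: "j \<le> k \<Longrightarrow> subalgebra (F k) (F j)" for j k by (rule filt_subalg[OF filt_sub filt_mono])
  have spF: "space (F k) = space M" for k using sub[of k] unfolding subalgebra_def by simp
  have cA: "continuous_on UNIV A" by (rule linear_continuous_on[OF A_bl])
  have cAt: "continuous_on UNIV At" by (rule linear_continuous_on[OF At_bl])
  have cGr: "continuous_on UNIV Gr"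
    by (rule lipschitz_on_continuous_on[of Lt]) (use Gr_lip Lt in \<open>auto intro!: lipschitz_onI simp: dist_norm\<close>)
  have gGr: "norm (Gr u) \<le> norm (Gr 0) + Lt * norm u" for u
    using Gr_lip[of u 0] norm_triangle_ineq2[of "Gr u" "Gr 0"] by simp
  have L2A: "L2v M G w \<Longrightarrow> subalgebra M G \<Longrightarrow> L2v M G (\<lambda>\<omega>. A (w \<omega>))" for G w
    by (rule L2v_comp[OF _ _ cA, of _ _ _ 0 "onorm A"]) (use A_bl prob in \<open>auto intro: onorm onorm_pos_le\<close>)
  have L2At: "L2v M G w \<Longrightarrow> subalgebra M G \<Longrightarrow> L2v M G (\<lambda>\<omega>. At (w \<omega>))" for G w
    by (rule L2v_comp[OF _ _ cAt, of _ _ _ 0 "onorm At"]) (use At_bl prob in \<open>auto intro: onorm onorm_pos_le\<close>)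
  have L2Gr: "L2v M G w \<Longrightarrow> subalgebra M G \<Longrightarrow> L2v M G (\<lambda>\<omega>. Gr (w \<omega>))" for G w
    by (rule L2v_comp[OF _ _ cGr gGr Lt prob])
  note L2add = L2v_add[OF sub]
  note L2diff = L2v_diff[OF sub _ _ prob]
  note L2sc = L2v_scale[OF sub _ prob]
  note L2cong = L2v_cong'[OF sub]
  define zo where "zo = (\<lambda>j \<omega>. if j = 0 then 0 else zs j (T j) \<omega>)"
  define Sk where "Sk = (\<lambda>k. (\<forall>j\<le>k. L2v M (F k) (spds_xout x0 T xs j) \<and> L2v M (F k) (spds_xhat x0 T xs j)
      \<and> L2v M (F k) (xl j) \<and> L2v M (F k) (spds_xprev x0 T xs (Suc j))
      \<and> L2v M (F k) (zo j) \<and> (1 \<le> j \<longrightarrow> L2v M (F k) (v j)))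
      \<and> (Suc k \<le> N \<longrightarrow> L2v M (F k) (xl (Suc k))))"
  have am: "is_arg_min (proxobj Nf \<mu> (v k \<omega> + At (zs k t \<omega>)) (\<eta> k t) (xs k (t - 1) \<omega>) (p k) (spds_xout x0 T xs (k - 1) \<omega>))
      (\<lambda>x. x \<in> Xset) (xs k t \<omega>)" if "k \<in> {1..N}" "t \<in> {1..T k}" "\<omega> \<in> space M" for k t \<omega>
  proof -
    have "proxobj Nf \<mu> (v k \<omega> + At (zs k t \<omega>)) (\<eta> k t) (xs k (t - 1) \<omega>) (p k) (spds_xout x0 T xs (k - 1) \<omega>)
       = (\<lambda>x. \<mu> * (\<Sum>i\<in>UNIV. \<nu> i (x $ i)) + inner (v k \<omega> + At (zs k t \<omega>)) x
                     + \<eta> k t / 2 * (norm (xs k (t - 1) \<omega> - x))\<^sup>2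
                     + p k / 2 * (norm (spds_xout x0 T xs (k - 1) \<omega> - x))\<^sup>2)"
      unfolding proxobj_def Nf_def by auto
    then show ?thesis using xs_step that by simp
  qed
  have ind: "k \<le> N \<Longrightarrow> Sk k" for k
  proof (induction k)
    case 0
    have c0: "spds_xout x0 T xs 0 = (\<lambda>_. x0)" "spds_xhat x0 T xs 0 = (\<lambda>_. x0)" "xl 0 = (\<lambda>_. xl0)"
      "spds_xprev x0 T xs (Suc 0) = (\<lambda>_. x0)" "zo 0 = (\<lambda>_. 0)"
      by (auto simp: spds_xout_def spds_xhat_def spds_xprev_def zo_def xl_0)
    have x1: "Suc 0 \<le> N \<Longrightarrow> L2v M (F 0) (xl (Suc 0))"
    proof -
      assume N1: "Suc 0 \<le> N"
      have "xl 1 \<omega> = (1 / (1 + \<tau> 1)) *\<^sub>R (x0 + \<tau> 1 *\<^sub>R xl0)" if "\<omega> \<in> space M" for \<omega>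
        using xl_step N1 that xl_0 by (auto simp: spds_xtilde_def spds_xout_def spds_xhat_def)
      then show ?thesis
        using L2cong[of 0 "\<lambda>_. (1 / (1 + \<tau> 1)) *\<^sub>R (x0 + \<tau> 1 *\<^sub>R xl0)" "xl 1", OF L2v_const[OF prob sub]] by auto
    qed
    have k1: "L2v M (F 0) (\<lambda>_. 0 :: real^'d^'m)" "L2v M (F 0) (\<lambda>_. x0)" "L2v M (F 0) (\<lambda>_. xl0)"
      by (rule L2v_const[OF prob sub])+
    show ?case unfolding Sk_def using x1 c0 k1 by auto
  next
    case (Suc k)
    define K where "K = Suc k"
    have KN: "K \<in> {1..N}" "k \<le> N" using Suc.prems unfolding K_def by auto
    have IH: "Sk k" using Suc.IH KN by simp
    have sKk: "subalgebra (F K) (F k)" using subF[of k K] unfolding K_def by simp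
    note lift = L2v_mono[OF sKk]
    have old: "\<forall>j\<le>k. L2v M (F K) (spds_xout x0 T xs j) \<and> L2v M (F K) (spds_xhat x0 T xs j)
      \<and> L2v M (F K) (xl j) \<and> L2v M (F K) (spds_xprev x0 T xs (Suc j))
      \<and> L2v M (F K) (zo j) \<and> (1 \<le> j \<longrightarrow> L2v M (F K) (v j))"
    proof (intro allI impI)
      fix j assume j: "j \<le> k"
      have IH1: "\<forall>j\<le>k. L2v M (F k) (spds_xout x0 T xs j) \<and> L2v M (F k) (spds_xhat x0 T xs j)
        \<and> L2v M (F k) (xl j) \<and> L2v M (F k) (spds_xprev x0 T xs (Suc j))
        \<and> L2v M (F k) (zo j) \<and> (1 \<le> j \<longrightarrow> L2v M (F k) (v j))"
        using IH unfolding Sk_def by (rule conjunct1)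
      then have h: "L2v M (F k) (spds_xout x0 T xs j) \<and> L2v M (F k) (spds_xhat x0 T xs j)
        \<and> L2v M (F k) (xl j) \<and> L2v M (F k) (spds_xprev x0 T xs (Suc j))
        \<and> L2v M (F k) (zo j) \<and> (1 \<le> j \<longrightarrow> L2v M (F k) (v j))"
        using j by blast
      show "L2v M (F K) (spds_xout x0 T xs j) \<and> L2v M (F K) (spds_xhat x0 T xs j)
        \<and> L2v M (F K) (xl j) \<and> L2v M (F K) (spds_xprev x0 T xs (Suc j))
        \<and> L2v M (F K) (zo j) \<and> (1 \<le> j \<longrightarrow> L2v M (F K) (v j))"
        using h by (simp add: lift)
    qed
    have xlK: "L2v M (F K) (xl K)"
    proof -
      have "Suc k \<le> N \<longrightarrow> L2v M (F k) (xl (Suc k))" using IH unfolding Sk_def by (rule conjunct2)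
      then have "L2v M (F k) (xl K)" using KN unfolding K_def by simp
      then show ?thesis by (rule lift)
    qed
    have yK: "L2v M (F K) (\<lambda>\<omega>. Gr (xl K \<omega>))" by (rule L2Gr[OF xlK sub])
    have vKm: "v K \<in> borel_measurable (F K)" using v_meas KN by auto
    have dK: "L2v M (F K) (\<lambda>\<omega>. v K \<omega> - Gr (xl K \<omega>))"
      unfolding L2v_def using v_var_int KN vKm yK unfolding L2v_def
      by (auto intro: borel_measurable_diff)
    have vK: "L2v M (F K) (v K)"
      using L2add[OF yK dK] by simp
    have TK: "T K \<ge> 1" using T_pos KN by auto
    have pK: "p K > 0" using p_pos KN by auto
    have Km1: "K - 1 = k" unfolding K_def by simp
    have xoK1: "L2v M (F K) (spds_xout x0 T xs k)" using old by auto
    have inner: "t \<le> T K \<Longrightarrow> \<forall>s\<le>t. L2v M (F K) (xs K s) \<and> L2v M (F K) (zs K s)" for t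
    proof (induction t)
      case 0
      have "L2v M (F K) (xs K 0)"
        by (rule L2cong[OF xoK1]) (use xs_init KN Km1 in auto)
      moreover have "L2v M (F K) (zs K 0)"
      proof (rule L2cong)
        show "L2v M (F K) (zo k)" using old by auto
      qed (use zs_init KN Km1 in \<open>auto simp: zo_def K_def\<close>)
      ultimately show ?case by simp
    next
      case (Suc t)
      have IHt: "\<forall>s\<le>t. L2v M (F K) (xs K s) \<and> L2v M (F K) (zs K s)" using Suc by simp
      have tK: "Suc t \<in> {1..T K}" using Suc.prems by auto
      have ep: "\<eta> K (Suc t) > 0" using \<eta>_pos KN tK by auto
      define prev where "prev = (if Suc t = 1 then spds_xprev x0 T xs K else xs K (t - 1))"
      have Lprev: "L2v M (F K) prev"
      proof (cases "t = 0")
        case True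
        have "L2v M (F K) (spds_xprev x0 T xs (Suc k))" using old by auto
        then show ?thesis unfolding prev_def using True K_def by simp
      next
        case False then show ?thesis unfolding prev_def using IHt by auto
      qed
      have Lxt: "L2v M (F K) (xs K t)" "L2v M (F K) (zs K t)" using IHt by auto
      have Lz: "L2v M (F K) (zs K (Suc t))"
      proof (rule L2cong)
        show "L2v M (F K) (\<lambda>\<omega>. zs K t \<omega> + (1 / q K (Suc t)) *\<^sub>R A (xs K t \<omega> + \<alpha> K (Suc t) *\<^sub>R (xs K t \<omega> - prev \<omega>)))"
          by (intro L2add L2sc L2A[OF _ sub] L2diff Lxt Lprev)
      next
        fix \<omega> assume "\<omega> \<in> space M"
        then show "zs K t \<omega> + (1 / q K (Suc t)) *\<^sub>R A (xs K t \<omega> + \<alpha> K (Suc t) *\<^sub>R (xs K t \<omega> - prev \<omega>)) = zs K (Suc t) \<omega>"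
          using zs_step KN tK unfolding prev_def by (auto simp: numeral_2_eq_2)
      qed
      define e where "e = (\<lambda>\<omega>. (v K \<omega> + At (zs K (Suc t) \<omega>)) - \<eta> K (Suc t) *\<^sub>R xs K t \<omega> - p K *\<^sub>R spds_xout x0 T xs k \<omega>)"
      have Le: "L2v M (F K) e" unfolding e_def
        by (intro L2add L2sc L2At[OF _ sub] L2diff Lxt vK Lz xoK1)
      have Lx: "L2v M (F K) (xs K (Suc t))"
      proof (rule L2v_lip[OF sub prob Le, of "\<mu> + \<eta> K (Suc t) + p K"])
        show "0 < \<mu> + \<eta> K (Suc t) + p K" using mu_nonneg ep pK by simp
      next
        fix \<omega> \<omega>' assume w: "\<omega> \<in> space M" "\<omega>' \<in> space M"
        show "(\<mu> + \<eta> K (Suc t) + p K) * norm (xs K (Suc t) \<omega> - xs K (Suc t) \<omega>') \<le> norm (e \<omega> - e \<omega>')"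
          unfolding e_def
          using proxobj_lip[OF nsc mu_nonneg less_imp_le[OF ep] less_imp_le[OF pK] Sconv
              am[OF KN(1) tK w(1)] am[OF KN(1) tK w(2)]] Km1 by simp
      qed
      show ?case using IHt Lx Lz by (auto simp: le_Suc_eq)
    qed
    have allT: "\<forall>s\<le>T K. L2v M (F K) (xs K s) \<and> L2v M (F K) (zs K s)" using inner by simp
    have n1: "L2v M (F K) (spds_xout x0 T xs K)"
      by (rule L2cong[of _ "xs K (T K)"]) (use allT in \<open>auto simp: spds_xout_def K_def\<close>)
    have n2: "L2v M (F K) (spds_xhat x0 T xs K)"
    proof (rule L2cong)
      show "L2v M (F K) (\<lambda>\<omega>. (1 / real (T K)) *\<^sub>R (\<Sum>t\<in>{1..T K}. xs K t \<omega>))"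
        by (intro L2sc L2v_sum[OF sub prob]) (use allT in auto)
    qed (simp add: spds_xhat_def K_def)
    have n3: "L2v M (F K) (spds_xprev x0 T xs (Suc K))"
      by (rule L2cong[of _ "xs K (T K - 1)"]) (use allT in \<open>auto simp: spds_xprev_def K_def\<close>)
    have n4: "L2v M (F K) (zo K)"
      by (rule L2cong[of _ "zs K (T K)"]) (use allT in \<open>auto simp: zo_def K_def\<close>)
    have n5: "Suc K \<le> N \<Longrightarrow> L2v M (F K) (xl (Suc K))"
    proof -
      assume SK: "Suc K \<le> N"
      show ?thesis
      proof (rule L2cong)
        show "L2v M (F K) (\<lambda>\<omega>. (1 / (1 + \<tau> (Suc K))) *\<^sub>R ((spds_xout x0 T xs K \<omega>
             + lam (Suc K) *\<^sub>R (spds_xhat x0 T xs K \<omega> - spds_xout x0 T xs k \<omega>)) + \<tau> (Suc K) *\<^sub>R xl K \<omega>))"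
          by (intro L2sc L2add L2diff n1 n2 xoK1 xlK)
      next
        fix \<omega> assume "\<omega> \<in> space M"
        then show "(1 / (1 + \<tau> (Suc K))) *\<^sub>R ((spds_xout x0 T xs K \<omega>
             + lam (Suc K) *\<^sub>R (spds_xhat x0 T xs K \<omega> - spds_xout x0 T xs k \<omega>)) + \<tau> (Suc K) *\<^sub>R xl K \<omega>) = xl (Suc K) \<omega>"
          using xl_step SK by (auto simp: spds_xtilde_def K_def)
      qed
    qed
    show ?case unfolding Sk_def K_def[symmetric]
      using old n1 n2 n3 n4 n5 xlK vK by (auto simp: le_Suc_eq K_def)
  qed
  show ?thesis using ind unfolding Sk_def zo_def by blast
qed


lemma meas_comp2:
  fixes w :: "'a \<Rightarrow> real^'d::finite^'n::finite"
  assumes "w \<in> borel_measurable G"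
  shows "(\<lambda>\<omega>. w \<omega> $ i $ j) \<in> borel_measurable G"
proof -
  have c: "continuous_on UNIV (\<lambda>x::real^'d^'n. x $ i $ j)"
    by (intro linear_continuous_on bounded_linear_compose[OF bounded_linear_vec_nth bounded_linear_vec_nth])
  show ?thesis using measurable_compose[OF assms borel_measurable_continuous_onI[OF c]] by simp
qed

lemma comp_le: "\<bar>(x :: real^'d::finite^'n::finite) $ i $ j\<bar> \<le> norm x"
proof -
  have "norm (x $ i) \<le> norm x" by (rule Finite_Cartesian_Product.norm_nth_le)
  then show ?thesis using component_le_norm_cart[of "x $ i" j] by linarith
qed

lemma prod_int:
  fixes f g :: "'a \<Rightarrow> real" and U V :: "'a \<Rightarrow> 'b::real_normed_vector"
  assumes "f \<in> borel_measurable M" "g \<in> borel_measurable M"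
    "integrable M (\<lambda>\<omega>. (norm (U \<omega>))\<^sup>2)" "integrable M (\<lambda>\<omega>. (norm (V \<omega>))\<^sup>2)"
    "\<And>\<omega>. \<bar>f \<omega>\<bar> \<le> norm (U \<omega>)" "\<And>\<omega>. \<bar>g \<omega>\<bar> \<le> norm (V \<omega>)"
  shows "integrable M (\<lambda>\<omega>. f \<omega> * g \<omega>)"
proof (rule Bochner_Integration.integrable_bound)
  show "integrable M (\<lambda>\<omega>. (norm (U \<omega>))\<^sup>2 + (norm (V \<omega>))\<^sup>2)" using assms(3,4) by auto
  show "(\<lambda>\<omega>. f \<omega> * g \<omega>) \<in> borel_measurable M" using assms(1,2) by measurable
  show "AE x in M. norm (f x * g x) \<le> norm ((norm (U x))\<^sup>2 + (norm (V x))\<^sup>2)"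
  proof (rule AE_I2)
    fix x
    have "\<bar>f x * g x\<bar> \<le> norm (U x) * norm (V x)"
      unfolding abs_mult by (intro mult_mono assms(5,6)) auto
    also have "\<dots> \<le> (norm (U x))\<^sup>2 + (norm (V x))\<^sup>2"
      using sum_squares_bound[of "norm (U x)" "norm (V x)"] mult_nonneg_nonneg[OF norm_ge_zero norm_ge_zero, of "U x" "V x"]
      by (simp only: power2_eq_square)
    finally show "norm (f x * g x) \<le> norm ((norm (U x))\<^sup>2 + (norm (V x))\<^sup>2)" by simp
  qed
qed

lemma inner_expand: "inner (a :: real^'d::finite^'n::finite) b = (\<Sum>i\<in>UNIV. \<Sum>j\<in>UNIV. a $ i $ j * b $ i $ j)"
  by (simp add: inner_vec_def)

lemma (in sigma_finite_subalgebra) E_zero: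
  fixes w v y :: "'a \<Rightarrow> real^'d::finite^'n::finite"
  assumes w: "w \<in> borel_measurable F" "integrable M (\<lambda>\<omega>. (norm (w \<omega>))\<^sup>2)"
    and v: "v \<in> borel_measurable M" "integrable M (\<lambda>\<omega>. (norm (v \<omega>))\<^sup>2)"
    and y: "y \<in> borel_measurable M" "integrable M (\<lambda>\<omega>. (norm (y \<omega>))\<^sup>2)"
    and ce: "\<forall>i j. AE \<omega> in M. real_cond_exp M F (\<lambda>\<omega>. v \<omega> $ i $ j) \<omega> = y \<omega> $ i $ j"
  shows "integrable M (\<lambda>\<omega>. inner (v \<omega> - y \<omega>) (w \<omega>)) \<and> (\<integral>\<omega>. inner (v \<omega> - y \<omega>) (w \<omega>) \<partial>M) = 0"
proof -
  have wM: "w \<in> borel_measurable M" using w(1) measurable_from_subalg[OF subalg] by blast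
  have each: "integrable M (\<lambda>\<omega>. (v \<omega> $ i $ j - y \<omega> $ i $ j) * w \<omega> $ i $ j)
      \<and> (\<integral>\<omega>. (v \<omega> $ i $ j - y \<omega> $ i $ j) * w \<omega> $ i $ j \<partial>M) = 0" for i j
  proof -
    define f where "f = (\<lambda>\<omega>. w \<omega> $ i $ j)"
    define g where "g = (\<lambda>\<omega>. v \<omega> $ i $ j)"
    define h where "h = (\<lambda>\<omega>. y \<omega> $ i $ j)"
    have fF: "f \<in> borel_measurable F" unfolding f_def by (rule meas_comp2[OF w(1)])
    have fM: "f \<in> borel_measurable M" unfolding f_def by (rule meas_comp2[OF wM])
    have gM: "g \<in> borel_measurable M" unfolding g_def by (rule meas_comp2[OF v(1)])
    have hM: "h \<in> borel_measurable M" unfolding h_def by (rule meas_comp2[OF y(1)])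
    have ifg: "integrable M (\<lambda>\<omega>. f \<omega> * g \<omega>)"
      by (rule prod_int[OF fM gM w(2) v(2)]) (auto simp: f_def g_def comp_le)
    have ifh: "integrable M (\<lambda>\<omega>. f \<omega> * h \<omega>)"
      by (rule prod_int[OF fM hM w(2) y(2)]) (auto simp: f_def h_def comp_le)
    have c1: "(\<integral>\<omega>. f \<omega> * real_cond_exp M F g \<omega> \<partial>M) = (\<integral>\<omega>. f \<omega> * g \<omega> \<partial>M)"
      by (rule real_cond_exp_intg(2)[OF ifg fF gM])
    have c2: "(\<integral>\<omega>. f \<omega> * real_cond_exp M F g \<omega> \<partial>M) = (\<integral>\<omega>. f \<omega> * h \<omega> \<partial>M)"
    proof (rule integral_cong_AE)
      show "(\<lambda>\<omega>. f \<omega> * real_cond_exp M F g \<omega>) \<in> borel_measurable M" using fM by measurable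
      show "(\<lambda>\<omega>. f \<omega> * h \<omega>) \<in> borel_measurable M" using fM hM by measurable
      show "AE x in M. f x * real_cond_exp M F g x = f x * h x"
        using ce[rule_format, of i j] unfolding g_def h_def by eventually_elim simp
    qed
    have e: "(\<lambda>\<omega>. (g \<omega> - h \<omega>) * f \<omega>) = (\<lambda>\<omega>. f \<omega> * g \<omega> - f \<omega> * h \<omega>)"
      by (auto simp: algebra_simps)
    have "integrable M (\<lambda>\<omega>. (g \<omega> - h \<omega>) * f \<omega>)"
      unfolding e using ifg ifh by (rule Bochner_Integration.integrable_diff)
    moreover have "(\<integral>\<omega>. (g \<omega> - h \<omega>) * f \<omega> \<partial>M) = 0"
    proof -
      have "(\<integral>\<omega>. (g \<omega> - h \<omega>) * f \<omega> \<partial>M) = (\<integral>\<omega>. f \<omega> * g \<omega> - f \<omega> * h \<omega> \<partial>M)"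
        by (simp add: algebra_simps)
      also have "\<dots> = (\<integral>\<omega>. f \<omega> * g \<omega> \<partial>M) - (\<integral>\<omega>. f \<omega> * h \<omega> \<partial>M)"
        by (rule Bochner_Integration.integral_diff[OF ifg ifh])
      finally show ?thesis using c1 c2 by simp
    qed
    ultimately show ?thesis unfolding f_def g_def h_def by simp
  qed
  have eq: "(\<lambda>\<omega>. inner (v \<omega> - y \<omega>) (w \<omega>)) = (\<lambda>\<omega>. \<Sum>i\<in>UNIV. \<Sum>j\<in>UNIV. (v \<omega> $ i $ j - y \<omega> $ i $ j) * w \<omega> $ i $ j)"
    by (simp add: inner_expand)
  have i1: "integrable M (\<lambda>\<omega>. \<Sum>i\<in>UNIV. \<Sum>j\<in>UNIV. (v \<omega> $ i $ j - y \<omega> $ i $ j) * w \<omega> $ i $ j)"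
    using each by auto
  have "(\<integral>\<omega>. (\<Sum>i\<in>UNIV. \<Sum>j\<in>UNIV. (v \<omega> $ i $ j - y \<omega> $ i $ j) * w \<omega> $ i $ j) \<partial>M)
      = (\<Sum>i\<in>UNIV. \<Sum>j\<in>UNIV. (\<integral>\<omega>. (v \<omega> $ i $ j - y \<omega> $ i $ j) * w \<omega> $ i $ j \<partial>M))"
    using each by (simp add: integral_sum)
  also have "\<dots> = 0" using each by simp
  finally show ?thesis unfolding eq using i1 by simp
qed

lemma (in sigma_finite_subalgebra) E_var:
  assumes "integrable M h" "AE \<omega> in M. real_cond_exp M F h \<omega> \<le> c" "prob_space M"
  shows "(\<integral>\<omega>. h \<omega> \<partial>M) \<le> c"
proof -
  interpret P: prob_space M by (rule assms(3))
  have "(\<integral>\<omega>. h \<omega> \<partial>M) = (\<integral>\<omega>. real_cond_exp M F h \<omega> \<partial>M)" using real_cond_exp_int(2)[OF assms(1)] by simp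
  also have "\<dots> \<le> (\<integral>\<omega>. c \<partial>M)"
    by (rule integral_mono_AE[OF real_cond_exp_int(1)[OF assms(1)] _ assms(2)]) simp
  also have "\<dots> = c" by (simp add: P.prob_space)
  finally show ?thesis .
qed


theorem proposition3p1:
  fixes E :: "('n::finite \<times> 'n) set"
    and K :: "'m::finite \<Rightarrow> 'n \<Rightarrow> real"
    and X :: "'n \<Rightarrow> (real^'d::finite) set"
    and ft \<nu> :: "'n \<Rightarrow> real^'d \<Rightarrow> real"
    and gradf :: "'n \<Rightarrow> real^'d \<Rightarrow> real^'d"
    and Lt \<mu> \<sigma> :: real
    and xstar :: "real^'d^'n" and zstar :: "real^'d^'m"
    and M :: "'a measure" and F :: "nat \<Rightarrow> 'a measure"
    and N :: nat and T c :: "nat \<Rightarrow> nat"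
    and \<beta> p lam \<tau> :: "nat \<Rightarrow> real" and q \<eta> \<alpha> :: "nat \<Rightarrow> nat \<Rightarrow> real"
    and x0 xl0 :: "real^'d^'n"
    and xs :: "nat \<Rightarrow> nat \<Rightarrow> 'a \<Rightarrow> real^'d^'n"
    and zs :: "nat \<Rightarrow> nat \<Rightarrow> 'a \<Rightarrow> real^'d^'m"
    and xl v :: "nat \<Rightarrow> 'a \<Rightarrow> real^'d^'n"
  defines "Xset \<equiv> {x :: real^'d^'n. \<forall>i. x $ i \<in> X i}"
    and "f \<equiv> (\<lambda>x :: real^'d^'n. (\<Sum>i\<in>UNIV. ft i (x $ i)) + \<mu> * (\<Sum>i\<in>UNIV. \<nu> i (x $ i)))"
    and "A \<equiv> kron_op K :: real^'d^'n \<Rightarrow> real^'d^'m"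
    and "At \<equiv> kron_op (transp_mat K) :: real^'d^'m \<Rightarrow> real^'d^'n"
    and "y \<equiv> (\<lambda>k \<omega>. \<chi> i. gradf i (xl k \<omega> $ i))"
    and "xbar \<equiv> (\<lambda>\<omega>. (1 / (\<Sum>k\<in>{1..N}. \<beta> k)) *\<^sub>R
                     (\<Sum>k\<in>{1..N}. \<beta> k *\<^sub>R spds_xhat x0 T xs k \<omega>))"
  (* problem data *)
  assumes graph: "connected_graph E"
    and A_choice: "is_laplacian_matrix E K \<or> is_incidence_transpose E K"
    and X_closed: "\<forall>i. closed (X i)" and X_convex: "\<forall>i. convex (X i)"
    and ft_convex: "\<forall>i. convex_on UNIV (ft i)"
    and ft_grad: "\<forall>i u. (ft i has_derivative (\<lambda>h. inner (gradf i u) h)) (at u)"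
    and ft_lip: "\<forall>i u w. norm (gradf i u - gradf i w) \<le> Lt * norm (u - w)"
    and nu_sc: "\<forall>i. strongly_convex_on UNIV 1 (\<nu> i)"
    and mu_nonneg: "\<mu> \<ge> 0"
    and saddle: "is_saddle_point Xset f A xstar zstar"
  (* parameters *)
    and N_pos: "N \<ge> 1"
    and T_pos: "\<forall>k\<in>{1..N}. T k \<ge> 1" and c_pos: "\<forall>k\<in>{1..N}. c k \<ge> 1"
    and \<beta>_pos: "\<forall>k\<in>{1..N}. \<beta> k > 0" and p_pos: "\<forall>k\<in>{1..N}. p k > 0"
    and q_pos: "\<forall>k\<in>{1..N}. \<forall>t\<in>{1..T k}. q k t > 0"
    and \<eta>_pos: "\<forall>k\<in>{1..N}. \<forall>t\<in>{1..T k}. \<eta> k t > 0"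
    and lam_nonneg: "\<forall>k\<in>{1..N}. lam k \<ge> 0" and \<tau>_nonneg: "\<forall>k\<in>{1..N}. \<tau> k \<ge> 0"
    and \<alpha>_nonneg: "\<forall>k\<in>{1..N}. \<forall>t\<in>{1..T k}. \<alpha> k t \<ge> 0"
  (* condition (i) *)
    and cond_i: "\<forall>k\<in>{2..N}.
        \<beta> k * \<tau> k \<le> \<beta> (k - 1) * (\<tau> (k - 1) + 1)
      \<and> \<beta> (k - 1) = \<beta> k * lam k
      \<and> 2 * Lt * lam k \<le> p (k - 1) * \<tau> k
      \<and> \<beta> k * real (T (k - 1)) * \<alpha> k 1 = \<beta> (k - 1) * real (T k)
      \<and> \<alpha> k 1 * (onorm A)\<^sup>2 \<le> \<eta> (k - 1) (T (k - 1)) * q k 1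
      \<and> \<beta> k * real (T (k - 1)) * q k 1 \<le> \<beta> (k - 1) * real (T k) * q (k - 1) (T (k - 1))
      \<and> \<beta> k * real (T (k - 1)) * (\<eta> k 1 + p k * real (T k))
          \<le> \<beta> (k - 1) * real (T k) * (\<mu> + \<eta> (k - 1) (T (k - 1)) + p (k - 1))"
  (* condition (ii) *)
    and cond_ii: "\<forall>k\<in>{1..N}. \<forall>t\<in>{2..T k}.
        \<alpha> k t = 1 \<and> (onorm A)\<^sup>2 \<le> \<eta> k (t - 1) * q k t \<and> q k t \<le> q k (t - 1)
      \<and> \<eta> k t \<le> \<mu> + \<eta> k (t - 1) + p k"
  (* condition (iii) *)
    and cond_iii: "\<tau> 1 = 0" "p N * (\<tau> N + 1) \<ge> 2 * Lt"
      "\<eta> N (T N) * q N (T N) \<ge> (onorm A)\<^sup>2"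
  (* stochastic oracle *)
    and prob: "prob_space M"
    and filt_sub: "\<forall>k. subalgebra M (F k)"
    and filt_sf: "\<forall>k. sigma_finite_subalgebra M (F k)"
    and filt_mono: "\<forall>k. sets (F k) \<subseteq> sets (F (Suc k))"
    and v_meas: "\<forall>k\<in>{1..N}. v k \<in> borel_measurable (F k)"
    and v_int: "\<forall>k\<in>{1..N}. integrable M (v k)"
    and v_var_int: "\<forall>k\<in>{1..N}. integrable M (\<lambda>\<omega>. (norm (v k \<omega> - y k \<omega>))\<^sup>2)"
    and v_unbiased: "\<forall>k\<in>{1..N}. \<forall>i j. AE \<omega> in M.
        real_cond_exp M (F (k - 1)) (\<lambda>\<omega>. v k \<omega> $ i $ j) \<omega> = y k \<omega> $ i $ j"
    and v_var: "\<forall>k\<in>{1..N}. AE \<omega> in M.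
        real_cond_exp M (F (k - 1)) (\<lambda>\<omega>. (norm (v k \<omega> - y k \<omega>))\<^sup>2) \<omega> \<le> \<sigma>\<^sup>2 / real (c k)"
  (* the SPDS recursion *)
    and x0_in: "x0 \<in> Xset" and xl0_in: "xl0 \<in> Xset"
    and xl_0: "\<forall>\<omega>. xl 0 \<omega> = xl0"
    and xl_step: "\<forall>k\<in>{1..N}. \<forall>\<omega>\<in>space M. xl k \<omega> =
        (1 / (1 + \<tau> k)) *\<^sub>R (spds_xtilde x0 T xs lam k \<omega> + \<tau> k *\<^sub>R xl (k - 1) \<omega>)"
    and xs_init: "\<forall>k\<in>{1..N}. \<forall>\<omega>\<in>space M. xs k 0 \<omega> = spds_xout x0 T xs (k - 1) \<omega>"
    and zs_init: "\<forall>k\<in>{1..N}. \<forall>\<omega>\<in>space M.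
        zs k 0 \<omega> = (if k = 1 then 0 else zs (k - 1) (T (k - 1)) \<omega>)"
    and zs_step: "\<forall>k\<in>{1..N}. \<forall>t\<in>{1..T k}. \<forall>\<omega>\<in>space M.
        zs k t \<omega> = zs k (t - 1) \<omega> + (1 / q k t) *\<^sub>R A (xs k (t - 1) \<omega> + \<alpha> k t *\<^sub>R
           (xs k (t - 1) \<omega> - (if t = 1 then spds_xprev x0 T xs k \<omega> else xs k (t - 2) \<omega>)))"
    and xs_step: "\<forall>k\<in>{1..N}. \<forall>t\<in>{1..T k}. \<forall>\<omega>\<in>space M.
        is_arg_min (\<lambda>x. \<mu> * (\<Sum>i\<in>UNIV. \<nu> i (x $ i)) + inner (v k \<omega> + At (zs k t \<omega>)) x
                       + \<eta> k t / 2 * (norm (xs k (t - 1) \<omega> - x))\<^sup>2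
                       + p k / 2 * (norm (spds_xout x0 T xs (k - 1) \<omega> - x))\<^sup>2)
                   (\<lambda>x. x \<in> Xset) (xs k t \<omega>)"
  shows "integrable M (\<lambda>\<omega>. f (xbar \<omega>) - f xstar)
     \<and> (\<integral>\<omega>. f (xbar \<omega>) - f xstar \<partial>M)
         \<le> (1 / (\<Sum>k\<in>{1..N}. \<beta> k)) *
            (\<beta> 1 / 2 * (\<eta> 1 1 / real (T 1) + p 1) * (norm (x0 - xstar))\<^sup>2
             + (\<Sum>k\<in>{1..N}. \<beta> k * \<sigma>\<^sup>2 / (p k * real (c k))))
     \<and> integrable M (\<lambda>\<omega>. norm (A (xbar \<omega>)))
     \<and> (\<integral>\<omega>. norm (A (xbar \<omega>)) \<partial>M)
         \<le> (1 / (\<Sum>k\<in>{1..N}. \<beta> k)) *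
            (\<beta> 1 * q 1 1 / (2 * real (T 1)) * (norm zstar + 1)\<^sup>2
             + \<beta> 1 / 2 * (\<eta> 1 1 / real (T 1) + p 1) * (norm (x0 - xstar))\<^sup>2
             + (\<Sum>k\<in>{1..N}. \<beta> k * \<sigma>\<^sup>2 / (p k * real (c k))))"
proof -
  have Abl: "bounded_linear A" unfolding A_def by (rule kron_bounded)
  have Atbl: "bounded_linear At" unfolding At_def by (rule kron_bounded)
  have A_lin: "linear A" using Abl bounded_linear.linear by blast
  have A_bnd: "\<And>u. norm (A u) \<le> onorm A * norm u" using onorm[OF Abl] .
  have A_adj: "\<And>u z. inner (A u) z = inner u (At z)" unfolding A_def At_def by (rule kron_adj)
  have sad: "xstar \<in> Xset" "\<forall>z. f xstar + inner (A xstar) z \<le> f xstar + inner (A xstar) zstar"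
      "\<forall>x\<in>Xset. f xstar + inner (A xstar) zstar \<le> f x + inner (A x) zstar"
    using saddle unfolding is_saddle_point_def by auto
  have Axstar: "A xstar = 0"
  proof -
    have "inner (A xstar) (zstar + A xstar) \<le> inner (A xstar) zstar" using sad(2) by auto
    then have "(norm (A xstar))\<^sup>2 \<le> 0" by (simp add: inner_add_right power2_norm_eq_inner)
    then show ?thesis by simp
  qed
  have sad2: "\<And>x. x \<in> Xset \<Longrightarrow> f xstar \<le> f x + inner (A x) zstar"
    using sad(3) Axstar by auto
  define Sb where "Sb = (\<Sum>k\<in>{1..N}. \<beta> k)"
  have Sb: "Sb > 0" unfolding Sb_def using \<beta>_pos N_pos by (intro sum_pos) auto
  define R where "R = (\<lambda>\<omega>. \<Sum>k\<in>{1..N}. \<beta> k * ((norm (v k \<omega> - y k \<omega>))\<^sup>2 / p k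
             + inner (v k \<omega> - y k \<omega>) (xstar - spds_xout x0 T xs (k - 1) \<omega>)))"
  define I0 where "I0 = \<beta> 1 / 2 * (\<eta> 1 1 / real (T 1) + p 1) * (norm (x0 - xstar))\<^sup>2"
  define Iq where "Iq = \<beta> 1 * q 1 1 / (2 * real (T 1))"
  have PW: "Sb * (f (xbar \<omega>) - f xstar + inner (A (xbar \<omega>)) z) \<le> I0 + Iq * (norm z)\<^sup>2 + R \<omega>"
    if w: "\<omega> \<in> space M" for \<omega> z
  proof -
    have a1: "\<forall>k\<in>{1..N}. xl k \<omega> =
        (1 / (1 + \<tau> k)) *\<^sub>R (spds_xtilde x0 T xs lam k \<omega> + \<tau> k *\<^sub>R xl (k - 1) \<omega>)"
      using xl_step w by auto
    have a2: "\<forall>k\<in>{1..N}. xs k 0 \<omega> = spds_xout x0 T xs (k - 1) \<omega>" using xs_init w by auto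
    have a3: "\<forall>k\<in>{1..N}. zs k 0 \<omega> = (if k = 1 then 0 else zs (k - 1) (T (k - 1)) \<omega>)"
      using zs_init w by auto
    have a4: "\<forall>k\<in>{1..N}. \<forall>t\<in>{1..T k}.
        zs k t \<omega> = zs k (t - 1) \<omega> + (1 / q k t) *\<^sub>R A (xs k (t - 1) \<omega> + \<alpha> k t *\<^sub>R
           (xs k (t - 1) \<omega> - (if t = 1 then spds_xprev x0 T xs k \<omega> else xs k (t - 2) \<omega>)))"
      using zs_step w by auto
    have a5: "\<forall>k\<in>{1..N}. \<forall>t\<in>{1..T k}.
        is_arg_min (\<lambda>x. \<mu> * (\<Sum>i\<in>UNIV. \<nu> i (x $ i)) + inner (v k \<omega> + At (zs k t \<omega>)) x
                       + \<eta> k t / 2 * (norm (xs k (t - 1) \<omega> - x))\<^sup>2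
                       + p k / 2 * (norm (spds_xout x0 T xs (k - 1) \<omega> - x))\<^sup>2)
                   (\<lambda>x. x \<in> {x :: real^'d^'n. \<forall>i. x $ i \<in> X i}) (xs k t \<omega>)"
      using xs_step w unfolding Xset_def by auto
    have xin: "xstar \<in> {x :: real^'d^'n. \<forall>i. x $ i \<in> X i}" using sad(1) unfolding Xset_def .
    show ?thesis
      unfolding Sb_def I0_def Iq_def R_def f_def xbar_def y_def
      by (rule spds_pointwise[where A=A and At=At and X=X and ft=ft and \<nu>=\<nu> and gradf=gradf and Lt=Lt
            and \<mu>=\<mu> and xstar=xstar and N=N and T=T and \<beta>=\<beta> and p=p and lam=lam and \<tau>=\<tau> and q=q
            and \<eta>=\<eta> and \<alpha>=\<alpha> and xs=xs and zs=zs and xl=xl and v=v and \<omega>=\<omega> and z=z,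
            OF A_lin A_bnd A_adj X_convex ft_convex ft_grad ft_lip nu_sc mu_nonneg xin Axstar
          N_pos T_pos \<beta>_pos p_pos q_pos \<eta>_pos lam_nonneg \<tau>_nonneg \<alpha>_nonneg cond_i cond_ii cond_iii a1 a2 a3 a4 a5])
  qed
  interpret P: prob_space M by (rule prob)
  define Gr where "Gr = (\<lambda>x::real^'d^'n. \<chi> i. gradf i (x $ i))"
  have Lt0: "Lt \<ge> 0" by (rule Lt_nonneg[OF ft_lip])
  have Gr_lip: "\<And>u w. norm (Gr u - Gr w) \<le> Lt * norm (u - w)" unfolding Gr_def by (rule ft_sum_lip[OF ft_lip])
  have yGr: "y = (\<lambda>k \<omega>. Gr (xl k \<omega>))" unfolding y_def Gr_def by simp
  have vvi: "\<forall>k\<in>{1..N}. integrable M (\<lambda>\<omega>. (norm (v k \<omega> - Gr (xl k \<omega>)))\<^sup>2)" using v_var_int unfolding yGr .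
  have L2: "\<forall>k\<le>N. (\<forall>j\<le>k. L2v M (F k) (spds_xout x0 T xs j) \<and> L2v M (F k) (spds_xhat x0 T xs j)
      \<and> L2v M (F k) (xl j) \<and> L2v M (F k) (spds_xprev x0 T xs (Suc j))
      \<and> L2v M (F k) (\<lambda>\<omega>. if j = 0 then 0 else zs j (T j) \<omega>)
      \<and> (1 \<le> j \<longrightarrow> L2v M (F k) (v j)))
      \<and> (Suc k \<le> N \<longrightarrow> L2v M (F k) (xl (Suc k)))"
    by (rule L2_all[where A=A and At=At and Gr=Gr and X=X and \<nu>=\<nu>, OF Abl Atbl Gr_lip Lt0 X_convex nu_sc mu_nonneg
        T_pos p_pos \<eta>_pos prob filt_sub filt_mono v_meas vvi xl_0 xl_step xs_init zs_init zs_step xs_step[unfolded Xset_def]])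
  have sub: "subalgebra M (F k)" for k using filt_sub by auto
  have cGr: "continuous_on UNIV Gr"
    by (rule lipschitz_on_continuous_on[of Lt]) (use Gr_lip Lt0 in \<open>auto intro!: lipschitz_onI simp: dist_norm\<close>)
  have gGr: "norm (Gr u) \<le> norm (Gr 0) + Lt * norm u" for u
    using Gr_lip[of u 0] norm_triangle_ineq2[of "Gr u" "Gr 0"] by simp
  have Ek: "integrable M (\<lambda>\<omega>. (norm (v k \<omega> - y k \<omega>))\<^sup>2) \<and> (\<integral>\<omega>. (norm (v k \<omega> - y k \<omega>))\<^sup>2 \<partial>M) \<le> \<sigma>\<^sup>2 / real (c k)
     \<and> integrable M (\<lambda>\<omega>. inner (v k \<omega> - y k \<omega>) (xstar - spds_xout x0 T xs (k - 1) \<omega>))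
     \<and> (\<integral>\<omega>. inner (v k \<omega> - y k \<omega>) (xstar - spds_xout x0 T xs (k - 1) \<omega>) \<partial>M) = 0"
    if k: "k \<in> {1..N}" for k
  proof -
    have km: "k - 1 \<le> N" "k \<le> N" "Suc (k - 1) = k" using k by auto
    have Sk1: "L2v M (F (k - 1)) (spds_xout x0 T xs (k - 1))" "L2v M (F (k - 1)) (xl k)"
      using L2[rule_format, OF km(1)] km by auto
    have Sk: "L2v M (F k) (v k)" using L2[rule_format, OF km(2)] k by auto
    have yL: "L2v M (F (k - 1)) (y k)"
      unfolding yGr by (rule L2v_comp[OF sub Sk1(2) cGr gGr Lt0 prob])
    have wL: "L2v M (F (k - 1)) (\<lambda>\<omega>. xstar - spds_xout x0 T xs (k - 1) \<omega>)"
      by (rule L2v_diff[OF sub L2v_const[OF prob sub] Sk1(1) prob])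
    interpret SF: sigma_finite_subalgebra M "F (k - 1)" using filt_sf by auto
    have vM: "v k \<in> borel_measurable M" "integrable M (\<lambda>\<omega>. (norm (v k \<omega>))\<^sup>2)"
      using Sk L2v_measM[OF sub] unfolding L2v_def by auto
    have yM: "y k \<in> borel_measurable M" "integrable M (\<lambda>\<omega>. (norm (y k \<omega>))\<^sup>2)"
      using yL L2v_measM[OF sub] unfolding L2v_def by auto
    have ce: "\<forall>i j. AE \<omega> in M. real_cond_exp M (F (k - 1)) (\<lambda>\<omega>. v k \<omega> $ i $ j) \<omega> = y k \<omega> $ i $ j"
      using v_unbiased k by auto
    have E0: "integrable M (\<lambda>\<omega>. inner (v k \<omega> - y k \<omega>) (xstar - spds_xout x0 T xs (k - 1) \<omega>))
        \<and> (\<integral>\<omega>. inner (v k \<omega> - y k \<omega>) (xstar - spds_xout x0 T xs (k - 1) \<omega>) \<partial>M) = 0"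
      using SF.E_zero[OF _ _ vM yM ce] wL unfolding L2v_def by auto
    have i2: "integrable M (\<lambda>\<omega>. (norm (v k \<omega> - y k \<omega>))\<^sup>2)" using v_var_int k by auto
    have "(\<integral>\<omega>. (norm (v k \<omega> - y k \<omega>))\<^sup>2 \<partial>M) \<le> \<sigma>\<^sup>2 / real (c k)"
      by (rule SF.E_var[OF i2 _ prob]) (use v_var k in auto)
    then show ?thesis using E0 i2 by simp
  qed
  have Rint: "integrable M R"
    unfolding R_def using Ek by (intro Bochner_Integration.integrable_sum integrable_mult_right
        Bochner_Integration.integrable_add integrable_divide) auto
  have ER: "(\<integral>\<omega>. R \<omega> \<partial>M) \<le> (\<Sum>k\<in>{1..N}. \<beta> k * \<sigma>\<^sup>2 / (p k * real (c k)))"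
  proof -
    have "(\<integral>\<omega>. R \<omega> \<partial>M) = (\<Sum>k\<in>{1..N}. \<beta> k * ((\<integral>\<omega>. (norm (v k \<omega> - y k \<omega>))\<^sup>2 \<partial>M) / p k
             + (\<integral>\<omega>. inner (v k \<omega> - y k \<omega>) (xstar - spds_xout x0 T xs (k - 1) \<omega>) \<partial>M)))"
    proof -
      have ii: "integrable M (\<lambda>\<omega>. \<beta> k * ((norm (v k \<omega> - y k \<omega>))\<^sup>2 / p k
             + inner (v k \<omega> - y k \<omega>) (xstar - spds_xout x0 T xs (k - 1) \<omega>)))" if "k \<in> {1..N}" for k
        using Ek[OF that] by (intro integrable_mult_right Bochner_Integration.integrable_add integrable_divide) auto
      have "(\<integral>\<omega>. R \<omega> \<partial>M) = (\<Sum>k\<in>{1..N}. (\<integral>\<omega>. \<beta> k * ((norm (v k \<omega> - y k \<omega>))\<^sup>2 / p k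
             + inner (v k \<omega> - y k \<omega>) (xstar - spds_xout x0 T xs (k - 1) \<omega>)) \<partial>M))"
        unfolding R_def by (rule Bochner_Integration.integral_sum) (rule ii)
      also have "\<dots> = (\<Sum>k\<in>{1..N}. \<beta> k * ((\<integral>\<omega>. (norm (v k \<omega> - y k \<omega>))\<^sup>2 \<partial>M) / p k
             + (\<integral>\<omega>. inner (v k \<omega> - y k \<omega>) (xstar - spds_xout x0 T xs (k - 1) \<omega>) \<partial>M)))"
      proof (rule sum.cong[OF refl])
        fix k assume k: "k \<in> {1..N}"
        have i1: "integrable M (\<lambda>\<omega>. (norm (v k \<omega> - y k \<omega>))\<^sup>2 / p k)" using Ek[OF k] by auto
        have i2: "integrable M (\<lambda>\<omega>. inner (v k \<omega> - y k \<omega>) (xstar - spds_xout x0 T xs (k - 1) \<omega>))" using Ek[OF k] by auto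
        show "(\<integral>\<omega>. \<beta> k * ((norm (v k \<omega> - y k \<omega>))\<^sup>2 / p k
             + inner (v k \<omega> - y k \<omega>) (xstar - spds_xout x0 T xs (k - 1) \<omega>)) \<partial>M)
           = \<beta> k * ((\<integral>\<omega>. (norm (v k \<omega> - y k \<omega>))\<^sup>2 \<partial>M) / p k
             + (\<integral>\<omega>. inner (v k \<omega> - y k \<omega>) (xstar - spds_xout x0 T xs (k - 1) \<omega>) \<partial>M))"
          using Bochner_Integration.integral_add[OF i1 i2] by simp
      qed
      finally show ?thesis .
    qed
    also have "\<dots> \<le> (\<Sum>k\<in>{1..N}. \<beta> k * \<sigma>\<^sup>2 / (p k * real (c k)))"
    proof (rule sum_mono)
      fix k assume k: "k \<in> {1..N}"
      have bp: "\<beta> k > 0" "p k > 0" using \<beta>_pos p_pos k by auto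
      have "(\<integral>\<omega>. (norm (v k \<omega> - y k \<omega>))\<^sup>2 \<partial>M) / p k \<le> (\<sigma>\<^sup>2 / real (c k)) / p k"
        using Ek[OF k] bp by (intro divide_right_mono) auto
      then show "\<beta> k * ((\<integral>\<omega>. (norm (v k \<omega> - y k \<omega>))\<^sup>2 \<partial>M) / p k
             + (\<integral>\<omega>. inner (v k \<omega> - y k \<omega>) (xstar - spds_xout x0 T xs (k - 1) \<omega>) \<partial>M))
          \<le> \<beta> k * \<sigma>\<^sup>2 / (p k * real (c k))"
      proof -
        have z: "(\<integral>\<omega>. inner (v k \<omega> - y k \<omega>) (xstar - spds_xout x0 T xs (k - 1) \<omega>) \<partial>M) = 0"
          using Ek[OF k] by blast
        have "\<beta> k * ((\<integral>\<omega>. (norm (v k \<omega> - y k \<omega>))\<^sup>2 \<partial>M) / p k) \<le> \<beta> k * ((\<sigma>\<^sup>2 / real (c k)) / p k)"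
          using \<open>(\<integral>\<omega>. (norm (v k \<omega> - y k \<omega>))\<^sup>2 \<partial>M) / p k \<le> (\<sigma>\<^sup>2 / real (c k)) / p k\<close> bp
          by (intro mult_left_mono) auto
        also have "\<dots> = \<beta> k * \<sigma>\<^sup>2 / (p k * real (c k))" by (simp add: field_simps)
        finally show ?thesis unfolding z by simp
      qed
    qed
    finally show ?thesis .
  qed
  have xhM: "spds_xhat x0 T xs k \<in> borel_measurable M" if "k \<in> {1..N}" for k
  proof -
    have "L2v M (F N) (spds_xhat x0 T xs k)" using L2[rule_format, of N] that by auto
    then show ?thesis using L2v_measM[OF sub] by blast
  qed
  have xbM: "xbar \<in> borel_measurable M"
    unfolding xbar_def using xhM by (intro borel_measurable_scaleR borel_measurable_const borel_measurable_sum) auto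
  have cft: "continuous_on UNIV (ft i)" for i
    using ft_grad by (intro continuous_at_imp_continuous_on) (auto intro: has_derivative_continuous)
  have cnu: "continuous_on UNIV (\<nu> i)" for i
  proof (rule convex_on_continuous[OF open_UNIV])
    show "convex_on UNIV (\<nu> i)"
      by (rule convex_from_sc[of _ 1]) (use nu_sc in \<open>auto simp: strongly_convex_on_def\<close>)
  qed
  have cnth: "continuous_on UNIV (\<lambda>x::real^'d^'n. x $ i)" for i
    by (rule linear_continuous_on[OF bounded_linear_vec_nth])
  have cf: "continuous_on UNIV f"
    unfolding f_def
    by (intro continuous_on_add continuous_on_mult continuous_on_const continuous_on_sum ballI
        continuous_on_compose2[OF cft cnth] continuous_on_compose2[OF cnu cnth]) auto
  have fM: "(\<lambda>\<omega>. f (xbar \<omega>)) \<in> borel_measurable M"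
    using measurable_compose[OF xbM borel_measurable_continuous_onI[OF cf]] by simp
  have AM: "(\<lambda>\<omega>. norm (A (xbar \<omega>))) \<in> borel_measurable M"
    using measurable_compose[OF xbM borel_measurable_continuous_onI[OF linear_continuous_on[OF Abl]]]
    by (simp add: borel_measurable_norm)
  have Sconv: "convex Xset"
    unfolding Xset_def convex_def using X_convex by (auto simp: convex_def)
  have xbX: "xbar \<omega> \<in> Xset" if w: "\<omega> \<in> space M" for \<omega>
  proof -
    have xhX: "spds_xhat x0 T xs k \<omega> \<in> Xset" if k: "k \<in> {1..N}" for k
    proof -
      have Tk: "T k \<ge> 1" using T_pos k by auto
      have "(\<Sum>t\<in>{1..T k}. (1 / real (T k)) *\<^sub>R xs k t \<omega>) \<in> Xset"
      proof (rule convex_sum[OF _ Sconv])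
        show "(\<Sum>t\<in>{1..T k}. 1 / real (T k)) = 1" using Tk by simp
        show "xs k t \<omega> \<in> Xset" if "t \<in> {1..T k}" for t
          using xs_step k that w by (auto simp: is_arg_min_def)
      qed auto
      then show ?thesis using k by (simp add: spds_xhat_def scaleR_sum_right)
    qed
    have "(\<Sum>k\<in>{1..N}. (\<beta> k / Sb) *\<^sub>R spds_xhat x0 T xs k \<omega>) \<in> Xset"
    proof (rule convex_sum[OF _ Sconv])
      show "(\<Sum>k\<in>{1..N}. \<beta> k / Sb) = 1" using Sb unfolding Sb_def by (simp add: sum_divide_distrib[symmetric])
      show "0 \<le> \<beta> k / Sb" if "k \<in> {1..N}" for k using \<beta>_pos Sb that by (auto intro: less_imp_le)
    qed (use xhX in auto)
    then show ?thesis unfolding xbar_def Sb_def[symmetric] by (simp add: scaleR_sum_right)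
  qed
  define \<zeta> where "\<zeta> = norm zstar + 1"
  define B where "B = (\<lambda>\<omega>. (I0 + Iq * \<zeta>\<^sup>2 + R \<omega>) / Sb)"
  have Iq0: "Iq \<ge> 0"
  proof -
    have N1: "1 \<in> {1..N}" using N_pos by auto
    have T1: "T 1 \<ge> 1" using T_pos N1 by auto
    have "\<beta> 1 > 0" "q 1 1 > 0" using \<beta>_pos q_pos N1 T1 by auto
    then show ?thesis unfolding Iq_def using T1 by (intro divide_nonneg_pos) auto
  qed
  have bnds: "f (xbar \<omega>) - f xstar \<le> (I0 + R \<omega>) / Sb \<and> norm (A (xbar \<omega>)) \<le> B \<omega>
      \<and> f (xbar \<omega>) - f xstar \<ge> - norm zstar * norm (A (xbar \<omega>))" if w: "\<omega> \<in> space M" for \<omega>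
  proof -
    define a where "a = A (xbar \<omega>)"
    have c: "f (xbar \<omega>) - f xstar \<ge> - norm zstar * norm a"
    proof -
      have "f xstar \<le> f (xbar \<omega>) + inner a zstar" using sad2[OF xbX[OF w]] unfolding a_def .
      moreover have "inner a zstar \<le> norm a * norm zstar" by (rule norm_cauchy_schwarz)
      ultimately show ?thesis by (simp add: mult.commute)
    qed
    have p0: "Sb * (f (xbar \<omega>) - f xstar + inner (A (xbar \<omega>)) 0) \<le> I0 + Iq * (norm (0::real^'d^'m))\<^sup>2 + R \<omega>"
      by (rule PW[OF w])
    then have ua: "f (xbar \<omega>) - f xstar \<le> (I0 + R \<omega>) / Sb" using Sb by (simp add: field_simps)
    define zz where "zz = (if a = 0 then 0 else (\<zeta> / norm a) *\<^sub>R a)"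
    have zz1: "inner a zz = \<zeta> * norm a"
      unfolding zz_def by (auto simp: power2_norm_eq_inner[symmetric] power2_eq_square)
    have zz2: "(norm zz)\<^sup>2 \<le> \<zeta>\<^sup>2"
      unfolding zz_def \<zeta>_def by auto
    have "Sb * (f (xbar \<omega>) - f xstar + inner a zz) \<le> I0 + Iq * (norm zz)\<^sup>2 + R \<omega>"
      using PW[OF w, of zz] unfolding a_def .
    also have "\<dots> \<le> I0 + Iq * \<zeta>\<^sup>2 + R \<omega>" using zz2 Iq0 by (simp add: mult_left_mono)
    finally have "Sb * (f (xbar \<omega>) - f xstar + \<zeta> * norm a) \<le> I0 + Iq * \<zeta>\<^sup>2 + R \<omega>" unfolding zz1 .
    moreover have "Sb * norm a \<le> Sb * (f (xbar \<omega>) - f xstar + \<zeta> * norm a)"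
      using c Sb unfolding \<zeta>_def by (intro mult_left_mono) (auto simp: algebra_simps)
    ultimately have "Sb * norm a \<le> I0 + Iq * \<zeta>\<^sup>2 + R \<omega>" by linarith
    then have "norm a \<le> B \<omega>" unfolding B_def using Sb by (simp add: field_simps)
    then show ?thesis using ua c unfolding a_def by simp
  qed
  define ES where "ES = (\<Sum>k\<in>{1..N}. \<beta> k * \<sigma>\<^sup>2 / (p k * real (c k)))"
  have int0: "integrable M (\<lambda>\<omega>. (I0 + R \<omega>) / Sb)" using Rint by auto
  have Bint: "integrable M B" unfolding B_def using Rint by auto
  have Bnn: "B \<omega> \<ge> 0" if "\<omega> \<in> space M" for \<omega> using bnds[OF that] norm_ge_zero order_trans by blast
  have fint: "integrable M (\<lambda>\<omega>. f (xbar \<omega>) - f xstar)"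
  proof (rule Bochner_Integration.integrable_bound[of _ "\<lambda>\<omega>. (1 + norm zstar) * B \<omega>"])
    show "integrable M (\<lambda>\<omega>. (1 + norm zstar) * B \<omega>)" using Bint by auto
    show "(\<lambda>\<omega>. f (xbar \<omega>) - f xstar) \<in> borel_measurable M" using fM by measurable
    show "AE \<omega> in M. norm (f (xbar \<omega>) - f xstar) \<le> norm ((1 + norm zstar) * B \<omega>)"
    proof (rule AE_I2)
      fix \<omega> assume w: "\<omega> \<in> space M"
      have b: "f (xbar \<omega>) - f xstar \<le> (I0 + R \<omega>) / Sb" "norm (A (xbar \<omega>)) \<le> B \<omega>"
          "f (xbar \<omega>) - f xstar \<ge> - norm zstar * norm (A (xbar \<omega>))" using bnds[OF w] by auto
      have iz: "0 \<le> Iq * \<zeta>\<^sup>2" using Iq0 by simp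
      have "(I0 + R \<omega>) / Sb \<le> B \<omega>" unfolding B_def
        by (rule divide_right_mono) (use Sb iz in auto)
      moreover have "B \<omega> \<le> (1 + norm zstar) * B \<omega>"
        using Bnn[OF w] mult_nonneg_nonneg[OF norm_ge_zero Bnn[OF w], of zstar] by (simp add: algebra_simps)
      ultimately have u: "f (xbar \<omega>) - f xstar \<le> (1 + norm zstar) * B \<omega>"
        using b(1) by linarith
      have "norm zstar * norm (A (xbar \<omega>)) \<le> norm zstar * B \<omega>" using b(2) by (simp add: mult_left_mono)
      then have l: "- ((1 + norm zstar) * B \<omega>) \<le> f (xbar \<omega>) - f xstar"
        using b(3) Bnn[OF w] by (simp add: algebra_simps)
      have "0 \<le> (1 + norm zstar) * B \<omega>" using Bnn[OF w] by simp
      then show "norm (f (xbar \<omega>) - f xstar) \<le> norm ((1 + norm zstar) * B \<omega>)" using u l by simp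
    qed
  qed
  have Aint: "integrable M (\<lambda>\<omega>. norm (A (xbar \<omega>)))"
  proof (rule Bochner_Integration.integrable_bound[OF Bint AM])
    show "AE \<omega> in M. norm (norm (A (xbar \<omega>))) \<le> norm (B \<omega>)"
      using bnds Bnn by (intro AE_I2) auto
  qed
  have I1: "(\<integral>\<omega>. f (xbar \<omega>) - f xstar \<partial>M) \<le> (1 / Sb) * (I0 + ES)"
  proof -
    have "(\<integral>\<omega>. f (xbar \<omega>) - f xstar \<partial>M) \<le> (\<integral>\<omega>. (I0 + R \<omega>) / Sb \<partial>M)"
      by (rule integral_mono[OF fint int0]) (use bnds in auto)
    also have "\<dots> = (I0 + (\<integral>\<omega>. R \<omega> \<partial>M)) / Sb"
      using Rint by (simp add: Bochner_Integration.integral_add P.prob_space)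
    also have "\<dots> \<le> (I0 + ES) / Sb" using ER Sb unfolding ES_def by (intro divide_right_mono) auto
    finally show ?thesis by simp
  qed
  have I2: "(\<integral>\<omega>. norm (A (xbar \<omega>)) \<partial>M) \<le> (1 / Sb) * (Iq * \<zeta>\<^sup>2 + I0 + ES)"
  proof -
    have "(\<integral>\<omega>. norm (A (xbar \<omega>)) \<partial>M) \<le> (\<integral>\<omega>. B \<omega> \<partial>M)"
      by (rule integral_mono[OF Aint Bint]) (use bnds in auto)
    also have "\<dots> = (I0 + Iq * \<zeta>\<^sup>2 + (\<integral>\<omega>. R \<omega> \<partial>M)) / Sb"
      unfolding B_def using Rint by (simp add: Bochner_Integration.integral_add P.prob_space)
    also have "\<dots> \<le> (I0 + Iq * \<zeta>\<^sup>2 + ES) / Sb" using ER Sb unfolding ES_def by (intro divide_right_mono) auto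
    also have "\<dots> = (1 / Sb) * (Iq * \<zeta>\<^sup>2 + I0 + ES)" by (simp add: add_divide_distrib add_ac)
    finally show ?thesis .
  qed
  show ?thesis
    using fint I1 Aint I2 unfolding Sb_def ES_def I0_def Iq_def \<zeta>_def by simp
qed

end
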